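(* Let $H={\rm SL}_q(N)$ with CQT structure $\sigma$ as in the context, and in $H^0$ put ${\bf l}_{ij}=\sigma(-,x_{ij})$, ${\bf r}_{ij}=\sigma(x_{ij},-)$. Then ${\bf l}_{ii}={\bf r}_{ii}$ is an invertible grouplike element of $H^0$. Define for $1\le i\le N$, $1\le s\le N-1$: $\widehat K_i={\bf l}_{ii}$, $E_s={\bf l}_{s+1,s+1}^{-1}{\bf l}_{s+1,s}$, $F_s=(q-q^{-1})^{-2}{\bf r}_{ss}^{-1}{\bf r}_{s,s+1}$. Then the Hopf algebra $H_l=\{\sigma(-,x)\mid x\in H\}$ is generated as an algebra by the $\widehat K_i^{\pm1}$ and the $E_s$, and these satisfy $\widehat K_i\widehat K_j=\widehat K_j\widehat K_i$, $\widehat K_i\widehat K_i^{-1}=\widehat K_i^{-1}\widehat K_i=\varepsilon$, $\widehat K_1\widehat K_2\cdots\widehat K_N=\varepsilon$, $\widehat K_iE_t\widehat K_i^{-1}=q^{\delta_{i,t}-\delta_{i,t+1}}E_t$, $E_tE_s=E_sE_t$ if $|s-t|>1$, and $E_s^2E_t-(q+q^{-1})E_sE_tE_s+E_tE_s^2=0$ if $|s-t|=1$. Similarly $H_r=\{\sigma(x,-)\mid x\in H\}$ is generated as an algebra by the $\widehat K_i^{\pm1}$ and the $F_s$, which satisfy the same relations among the $\widehat K_i$, and $\widehat K_iF_t\widehat K_i^{-1}=q^{\delta_{i,t+1}-\delta_{i,t}}F_t$, $F_tF_s=F_sF_t$ if $|s-t|>1$, $F_s^2F_t-(q+q^{-1})F_sF_tF_s+F_tF_s^2=0$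 if $|s-t|=1$.
   Context: $k$ is a field, $q\in k$ with $q\neq0$ and $q^2\neq1$, $N\ge2$, $z\in k$ with $z^N=q^{-1}$. ${\rm SL}_q(N)$ is the Hopf algebra generated by $x_{ij}$ ($1\le i,j\le N$) with relations $x_{im}x_{in}=qx_{in}x_{im}$ ($n<m$), $x_{jm}x_{im}=qx_{im}x_{jm}$ ($i<j$), $x_{jn}x_{im}=x_{im}x_{jn}$ ($i<j$, $n<m$), $x_{jm}x_{in}-x_{in}x_{jm}=(q-q^{-1})x_{im}x_{jn}$ ($i<j$, $n<m$), $\sum_{p\in S_N}(-q)^{-l(p)}x_{1p(1)}\cdots x_{Np(N)}=1$, comultiplication $\Delta(x_{ij})=\sum_kx_{ik}\otimes x_{kj}$, counit $\varepsilon(x_{ij})=\delta_{ij}$. $\sigma$ is its CQT structure (a convolution invertible skew pairing $H\otimes H\to k$ with $\sigma(hh',g)=\sigma(h,g_1)\sigma(h',g_2)$, $\sigma(g,hh')=\sigma(g_2,h)\sigma(g_1,h')$, $\sigma(1,h)=\sigma(h,1)=\varepsilon(h)$, $\sigma(h_1,h'_1)h_2h'_2=h'_1h_1\sigma(h_2,h'_2)$) determined by $\sigma(x_{im},x_{jn})=z\big(q^{\delta_{ij}}\delta_{mi}\delta_{nj}+[j>i](q-q^{-1})\delta_{mj}\delta_{ni}\big)$, $[j>i]\in\{0,1\}$ the indicator of $j>i$. $H^0$ is the finite dual; products in $H^0$ are convolution products. *)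

theory Defs
  imports Main "HOL-Combinatorics.Permutations"
begin

text \<open>
The generator x_ij of SL_q(N) is the letter (i,j) (indices 1..N).
Words (lists of letters) are the monomials, a basis of the free algebra k<x_ij>.
A linear functional on H = SL_q(N) is the same as a function  word => k
(its values on monomials) that vanishes on the defining ideal; two such
functionals are equal in H^* iff they agree on all valid words.
\<close>

type_synonym letter = "nat \<times> nat"
type_synonym word = "letter list"

definition valid :: "nat \<Rightarrow> word \<Rightarrow> bool" where
  "valid N w \<longleftrightarrow> (\<forall>(i,j)\<in>set w. i \<in> {1..N} \<and> j \<in> {1..N})"

definition eqH :: "nat \<Rightarrow> (word \<Rightarrow> 'k) \<Rightarrow> (word \<Rightarrow> 'k) \<Rightarrow> bool" where
  "eqH N f g \<longleftrightarrow> (\<forall>w. valid N w \<longrightarrow> f w = g w)"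

text \<open>counit: algebra map with eps(x_ij) = delta_ij; it is the unit of H^*\<close>
definition eps :: "word \<Rightarrow> 'k::field" where
  "eps w = (if (\<forall>(i,j)\<in>set w. i = j) then 1 else 0)"

text \<open>convolution product in H^*, via
  Delta(x_{i1 j1}...x_{in jn}) = sum_{k1..kn} x_{i1 k1}...x_{in kn} (x) x_{k1 j1}...x_{kn jn}\<close>
definition conv :: "nat \<Rightarrow> (word \<Rightarrow> 'k::field) \<Rightarrow> (word \<Rightarrow> 'k) \<Rightarrow> word \<Rightarrow> 'k" where
  "conv N f g w = (\<Sum>ks\<in>{ks. length ks = length w \<and> set ks \<subseteq> {1..N}}.
       f (zip (map fst w) ks) * g (zip ks (map snd w)))"

definition inv_count :: "nat \<Rightarrow> (nat \<Rightarrow> nat) \<Rightarrow> nat" where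
  "inv_count N p = card {(a,b). a \<in> {1..N} \<and> b \<in> {1..N} \<and> a < b \<and> p a > p b}"

text \<open>f vanishes on the two-sided ideal generated by the defining relations of SL_q(N),
  i.e. f is (the pullback of) a linear functional on H\<close>
definition resp_SL :: "nat \<Rightarrow> 'k::field \<Rightarrow> (word \<Rightarrow> 'k) \<Rightarrow> bool" where
  "resp_SL N q f \<longleftrightarrow>
    (\<forall>u v. valid N u \<longrightarrow> valid N v \<longrightarrow>
      (\<forall>i\<in>{1..N}. \<forall>m\<in>{1..N}. \<forall>n\<in>{1..N}. n < m \<longrightarrow>
          f (u @ [(i,m),(i,n)] @ v) = q * f (u @ [(i,n),(i,m)] @ v)) \<and>
      (\<forall>i\<in>{1..N}. \<forall>j\<in>{1..N}. \<forall>m\<in>{1..N}. i < j \<longrightarrow>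
          f (u @ [(j,m),(i,m)] @ v) = q * f (u @ [(i,m),(j,m)] @ v)) \<and>
      (\<forall>i\<in>{1..N}. \<forall>j\<in>{1..N}. \<forall>m\<in>{1..N}. \<forall>n\<in>{1..N}. i < j \<longrightarrow> n < m \<longrightarrow>
          f (u @ [(j,n),(i,m)] @ v) = f (u @ [(i,m),(j,n)] @ v)) \<and>
      (\<forall>i\<in>{1..N}. \<forall>j\<in>{1..N}. \<forall>m\<in>{1..N}. \<forall>n\<in>{1..N}. i < j \<longrightarrow> n < m \<longrightarrow>
          f (u @ [(j,m),(i,n)] @ v) - f (u @ [(i,n),(j,m)] @ v)
            = (q - inverse q) * f (u @ [(i,m),(j,n)] @ v)) \<and>
      (\<Sum>p\<in>{p. p permutes {1..N}}.
          inverse ((- q) ^ inv_count N p) * f (u @ map (\<lambda>a. (a, p a)) [1..<N+1] @ v))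
        = f (u @ v))"

text \<open>finite dual H^0: f is a functional on H whose left/right translates
  (w |-> f(u w v), u,v in H) span a finite-dimensional space\<close>
definition finite_dual :: "nat \<Rightarrow> 'k::field \<Rightarrow> (word \<Rightarrow> 'k) \<Rightarrow> bool" where
  "finite_dual N q f \<longleftrightarrow> resp_SL N q f \<and>
    (\<exists>gs :: (word \<Rightarrow> 'k) list. \<forall>u v. valid N u \<longrightarrow> valid N v \<longrightarrow>
       (\<exists>cs :: nat \<Rightarrow> 'k. \<forall>w. valid N w \<longrightarrow>
           f (u @ w @ v) = (\<Sum>t<length gs. cs t * (gs ! t) w)))"

text \<open>grouplike in H^0 = algebra map H -> k\<close>
definition grouplike :: "nat \<Rightarrow> (word \<Rightarrow> 'k::field) \<Rightarrow> bool" where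
  "grouplike N f \<longleftrightarrow> f [] = 1 \<and> (\<forall>u v. valid N u \<longrightarrow> valid N v \<longrightarrow> f (u @ v) = f u * f v)"

text \<open>values of sigma on generators\<close>
definition sgen :: "'k::field \<Rightarrow> 'k \<Rightarrow> letter \<Rightarrow> letter \<Rightarrow> 'k" where
  "sgen q z a b = (case a of (i,m) \<Rightarrow> case b of (j,n) \<Rightarrow>
     z * ((if i = j then q else 1) * (if m = i \<and> n = j then 1 else 0)
          + (if j > i then q - inverse q else 0) * (if m = j \<and> n = i then 1 else 0)))"

text \<open>sig1 g a = sigma(a, g) for a letter a, using sigma(g,hh') = sigma(g_2,h) sigma(g_1,h')\<close>
primrec sig1 :: "nat \<Rightarrow> 'k::field \<Rightarrow> 'k \<Rightarrow> word \<Rightarrow> letter \<Rightarrow> 'k" where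
  "sig1 N q z [] a = eps [a]"
| "sig1 N q z (b # g) a = (\<Sum>k\<in>{1..N}. sgen q z (k, snd a) b * sig1 N q z g (fst a, k))"

text \<open>sigf w g = sigma(w, g), using sigma(hh',g) = sigma(h,g_1) sigma(h',g_2), sigma(1,-) = eps\<close>
primrec sigf :: "nat \<Rightarrow> 'k::field \<Rightarrow> 'k \<Rightarrow> word \<Rightarrow> word \<Rightarrow> 'k" where
  "sigf N q z [] = eps"
| "sigf N q z (a # w) = conv N (\<lambda>h. sig1 N q z h a) (sigf N q z w)"

definition lfun :: "nat \<Rightarrow> 'k::field \<Rightarrow> 'k \<Rightarrow> nat \<Rightarrow> nat \<Rightarrow> word \<Rightarrow> 'k" where
  "lfun N q z i j = (\<lambda>w. sigf N q z w [(i,j)])"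

definition rfun :: "nat \<Rightarrow> 'k::field \<Rightarrow> 'k \<Rightarrow> nat \<Rightarrow> nat \<Rightarrow> word \<Rightarrow> 'k" where
  "rfun N q z i j = (\<lambda>w. sigf N q z [(i,j)] w)"

definition H_l :: "nat \<Rightarrow> 'k::field \<Rightarrow> 'k \<Rightarrow> (word \<Rightarrow> 'k) set" where
  "H_l N q z = {(\<lambda>w. \<Sum>(c,g)\<leftarrow>xs. c * sigf N q z w g) | xs. \<forall>(c,g)\<in>set xs. valid N g}"

definition H_r :: "nat \<Rightarrow> 'k::field \<Rightarrow> 'k \<Rightarrow> (word \<Rightarrow> 'k) set" where
  "H_r N q z = {(\<lambda>w. \<Sum>(c,g)\<leftarrow>xs. c * sigf N q z g w) | xs. \<forall>(c,g)\<in>set xs. valid N g}"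

inductive_set alg_gen :: "nat \<Rightarrow> (word \<Rightarrow> 'k::field) set \<Rightarrow> (word \<Rightarrow> 'k) set"
  for N S where
  gen: "f \<in> S \<Longrightarrow> f \<in> alg_gen N S"
| unit: "eps \<in> alg_gen N S"
| add: "f \<in> alg_gen N S \<Longrightarrow> g \<in> alg_gen N S \<Longrightarrow> (\<lambda>w. f w + g w) \<in> alg_gen N S"
| smult: "f \<in> alg_gen N S \<Longrightarrow> (\<lambda>w. c * f w) \<in> alg_gen N S"
| mult: "f \<in> alg_gen N S \<Longrightarrow> g \<in> alg_gen N S \<Longrightarrow> conv N f g \<in> alg_gen N S"

definition generated_by :: "nat \<Rightarrow> (word \<Rightarrow> 'k::field) set \<Rightarrow> (word \<Rightarrow> 'k) set \<Rightarrow> bool" where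
  "generated_by N A S \<longleftrightarrow> (\<forall>h\<in>A. \<exists>g\<in>alg_gen N S. eqH N h g) \<and> (\<forall>g\<in>alg_gen N S. \<exists>h\<in>A. eqH N g h)"

definition sminus :: "(word \<Rightarrow> 'k::field) \<Rightarrow> (word \<Rightarrow> 'k) \<Rightarrow> word \<Rightarrow> 'k" where
  "sminus f g = (\<lambda>w. f w - g w)"

definition serre :: "nat \<Rightarrow> 'k::field \<Rightarrow> (word \<Rightarrow> 'k) \<Rightarrow> (word \<Rightarrow> 'k) \<Rightarrow> word \<Rightarrow> 'k" where
  "serre N q X Y = (\<lambda>w. conv N X (conv N X Y) w - (q + inverse q) * conv N X (conv N Y X) w
                        + conv N Y (conv N X X) w)"

definition kron :: "nat \<Rightarrow> nat \<Rightarrow> int" where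
  "kron a b = (if a = b then 1 else 0)"

end

theory Submission
  imports Defs
begin


definition kss :: "nat \<Rightarrow> nat \<Rightarrow> nat list set" where
  "kss N n = {ks. length ks = n \<and> set ks \<subseteq> {1..N}}"

lemma finite_kss[simp]: "finite (kss N n)"
proof -
  have "kss N n \<subseteq> {ks. set ks \<subseteq> {1..N} \<and> length ks = n}" unfolding kss_def by auto
  moreover have "finite {ks. set ks \<subseteq> {1..N} \<and> length ks = n}"
    by (rule finite_lists_length_eq) simp
  ultimately show ?thesis by (rule finite_subset)
qed

lemma kss_Suc: "kss N (Suc n) = (\<lambda>(k,ks). k # ks) ` ({1..N} \<times> kss N n)"
proof (rule set_eqI)
  fix xs
  show "xs \<in> kss N (Suc n) \<longleftrightarrow> xs \<in> (\<lambda>(k,ks). k # ks) ` ({1..N} \<times> kss N n)"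
    by (cases xs) (auto simp: kss_def image_iff)
qed

lemma kss_0: "kss N 0 = {[]}" by (auto simp: kss_def)

lemma conv_kss: "conv N f g w = (\<Sum>ks\<in>kss N (length w). f (zip (map fst w) ks) * g (zip ks (map snd w)))"
  unfolding conv_def kss_def by simp

lemma conv_Nil[simp]: "conv N f g [] = f [] * g []"
  by (simp add: conv_kss kss_0)

definition dr :: "letter \<Rightarrow> (word \<Rightarrow> 'k) \<Rightarrow> word \<Rightarrow> 'k" where
  "dr a f = (\<lambda>v. f (a # v))"

lemma conv_Cons: "conv N f g (a # w) =
   (\<Sum>k\<in>{1..N}. conv N (dr (fst a, k) f) (dr (k, snd a) g) w)"
proof -
  have inj: "inj_on (\<lambda>(k,ks). k # ks) ({1..N} \<times> kss N (length w))"
    by (auto simp: inj_on_def)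
  have "conv N f g (a # w) = (\<Sum>ks\<in>kss N (Suc (length w)). f (zip (map fst (a#w)) ks) * g (zip ks (map snd (a#w))))"
    by (simp add: conv_kss)
  also have "\<dots> = (\<Sum>(k,ks)\<in>{1..N} \<times> kss N (length w). f ((fst a, k) # zip (map fst w) ks) * g ((k, snd a) # zip ks (map snd w)))"
    unfolding kss_Suc by (subst sum.reindex[OF inj]) (simp add: case_prod_beta)
  also have "\<dots> = (\<Sum>k\<in>{1..N}. \<Sum>ks\<in>kss N (length w). f ((fst a, k) # zip (map fst w) ks) * g ((k, snd a) # zip ks (map snd w)))"
    by (rule sum.cartesian_product[symmetric])
  also have "\<dots> = (\<Sum>k\<in>{1..N}. conv N (dr (fst a, k) f) (dr (k, snd a) g) w)"
    by (simp add: conv_kss dr_def)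
  finally show ?thesis .
qed

lemma conv_add_l: "conv N (\<lambda>v. f v + g v) h w = conv N f h w + conv N g h w"
  by (simp add: conv_kss distrib_right sum.distrib)
lemma conv_add_r: "conv N h (\<lambda>v. f v + g v) w = conv N h f w + conv N h g w"
  by (simp add: conv_kss distrib_left sum.distrib)
lemma conv_diff_l: "conv N (\<lambda>v. f v - g v) h w = conv N f h w - conv N g h w"
  by (simp add: conv_kss left_diff_distrib sum_subtractf)
lemma conv_diff_r: "conv N h (\<lambda>v. f v - g v) w = conv N h f w - conv N h g w"
  by (simp add: conv_kss right_diff_distrib sum_subtractf)
lemma conv_smult_l: "conv N (\<lambda>v. c * f v) h w = c * conv N f h w"
  by (simp add: conv_kss sum_distrib_left mult.assoc)
lemma conv_smult_r: "conv N h (\<lambda>v. c * f v) w = c * conv N h f w"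
  by (simp add: conv_kss sum_distrib_left mult.left_commute)
lemma conv_zero_l: "conv N (\<lambda>v. 0) h w = 0"
  by (simp add: conv_kss)
lemma conv_zero_r: "conv N h (\<lambda>v. 0) w = 0"
  by (simp add: conv_kss)
lemma conv_sum_l: "finite S \<Longrightarrow> conv N (\<lambda>v. \<Sum>i\<in>S. f i v) h w = (\<Sum>i\<in>S. conv N (f i) h w)"
  by (simp add: conv_kss sum_distrib_right) (rule sum.swap)
lemma conv_sum_r: "finite S \<Longrightarrow> conv N h (\<lambda>v. \<Sum>i\<in>S. f i v) w = (\<Sum>i\<in>S. conv N h (f i) w)"
  by (simp add: conv_kss sum_distrib_left) (rule sum.swap)

lemma valid_Cons[simp]: "valid N (a # w) \<longleftrightarrow> fst a \<in> {1..N} \<and> snd a \<in> {1..N} \<and> valid N w"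
  by (auto simp: valid_def)
lemma valid_Nil[simp]: "valid N []" by (simp add: valid_def)
lemma valid_append[simp]: "valid N (u @ v) \<longleftrightarrow> valid N u \<and> valid N v"
  by (auto simp: valid_def)

lemma valid_zip1: "valid N w \<Longrightarrow> ks \<in> kss N (length w) \<Longrightarrow> valid N (zip (map fst w) ks)"
  unfolding valid_def kss_def
proof (clarify)
  fix i j assume h: "\<forall>(i, j)\<in>set w. i \<in> {1..N} \<and> j \<in> {1..N}" "set ks \<subseteq> {1..N}" "(i,j) \<in> set (zip (map fst w) ks)"
  then have "i \<in> set (map fst w)" "j \<in> set ks" by (auto dest: set_zip_leftD set_zip_rightD)
  then show "i \<in> {1..N} \<and> j \<in> {1..N}" using h by auto
qed

lemma valid_zip2: "valid N w \<Longrightarrow> ks \<in> kss N (length w) \<Longrightarrow> valid N (zip ks (map snd w))"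
  unfolding valid_def kss_def
proof (clarify)
  fix i j assume h: "\<forall>(i, j)\<in>set w. i \<in> {1..N} \<and> j \<in> {1..N}" "set ks \<subseteq> {1..N}" "(i,j) \<in> set (zip ks (map snd w))"
  then have "j \<in> set (map snd w)" "i \<in> set ks" by (auto dest: set_zip_leftD set_zip_rightD)
  then show "i \<in> {1..N} \<and> j \<in> {1..N}" using h by auto
qed

lemma conv_cong:
  assumes "valid N w" "\<And>v. valid N v \<Longrightarrow> f v = f' v" "\<And>v. valid N v \<Longrightarrow> g v = g' v"
  shows "conv N f g w = conv N f' g' w"
  unfolding conv_kss using assms valid_zip1[OF assms(1)] valid_zip2[OF assms(1)]
  by (intro sum.cong) auto

lemma conv_assoc: "conv N (conv N f g) h w = conv N f (conv N g h) w"
proof (induction w arbitrary: f g h)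
  case Nil
  then show ?case by simp
next
  case (Cons a w)
  have "conv N (conv N f g) h (a # w) = (\<Sum>k\<in>{1..N}. conv N (dr (fst a, k) (conv N f g)) (dr (k, snd a) h) w)"
    by (rule conv_Cons)
  also have "\<dots> = (\<Sum>k\<in>{1..N}. \<Sum>k'\<in>{1..N}. conv N (conv N (dr (fst a, k') f) (dr (k', k) g)) (dr (k, snd a) h) w)"
    by (simp add: dr_def conv_Cons[of N f g] conv_sum_l)
  also have "\<dots> = (\<Sum>k\<in>{1..N}. \<Sum>k'\<in>{1..N}. conv N (dr (fst a, k') f) (conv N (dr (k', k) g) (dr (k, snd a) h)) w)"
    by (simp add: Cons.IH)
  also have "\<dots> = (\<Sum>k'\<in>{1..N}. \<Sum>k\<in>{1..N}. conv N (dr (fst a, k') f) (conv N (dr (k', k) g) (dr (k, snd a) h)) w)"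
    by (rule sum.swap)
  also have "\<dots> = conv N f (conv N g h) (a # w)"
    by (simp add: conv_Cons[of N f] dr_def conv_Cons[of N g h] conv_sum_r)
  finally show ?case .
qed


lemma sum1:
  fixes N kk :: nat
  assumes "kk \<in> {1..N}" "\<And>k. k \<in> {1..N} \<Longrightarrow> k \<noteq> kk \<Longrightarrow> f k = 0"
  shows "(\<Sum>k\<in>{1..N}. f k) = (f kk :: 'a::comm_monoid_add)"
proof -
  have "(\<Sum>k\<in>{1..N}. f k) = f kk + (\<Sum>k\<in>{1..N} - {kk}. f k)"
    using assms(1) by (intro sum.remove) auto
  also have "(\<Sum>k\<in>{1..N} - {kk}. f k) = 0" using assms(2) by (intro sum.neutral) auto
  finally show ?thesis by simp
qed

definition chr :: "(nat \<Rightarrow> 'k::field) \<Rightarrow> word \<Rightarrow> 'k" where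
  "chr c w = (if (\<forall>(i,j)\<in>set w. i = j) then (\<Prod>a\<leftarrow>w. c (fst a)) else 0)"

lemma chr_Nil[simp]: "chr c [] = 1" by (simp add: chr_def)
lemma chr_Cons: "chr c (a # w) = (if fst a = snd a then c (fst a) * chr c w else 0)"
  by (cases a) (auto simp: chr_def)
lemma chr_append: "chr c (u @ v) = chr c u * chr c v"
  by (induction u) (auto simp: chr_Cons)

lemma eps_chr: "eps = chr (\<lambda>_. 1)"
proof
  fix w :: word
  show "eps w = chr (\<lambda>_. 1) w"
    by (induction w) (auto simp: eps_def chr_Cons split: if_splits)
qed

lemma dr_chr: "dr a (chr c) = (if fst a = snd a then (\<lambda>v. c (fst a) * chr c v) else (\<lambda>v. 0))"
  by (auto simp: dr_def chr_Cons)

lemma conv_chr_l: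
  assumes "fst a \<in> {1..N}"
  shows "conv N (chr c) f (a # w) = c (fst a) * conv N (chr c) (dr a f) w"
proof -
  have "conv N (chr c) f (a # w) = (\<Sum>k\<in>{1..N}. if k = fst a then c (fst a) * conv N (chr c) (dr a f) w else 0)"
    unfolding conv_Cons by (intro sum.cong) (auto simp: dr_chr conv_smult_l conv_zero_l)
  also have "\<dots> = c (fst a) * conv N (chr c) (dr a f) w"
    using assms by (simp add: sum.delta')
  finally show ?thesis .
qed

lemma conv_chr_r:
  assumes "snd a \<in> {1..N}"
  shows "conv N f (chr c) (a # w) = c (snd a) * conv N (dr a f) (chr c) w"
proof -
  have "conv N f (chr c) (a # w) = (\<Sum>k\<in>{1..N}. if k = snd a then c (snd a) * conv N (dr a f) (chr c) w else 0)"
    unfolding conv_Cons by (intro sum.cong) (auto simp: dr_chr conv_smult_r conv_zero_r)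
  also have "\<dots> = c (snd a) * conv N (dr a f) (chr c) w"
    using assms by (simp add: sum.delta')
  finally show ?thesis .
qed

lemma conv_chr_chr: "valid N w \<Longrightarrow> conv N (chr c) (chr d) w = chr (\<lambda>i. c i * d i) w"
proof (induction w)
  case Nil then show ?case by simp
next
  case (Cons a w)
  then show ?case
    by (simp add: conv_chr_l dr_chr chr_Cons conv_smult_r conv_zero_r)
qed

lemma conv_eps_r: "valid N w \<Longrightarrow> conv N f eps w = f w"
proof (induction w arbitrary: f)
  case Nil then show ?case by (simp add: eps_def)
next
  case (Cons a w)
  then show ?case by (simp add: eps_chr conv_chr_r) (simp add: dr_def)
qed

lemma conv_eps_l: "valid N w \<Longrightarrow> conv N eps f w = f w"
proof (induction w arbitrary: f)
  case Nil then show ?case by (simp add: eps_def)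
next
  case (Cons a w)
  then show ?case by (simp add: eps_chr conv_chr_l) (simp add: dr_def)
qed

lemma chr_cong: "(\<And>i. i \<in> {1..N} \<Longrightarrow> c i = d i) \<Longrightarrow> valid N w \<Longrightarrow> chr c w = chr d w"
  by (induction w) (auto simp: chr_Cons)

lemma sgen_eq: "sgen q z (r, c) (A, k) = z * ((if r = A then q else 1) * (if c = r \<and> k = A then 1 else 0)
   + (if A > r then q - inverse q else 0) * (if c = A \<and> k = r then 1 else 0))"
  by (simp add: sgen_def)

lemma sig1_single: "fst a \<in> {1..N} \<Longrightarrow> sig1 N q z [b] a = sgen q z a b"
proof -
  assume h: "fst a \<in> {1..N}"
  have "sig1 N q z [b] a = (\<Sum>k\<in>{1..N}. sgen q z (k, snd a) b * eps [(fst a, k)])" by simp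
  also have "\<dots> = sgen q z (fst a, snd a) b * eps [(fst a, fst a)]"
    using h by (subst sum1[where kk="fst a"]) (auto simp: eps_def)
  finally show ?thesis by (simp add: eps_def)
qed

lemma lfun_Nil[simp]: "lfun N q z A B [] = (if A = B then 1 else 0)"
  by (simp add: lfun_def eps_def)

lemma lfun_Cons: "fst a \<in> {1..N} \<Longrightarrow>
   lfun N q z A B (a # w) = (\<Sum>k\<in>{1..N}. sgen q z a (A, k) * lfun N q z k B w)"
proof -
  assume h: "fst a \<in> {1..N}"
  have "lfun N q z A B (a # w) = (\<Sum>k\<in>{1..N}. sig1 N q z [(A, k)] a * sigf N q z w [(k, B)])"
    unfolding lfun_def sigf.simps conv_Cons by (simp only: dr_def conv_Nil fst_conv snd_conv)
  also have "\<dots> = (\<Sum>k\<in>{1..N}. sgen q z a (A, k) * lfun N q z k B w)"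
    using h by (intro sum.cong refl) (simp only: sig1_single lfun_def)
  finally show ?thesis .
qed

lemma lfun_diag_Cons:
  assumes "r \<in> {1..N}" "A \<in> {1..N}"
  shows "lfun N q z A B ((r, r) # w) = z * (if r = A then q else 1) * lfun N q z A B w"
proof -
  have "lfun N q z A B ((r, r) # w) = (\<Sum>k\<in>{1..N}. sgen q z (r, r) (A, k) * lfun N q z k B w)"
    by (rule lfun_Cons) (use assms in simp)
  also have "\<dots> = sgen q z (r, r) (A, A) * lfun N q z A B w"
    apply (subst sum1[where kk=A])
    using assms apply simp
    using assms apply (simp add: sgen_eq)
    apply simp done
  also have "\<dots> = z * (if r = A then q else 1) * lfun N q z A B w"
    by (cases "r = A") (simp_all add: sgen_def)
  finally show ?thesis .
qed

lemma lfun_up_Cons: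
  assumes "r \<in> {1..N}" "r < c"
  shows "lfun N q z A B ((r, c) # w) = (if c = A then z * (q - inverse q) * lfun N q z r B w else 0)"
proof -
  have "lfun N q z A B ((r, c) # w) = (\<Sum>k\<in>{1..N}. sgen q z (r, c) (A, k) * lfun N q z k B w)"
    by (rule lfun_Cons) (use assms in simp)
  also have "\<dots> = sgen q z (r, c) (A, r) * lfun N q z r B w"
    apply (subst sum1[where kk=r])
    using assms apply simp
    using assms apply (simp add: sgen_eq)
    apply simp done
  also have "\<dots> = (if c = A then z * (q - inverse q) * lfun N q z r B w else 0)"
    using assms by (cases "c = A") (simp_all add: sgen_def)
  finally show ?thesis .
qed

lemma lfun_low_Cons:
  assumes "r \<in> {1..N}" "c < r"
  shows "lfun N q z A B ((r, c) # w) = 0"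
proof -
  have "lfun N q z A B ((r, c) # w) = (\<Sum>k\<in>{1..N}. sgen q z (r, c) (A, k) * lfun N q z k B w)"
    by (rule lfun_Cons) (use assms in simp)
  also have "\<dots> = 0" using assms by (intro sum.neutral) (auto simp: sgen_eq)
  finally show ?thesis .
qed

lemma lfun_upper_zero: "valid N w \<Longrightarrow> A < B \<Longrightarrow> A \<in> {1..N} \<Longrightarrow> lfun N q z A B w = 0"
proof (induction w arbitrary: A)
  case Nil then show ?case by simp
next
  case (Cons a w)
  obtain r c where a: "a = (r, c)" by fastforce
  show ?case
  proof (cases "r = c")
    case True
    then show ?thesis using Cons a by (simp add: lfun_diag_Cons)
  next
    case False
    then show ?thesis
    proof (cases "r < c")
      case True
      then show ?thesis using Cons a by (simp add: lfun_up_Cons)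
    next
      case False
      then show ?thesis using Cons a \<open>r \<noteq> c\<close> by (simp add: lfun_low_Cons)
    qed
  qed
qed

definition Kc :: "'k::field \<Rightarrow> 'k \<Rightarrow> nat \<Rightarrow> nat \<Rightarrow> 'k" where
  "Kc q z A = (\<lambda>r. z * (if r = A then q else 1))"

lemma lfun_diag_chr: "valid N w \<Longrightarrow> A \<in> {1..N} \<Longrightarrow> lfun N q z A A w = chr (Kc q z A) w"
proof (induction w)
  case Nil then show ?case by simp
next
  case (Cons a w)
  obtain r c where a: "a = (r, c)" by fastforce
  show ?case
  proof (cases "r = c")
    case True
    then show ?thesis using Cons a by (simp add: lfun_diag_Cons chr_Cons Kc_def)
  next
    case False
    show ?thesis
    proof (cases "r < c")
      case True
      then show ?thesis using Cons a by (simp add: lfun_up_Cons chr_Cons lfun_upper_zero)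
    next
      case False
      then show ?thesis using Cons a \<open>r \<noteq> c\<close> by (simp add: lfun_low_Cons chr_Cons)
    qed
  qed
qed


lemma dr_L_diag: "x \<in> {1..N} \<Longrightarrow> A \<in> {1..N} \<Longrightarrow>
  dr (x, x) (lfun N q z A B) = (\<lambda>v. z * (if x = A then q else 1) * lfun N q z A B v)"
  by (rule ext) (simp add: dr_def lfun_diag_Cons)

lemma dr_L_up: "x \<in> {1..N} \<Longrightarrow> x < y \<Longrightarrow>
  dr (x, y) (lfun N q z A B) = (if y = A then (\<lambda>v. z * (q - inverse q) * lfun N q z x B v) else (\<lambda>v. 0))"
  by (rule ext) (simp add: dr_def lfun_up_Cons)

lemma dr_L_low: "x \<in> {1..N} \<Longrightarrow> y < x \<Longrightarrow> dr (x, y) (lfun N q z A B) = (\<lambda>v. 0)"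
  by (rule ext) (simp add: dr_def lfun_low_Cons)

lemma D_ll_diag:
  assumes "a \<in> {1..N}" "A \<in> {1..N}" "C \<in> {1..N}"
  shows "conv N (lfun N q z A B) (lfun N q z C D) ((a, a) # w) =
    z * (if a = A then q else 1) * (z * (if a = C then q else 1)) * conv N (lfun N q z A B) (lfun N q z C D) w"
proof -
  have "conv N (lfun N q z A B) (lfun N q z C D) ((a, a) # w) =
     (\<Sum>k\<in>{1..N}. conv N (dr (a, k) (lfun N q z A B)) (dr (k, a) (lfun N q z C D)) w)"
    by (simp add: conv_Cons)
  also have "\<dots> = conv N (dr (a, a) (lfun N q z A B)) (dr (a, a) (lfun N q z C D)) w"
  proof (rule sum1[OF assms(1)])
    fix k assume k: "k \<in> {1..N}" "k \<noteq> a"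
    show "conv N (dr (a, k) (lfun N q z A B)) (dr (k, a) (lfun N q z C D)) w = 0"
    proof (cases "k < a")
      case True
      then show ?thesis using assms by (simp add: dr_L_low conv_zero_l)
    next
      case False
      then have "a < k" using k by simp
      then show ?thesis using k by (simp add: dr_L_low conv_zero_r)
    qed
  qed
  also have "\<dots> = z * (if a = A then q else 1) * (z * (if a = C then q else 1)) * conv N (lfun N q z A B) (lfun N q z C D) w"
    using assms by (simp add: dr_L_diag conv_smult_l conv_smult_r)
  finally show ?thesis .
qed

lemma D_ll_low:
  assumes "a \<in> {1..N}" "c < a"
  shows "conv N (lfun N q z A B) (lfun N q z C D) ((a, c) # w) = 0"
proof -
  have "conv N (lfun N q z A B) (lfun N q z C D) ((a, c) # w) =
     (\<Sum>k\<in>{1..N}. conv N (dr (a, k) (lfun N q z A B)) (dr (k, c) (lfun N q z C D)) w)"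
    by (simp add: conv_Cons)
  also have "\<dots> = 0"
  proof (rule sum.neutral, rule ballI)
    fix k assume k: "k \<in> {1..N}"
    show "conv N (dr (a, k) (lfun N q z A B)) (dr (k, c) (lfun N q z C D)) w = 0"
    proof (cases "k < a")
      case True
      then show ?thesis using assms by (simp add: dr_L_low conv_zero_l)
    next
      case False
      then have "c < k" using assms by simp
      then show ?thesis using k by (simp add: dr_L_low conv_zero_r)
    qed
  qed
  finally show ?thesis .
qed

lemma D_ll_up:
  assumes "a \<in> {1..N}" "c \<in> {1..N}" "a < c" "A \<in> {1..N}" "C \<in> {1..N}"
  shows "conv N (lfun N q z A B) (lfun N q z C D) ((a, c) # w) =
     (if c = C then z * (if a = A then q else 1) * (z * (q - inverse q)) * conv N (lfun N q z A B) (lfun N q z a D) w else 0)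
   + (if c = A then z * (q - inverse q) * (z * (if c = C then q else 1)) * conv N (lfun N q z a B) (lfun N q z C D) w else 0)
   + (if a < A \<and> A < c \<and> c = C then z * (q - inverse q) * (z * (q - inverse q)) * conv N (lfun N q z a B) (lfun N q z A D) w else 0)"
  (is "?lhs = ?X1 + ?X2 + ?X3")
proof -
  let ?f = "\<lambda>k. conv N (dr (a, k) (lfun N q z A B)) (dr (k, c) (lfun N q z C D)) w"
  have "?lhs = (\<Sum>k\<in>{1..N}. ?f k)"
    by (simp add: conv_Cons)
  also have "\<dots> = (\<Sum>k\<in>{1..N}. (if k = a then ?X1 else 0) + (if k = c then ?X2 else 0) + (if k = A then ?X3 else 0))"
  proof (rule sum.cong[OF refl])
    fix k assume k: "k \<in> {1..N}"
    consider "k = a" | "k = c" | "k < a" | "c < k" | "a < k" "k < c" using assms by linarith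
    then show "?f k = (if k = a then ?X1 else 0) + (if k = c then ?X2 else 0) + (if k = A then ?X3 else 0)"
    proof cases
      case 1
      then show ?thesis using assms
        by (cases "c = C") (simp_all add: dr_L_diag dr_L_up conv_smult_l conv_smult_r conv_zero_r)
    next
      case 2
      then show ?thesis using assms
        by (cases "c = A") (simp_all add: dr_L_diag dr_L_up conv_smult_l conv_smult_r conv_zero_l)
    next
      case 3
      then show ?thesis using assms by (simp add: dr_L_low conv_zero_l)
    next
      case 4
      then show ?thesis using assms k by (simp add: dr_L_low conv_zero_r)
    next
      case 5
      then show ?thesis using assms k
        by (cases "k = A"; cases "c = C") (simp_all add: dr_L_up conv_smult_l conv_smult_r conv_zero_l conv_zero_r)
    qed
  qed
  also have "\<dots> = ?X1 + ?X2 + ?X3"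
    using assms by (simp add: sum.distrib sum.delta')
  finally show ?thesis .
qed


locale SL =
  fixes N :: nat and q z :: "'k::field"
  assumes q0: "q \<noteq> 0" and q2: "q ^ 2 \<noteq> 1" and N2: "N \<ge> 2" and zN: "z ^ N = inverse q"
begin

lemma z0: "z \<noteq> 0"
proof
  assume "z = 0"
  then have "z ^ N = 0" using N2 by simp
  then show False using zN q0 by simp
qed

lemma qq0: "q - inverse q \<noteq> 0"
proof
  assume "q - inverse q = 0"
  then have "q * q = 1" using q0 by (simp add: field_simps)
  then show False using q2 by (simp add: power2_eq_square)
qed

abbreviation L where "L \<equiv> lfun N q z"

lemma conv_L0_l: "valid N w \<Longrightarrow> A < B \<Longrightarrow> A \<in> {1..N} \<Longrightarrow> conv N (L A B) g w = 0"
proof -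
  assume h: "valid N w" "A < B" "A \<in> {1..N}"
  have "conv N (L A B) g w = conv N (\<lambda>v. 0) g w"
    by (rule conv_cong) (use h in \<open>auto simp: lfun_upper_zero\<close>)
  then show ?thesis by (simp add: conv_zero_l)
qed

lemma conv_L0_r: "valid N w \<Longrightarrow> A < B \<Longrightarrow> A \<in> {1..N} \<Longrightarrow> conv N g (L A B) w = 0"
proof -
  assume h: "valid N w" "A < B" "A \<in> {1..N}"
  have "conv N g (L A B) w = conv N g (\<lambda>v. 0) w"
    by (rule conv_cong) (use h in \<open>auto simp: lfun_upper_zero\<close>)
  then show ?thesis by (simp add: conv_zero_r)
qed

lemma conv_Ldiag_l: "valid N w \<Longrightarrow> A \<in> {1..N} \<Longrightarrow> conv N (L A A) g w = conv N (chr (Kc q z A)) g w"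
  by (rule conv_cong) (auto simp: lfun_diag_chr)

lemma conv_Ldiag_r: "valid N w \<Longrightarrow> A \<in> {1..N} \<Longrightarrow> conv N g (L A A) w = conv N g (chr (Kc q z A)) w"
  by (rule conv_cong) (auto simp: lfun_diag_chr)

lemma WT:
  assumes "valid N w" "A \<in> {1..N}" "B \<in> {1..N}"
  shows "c B * conv N (L A B) (chr c) w = c A * conv N (chr c) (L A B) w"
  using assms
proof (induction w arbitrary: A)
  case Nil
  then show ?case by simp
next
  case (Cons x w)
  obtain a b where x: "x = (a, b)" by fastforce
  have ab: "a \<in> {1..N}" "b \<in> {1..N}" "valid N w" using Cons.prems x by auto
  consider "a = b" | "a < b" | "b < a" by linarith
  then show ?case
  proof cases
    case 1
    have "c B * conv N (L A B) (chr c) ((a, b) # w) = c a * (z * (if a = A then q else 1)) * (c B * conv N (L A B) (chr c) w)"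
      using 1 ab Cons.prems by (simp add: conv_chr_r dr_L_diag conv_smult_l)
    also have "\<dots> = c a * (z * (if a = A then q else 1)) * (c A * conv N (chr c) (L A B) w)"
      using Cons.IH[of A] ab Cons.prems by simp
    also have "\<dots> = c A * conv N (chr c) (L A B) ((a, b) # w)"
      using 1 ab Cons.prems by (simp add: conv_chr_l dr_L_diag conv_smult_r)
    finally show ?thesis using x by simp
  next
    case 2
    show ?thesis
    proof (cases "b = A")
      case True
      have "c B * conv N (L A B) (chr c) ((a, b) # w) = c b * (z * (q - inverse q)) * (c B * conv N (L a B) (chr c) w)"
        using 2 True ab by (simp add: conv_chr_r dr_L_up conv_smult_l)
      also have "\<dots> = c b * (z * (q - inverse q)) * (c a * conv N (chr c) (L a B) w)"
        using Cons.IH[of a] ab Cons.prems by simp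
      also have "\<dots> = c A * conv N (chr c) (L A B) ((a, b) # w)"
        using 2 True ab by (simp add: conv_chr_l dr_L_up conv_smult_r)
      finally show ?thesis using x by simp
    next
      case False
      then show ?thesis using 2 ab x by (simp add: conv_chr_l conv_chr_r dr_L_up conv_zero_l conv_zero_r)
    qed
  next
    case 3
    then show ?thesis using ab x by (simp add: conv_chr_l conv_chr_r dr_L_low conv_zero_l conv_zero_r)
  qed
qed

lemma WTc:
  assumes "valid N w" "A \<in> {1..N}" "B \<in> {1..N}" "c A = c B" "c A \<noteq> 0"
  shows "conv N (L A B) (chr c) w = conv N (chr c) (L A B) w"
  using WT[OF assms(1-3), of c] assms(4,5) by simp

lemma Kc_nz: "Kc q z A r \<noteq> 0"
  using z0 q0 by (simp add: Kc_def)

lemma Kcomm: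
  assumes "valid N w" "A \<in> {1..N}" "B \<in> {1..N}" "D \<in> {1..N}" "D \<noteq> A" "D \<noteq> B"
  shows "conv N (L A B) (L D D) w = conv N (L D D) (L A B) w"
  using WTc[OF assms(1-3), of "Kc q z D"] assms Kc_nz
  by (simp add: conv_Ldiag_l conv_Ldiag_r Kc_def)

end


context SL
begin

lemma C_rel:
  assumes "valid N w" "1 \<le> n" "n < r" "r < i" "i < j" "j \<le> N"
  shows "conv N (L r n) (L j i) w = conv N (L j i) (L r n) w"
  using assms
proof (induction w arbitrary: n r i j)
  case Nil
  then show ?case by simp
next
  case (Cons x w)
  obtain a c where x: "x = (a, c)" by fastforce
  have ac: "a \<in> {1..N}" "c \<in> {1..N}" "valid N w" using Cons.prems x by auto
  have rng: "n \<in> {1..N}" "r \<in> {1..N}" "i \<in> {1..N}" "j \<in> {1..N}" using Cons.prems by auto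
  consider "a = c" | "c < a" | "a < c" by linarith
  then show ?case
  proof cases
    case 1
    then show ?thesis using x ac rng Cons.IH[of n r i j] Cons.prems
      by (simp add: D_ll_diag mult_ac)
  next
    case 2
    then show ?thesis using x ac by (simp add: D_ll_low)
  next
    case 3
    have L: "conv N (L r n) (L j i) ((a, c) # w) =
     (if c = j then z * (if a = r then q else 1) * (z * (q - inverse q)) * conv N (L r n) (L a i) w else 0)
   + (if c = r then z * (q - inverse q) * (z * (if c = j then q else 1)) * conv N (L a n) (L j i) w else 0)
   + (if a < r \<and> r < c \<and> c = j then z * (q - inverse q) * (z * (q - inverse q)) * conv N (L a n) (L r i) w else 0)"
      using 3 ac rng by (intro D_ll_up) auto
    have R: "conv N (L j i) (L r n) ((a, c) # w) =
     (if c = r then z * (if a = j then q else 1) * (z * (q - inverse q)) * conv N (L j i) (L a n) w else 0)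
   + (if c = j then z * (q - inverse q) * (z * (if c = r then q else 1)) * conv N (L a i) (L r n) w else 0)
   + (if a < j \<and> j < c \<and> c = r then z * (q - inverse q) * (z * (q - inverse q)) * conv N (L a i) (L j n) w else 0)"
      using 3 ac rng by (intro D_ll_up) auto
    consider "c = r" | "c = j" | "c \<noteq> r" "c \<noteq> j" by blast
    then show ?thesis
    proof cases
      case 1
      have e: "conv N (L a n) (L j i) w = conv N (L j i) (L a n) w"
      proof -
        consider "a < n" | "a = n" | "n < a" by linarith
        then show ?thesis
        proof cases
          case 1 then show ?thesis using ac by (simp add: conv_L0_l conv_L0_r)
        next
          case 2 then show ?thesis using ac rng Cons.prems Kcomm[of w j i n] by simp
        next
          case 3 then show ?thesis using Cons.IH[of n a i j] ac Cons.prems \<open>a < c\<close> \<open>c = r\<close> by simp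
        qed
      qed
      show ?thesis using x L R 1 \<open>a < c\<close> Cons.prems e by simp
    next
      case 2
      have e: "conv N (L r n) (L a i) w = conv N (L a i) (L r n) w"
      proof -
        consider "a < i" | "a = i" | "i < a" by linarith
        then show ?thesis
        proof cases
          case 1 then show ?thesis using ac by (simp add: conv_L0_l conv_L0_r)
        next
          case 2 then show ?thesis using ac rng Cons.prems Kcomm[of w r n i] by simp
        next
          case 3 then show ?thesis using Cons.IH[of n r i a] ac Cons.prems \<open>a < c\<close> \<open>c = j\<close> by simp
        qed
      qed
      have e2: "conv N (L a n) (L r i) w = 0" using ac rng Cons.prems by (simp add: conv_L0_r)
      have ar: "a \<noteq> r \<or> a < i" using Cons.prems by auto
      show ?thesis
      proof (cases "a < i")
        case True
        then show ?thesis using x L R 2 \<open>a < c\<close> Cons.prems ac e2 by (simp add: conv_L0_l conv_L0_r)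
      next
        case False
        then have "a \<noteq> r" using Cons.prems by auto
        then show ?thesis using x L R 2 \<open>a < c\<close> Cons.prems e e2 by simp
      qed
    next
      case 3
      then show ?thesis using x L R by simp
    qed
  qed
qed

end


context SL
begin

lemma WTK:
  assumes "valid N w" "i \<in> {1..N}" "n \<in> {1..N}" "n \<noteq> i"
  shows "conv N (L i i) (L i n) w = inverse q * conv N (L i n) (L i i) w"
proof -
  have "Kc q z i n * conv N (L i n) (chr (Kc q z i)) w = Kc q z i i * conv N (chr (Kc q z i)) (L i n) w"
    by (rule WT) (use assms in auto)
  then have "z * conv N (L i n) (L i i) w = z * q * conv N (L i i) (L i n) w"
    using assms by (simp add: Kc_def conv_Ldiag_l conv_Ldiag_r)
  then show ?thesis using z0 q0 by (simp add: field_simps)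
qed

lemma R_rel:
  assumes "valid N w" "1 \<le> n" "n < i" "i < j" "j \<le> N"
  shows "conv N (L i n) (L j i) w - conv N (L j i) (L i n) w = (q - inverse q) * conv N (L j n) (L i i) w"
  using assms
proof (induction w arbitrary: n i j)
  case Nil
  then show ?case by simp
next
  case (Cons x w)
  obtain a c where x: "x = (a, c)" by fastforce
  have ac: "a \<in> {1..N}" "c \<in> {1..N}" "valid N w" using Cons.prems x by auto
  have rng: "n \<in> {1..N}" "i \<in> {1..N}" "j \<in> {1..N}" using Cons.prems by auto
  consider "a = c" | "c < a" | "a < c" by linarith
  then show ?case
  proof cases
    case 1
    let ?s = "z * (if a = i then q else 1) * (z * (if a = j then q else 1))"
    have "conv N (L i n) (L j i) ((a, c) # w) - conv N (L j i) (L i n) ((a, c) # w)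
        = ?s * (conv N (L i n) (L j i) w - conv N (L j i) (L i n) w)"
      using 1 ac rng by (simp add: D_ll_diag algebra_simps)
    also have "\<dots> = ?s * ((q - inverse q) * conv N (L j n) (L i i) w)"
      using Cons.IH[of n i j] Cons.prems ac by simp
    also have "\<dots> = (q - inverse q) * conv N (L j n) (L i i) ((a, c) # w)"
      using 1 ac rng by (simp add: D_ll_diag algebra_simps)
    finally show ?thesis using x by simp
  next
    case 2
    then show ?thesis using x ac by (simp add: D_ll_low)
  next
    case 3
    have P1: "conv N (L i n) (L j i) ((a, c) # w) =
     (if c = j then z * (if a = i then q else 1) * (z * (q - inverse q)) * conv N (L i n) (L a i) w else 0)
   + (if c = i then z * (q - inverse q) * (z * (if c = j then q else 1)) * conv N (L a n) (L j i) w else 0)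
   + (if a < i \<and> i < c \<and> c = j then z * (q - inverse q) * (z * (q - inverse q)) * conv N (L a n) (L i i) w else 0)"
      using 3 ac rng by (intro D_ll_up) auto
    have P2: "conv N (L j i) (L i n) ((a, c) # w) =
     (if c = i then z * (if a = j then q else 1) * (z * (q - inverse q)) * conv N (L j i) (L a n) w else 0)
   + (if c = j then z * (q - inverse q) * (z * (if c = i then q else 1)) * conv N (L a i) (L i n) w else 0)
   + (if a < j \<and> j < c \<and> c = i then z * (q - inverse q) * (z * (q - inverse q)) * conv N (L a i) (L j n) w else 0)"
      using 3 ac rng by (intro D_ll_up) auto
    have P3: "conv N (L j n) (L i i) ((a, c) # w) =
     (if c = i then z * (if a = j then q else 1) * (z * (q - inverse q)) * conv N (L j n) (L a i) w else 0)
   + (if c = j then z * (q - inverse q) * (z * (if c = i then q else 1)) * conv N (L a n) (L i i) w else 0)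
   + (if a < j \<and> j < c \<and> c = i then z * (q - inverse q) * (z * (q - inverse q)) * conv N (L a n) (L j i) w else 0)"
      using 3 ac rng by (intro D_ll_up) auto
    consider "c = i" | "c = j" | "c \<noteq> i" "c \<noteq> j" by blast
    then show ?thesis
    proof cases
      case 1
      have e: "conv N (L a n) (L j i) w = conv N (L j i) (L a n) w"
      proof -
        consider "a < n" | "a = n" | "n < a" by linarith
        then show ?thesis
        proof cases
          case 1 then show ?thesis using ac by (simp add: conv_L0_l conv_L0_r)
        next
          case 2 then show ?thesis using ac rng Cons.prems Kcomm[of w j i n] by simp
        next
          case 3 then show ?thesis using C_rel[of w n a i j] ac Cons.prems \<open>a < c\<close> \<open>c = i\<close> by simp
        qed
      qed
      have e2: "conv N (L j n) (L a i) w = 0" using ac \<open>a < c\<close> \<open>c = i\<close> by (simp add: conv_L0_r)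
      show ?thesis using x P1 P2 P3 1 \<open>a < c\<close> Cons.prems e e2 by simp
    next
      case 2
      consider "a < i" | "a = i" | "i < a" by linarith
      then show ?thesis
      proof cases
        case 1
        have "conv N (L i n) (L a i) w = 0" "conv N (L a i) (L i n) w = 0"
          using ac 1 by (simp_all add: conv_L0_l conv_L0_r)
        then have ee: "conv N (L i n) (L j i) ((a, c) # w) = z * (q - inverse q) * (z * (q - inverse q)) * conv N (L a n) (L i i) w"
          "conv N (L j i) (L i n) ((a, c) # w) = 0"
          "conv N (L j n) (L i i) ((a, c) # w) = z * (q - inverse q) * z * conv N (L a n) (L i i) w"
          using P1 P2 P3 2 1 Cons.prems by simp_all
        show ?thesis unfolding x by (simp only: ee) (simp add: algebra_simps)
      next
        case 11: 2
        have k: "conv N (L i i) (L i n) w = inverse q * conv N (L i n) (L i i) w"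
          using WTK[of w i n] ac rng Cons.prems by simp
        have "conv N (L i n) (L j i) ((a, c) # w) - conv N (L j i) (L i n) ((a, c) # w)
           = z * q * (z * (q - inverse q)) * conv N (L i n) (L i i) w - z * (q - inverse q) * z * conv N (L i i) (L i n) w"
          using P1 P2 2 11 Cons.prems by simp
        also have "\<dots> = (q - inverse q) * (z * (q - inverse q) * z * conv N (L i n) (L i i) w)"
        proof -
          have k': "conv N (L i n) (L i i) w = q * conv N (L i i) (L i n) w" using k q0 by simp
          show ?thesis unfolding k' using q0 by (simp add: field_simps)
        qed
        also have "\<dots> = (q - inverse q) * conv N (L j n) (L i i) ((a, c) # w)"
          using P3 2 11 Cons.prems by simp
        finally show ?thesis using x by simp
      next
        case 3
        have ih: "conv N (L i n) (L a i) w - conv N (L a i) (L i n) w = (q - inverse q) * conv N (L a n) (L i i) w"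
          using Cons.IH[of n i a] Cons.prems ac 3 \<open>a < c\<close> 2 by simp
        have e1: "conv N (L i n) (L j i) ((a, c) # w) = z * (q - inverse q) * z * conv N (L i n) (L a i) w"
          and e2: "conv N (L j i) (L i n) ((a, c) # w) = z * (q - inverse q) * z * conv N (L a i) (L i n) w"
          and e3: "conv N (L j n) (L i i) ((a, c) # w) = z * (q - inverse q) * z * conv N (L a n) (L i i) w"
          using P1 P2 P3 2 3 Cons.prems by simp_all
        have "conv N (L i n) (L j i) ((a, c) # w) - conv N (L j i) (L i n) ((a, c) # w)
            = z * (q - inverse q) * z * (conv N (L i n) (L a i) w - conv N (L a i) (L i n) w)"
          unfolding e1 e2 by (simp add: algebra_simps)
        also have "\<dots> = z * (q - inverse q) * z * ((q - inverse q) * conv N (L a n) (L i i) w)"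
          by (simp only: ih)
        also have "\<dots> = (q - inverse q) * conv N (L j n) (L i i) ((a, c) # w)"
          unfolding e3 by (simp add: algebra_simps)
        finally show ?thesis using x by simp
      qed
    next
      case 3
      then show ?thesis using x P1 P2 P3 by simp
    qed
  qed
qed

end


context SL
begin

lemma Q_rel:
  assumes "valid N w" "1 \<le> i" "i < j" "j \<le> N" "m \<in> {1..N}"
  shows "conv N (L i m) (L j m) w = q * conv N (L j m) (L i m) w"
  using assms
proof (induction w arbitrary: i j)
  case Nil
  then show ?case by simp
next
  case (Cons x w)
  obtain a c where x: "x = (a, c)" by fastforce
  have ac: "a \<in> {1..N}" "c \<in> {1..N}" "valid N w" using Cons.prems x by auto
  have rng: "i \<in> {1..N}" "j \<in> {1..N}" using Cons.prems by auto
  consider "a = c" | "c < a" | "a < c" by linarith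
  then show ?case
  proof cases
    case 1
    let ?s = "z * (if a = i then q else 1) * (z * (if a = j then q else 1))"
    have "conv N (L i m) (L j m) ((a, c) # w) = ?s * conv N (L i m) (L j m) w"
      using 1 ac rng by (simp add: D_ll_diag)
    also have "\<dots> = ?s * (q * conv N (L j m) (L i m) w)"
      using Cons.IH[of i j] Cons.prems ac by simp
    also have "\<dots> = q * conv N (L j m) (L i m) ((a, c) # w)"
      using 1 ac rng by (simp add: D_ll_diag algebra_simps)
    finally show ?thesis using x by simp
  next
    case 2
    then show ?thesis using x ac by (simp add: D_ll_low)
  next
    case 3
    have P1: "conv N (L i m) (L j m) ((a, c) # w) =
     (if c = j then z * (if a = i then q else 1) * (z * (q - inverse q)) * conv N (L i m) (L a m) w else 0)
   + (if c = i then z * (q - inverse q) * (z * (if c = j then q else 1)) * conv N (L a m) (L j m) w else 0)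
   + (if a < i \<and> i < c \<and> c = j then z * (q - inverse q) * (z * (q - inverse q)) * conv N (L a m) (L i m) w else 0)"
      using 3 ac rng by (intro D_ll_up) auto
    have P2: "conv N (L j m) (L i m) ((a, c) # w) =
     (if c = i then z * (if a = j then q else 1) * (z * (q - inverse q)) * conv N (L j m) (L a m) w else 0)
   + (if c = j then z * (q - inverse q) * (z * (if c = i then q else 1)) * conv N (L a m) (L i m) w else 0)
   + (if a < j \<and> j < c \<and> c = i then z * (q - inverse q) * (z * (q - inverse q)) * conv N (L a m) (L j m) w else 0)"
      using 3 ac rng by (intro D_ll_up) auto
    consider "c = i" | "c = j" | "c \<noteq> i" "c \<noteq> j" by blast
    then show ?thesis
    proof cases
      case 1
      have ih: "conv N (L a m) (L j m) w = q * conv N (L j m) (L a m) w"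
        using Cons.IH[of a j] Cons.prems ac 1 \<open>a < c\<close> by simp
      have e1: "conv N (L i m) (L j m) ((a, c) # w) = z * (q - inverse q) * z * conv N (L a m) (L j m) w"
        and e2: "conv N (L j m) (L i m) ((a, c) # w) = z * (q - inverse q) * z * conv N (L j m) (L a m) w"
        using P1 P2 1 Cons.prems \<open>a < c\<close> by simp_all
      show ?thesis unfolding x e1 e2 ih by (simp add: algebra_simps)
    next
      case 2
      consider "a < i" | "a = i" | "i < a" by linarith
      then show ?thesis
      proof cases
        case 1
        have ih: "conv N (L a m) (L i m) w = q * conv N (L i m) (L a m) w"
          using Cons.IH[of a i] Cons.prems ac 1 by simp
        have e1: "conv N (L i m) (L j m) ((a, c) # w) = z * (z * (q - inverse q)) * conv N (L i m) (L a m) w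
               + z * (q - inverse q) * (z * (q - inverse q)) * conv N (L a m) (L i m) w"
          and e2: "conv N (L j m) (L i m) ((a, c) # w) = z * (q - inverse q) * z * conv N (L a m) (L i m) w"
          using P1 P2 1 2 Cons.prems by simp_all
        show ?thesis unfolding x e1 e2 ih using q0 by (simp add: field_simps)
      next
        case 11: 2
        have e1: "conv N (L i m) (L j m) ((a, c) # w) = z * q * (z * (q - inverse q)) * conv N (L i m) (L i m) w"
          and e2: "conv N (L j m) (L i m) ((a, c) # w) = z * (q - inverse q) * z * conv N (L i m) (L i m) w"
          using P1 P2 11 2 Cons.prems by simp_all
        show ?thesis unfolding x e1 e2 by (simp add: algebra_simps)
      next
        case 3
        have ih: "conv N (L i m) (L a m) w = q * conv N (L a m) (L i m) w"
          using Cons.IH[of i a] Cons.prems ac 3 2 \<open>a < c\<close> by simp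
        have e1: "conv N (L i m) (L j m) ((a, c) # w) = z * (z * (q - inverse q)) * conv N (L i m) (L a m) w"
          and e2: "conv N (L j m) (L i m) ((a, c) # w) = z * (q - inverse q) * z * conv N (L a m) (L i m) w"
          using P1 P2 3 2 Cons.prems by simp_all
        show ?thesis unfolding x e1 e2 ih by (simp add: algebra_simps)
      qed
    next
      case 3
      then show ?thesis using x P1 P2 by simp
    qed
  qed
qed

lemma Q'_rel:
  assumes "valid N w" "1 \<le> t" "t + 2 \<le> N"
  shows "conv N (L (t+2) t) (L (t+2) (t+1)) w = q * conv N (L (t+2) (t+1)) (L (t+2) t) w"
  using assms
proof (induction w)
  case Nil
  then show ?case by simp
next
  case (Cons x w)
  obtain a c where x: "x = (a, c)" by fastforce
  have ac: "a \<in> {1..N}" "c \<in> {1..N}" "valid N w" using Cons.prems x by auto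
  have rng: "t \<in> {1..N}" "t+1 \<in> {1..N}" "t+2 \<in> {1..N}" using Cons.prems by auto
  consider "a = c" | "c < a" | "a < c" by linarith
  then show ?case
  proof cases
    case 1
    let ?s = "z * (if a = t+2 then q else 1) * (z * (if a = t+2 then q else 1))"
    have "conv N (L (t+2) t) (L (t+2) (t+1)) ((a, c) # w) = ?s * conv N (L (t+2) t) (L (t+2) (t+1)) w"
      using 1 ac rng by (simp add: D_ll_diag)
    also have "\<dots> = ?s * (q * conv N (L (t+2) (t+1)) (L (t+2) t) w)"
      using Cons.IH Cons.prems ac by simp
    also have "\<dots> = q * conv N (L (t+2) (t+1)) (L (t+2) t) ((a, c) # w)"
      using 1 ac rng by (simp add: D_ll_diag algebra_simps)
    finally show ?thesis using x by simp
  next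
    case 2
    then show ?thesis using x ac by (simp add: D_ll_low)
  next
    case 3
    have P1: "conv N (L (t+2) t) (L (t+2) (t+1)) ((a, c) # w) =
     (if c = t+2 then z * (if a = t+2 then q else 1) * (z * (q - inverse q)) * conv N (L (t+2) t) (L a (t+1)) w else 0)
   + (if c = t+2 then z * (q - inverse q) * (z * (if c = t+2 then q else 1)) * conv N (L a t) (L (t+2) (t+1)) w else 0)
   + (if a < t+2 \<and> t+2 < c \<and> c = t+2 then z * (q - inverse q) * (z * (q - inverse q)) * conv N (L a t) (L (t+2) (t+1)) w else 0)"
      using 3 ac rng by (intro D_ll_up) auto
    have P2: "conv N (L (t+2) (t+1)) (L (t+2) t) ((a, c) # w) =
     (if c = t+2 then z * (if a = t+2 then q else 1) * (z * (q - inverse q)) * conv N (L (t+2) (t+1)) (L a t) w else 0)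
   + (if c = t+2 then z * (q - inverse q) * (z * (if c = t+2 then q else 1)) * conv N (L a (t+1)) (L (t+2) t) w else 0)
   + (if a < t+2 \<and> t+2 < c \<and> c = t+2 then z * (q - inverse q) * (z * (q - inverse q)) * conv N (L a (t+1)) (L (t+2) t) w else 0)"
      using 3 ac rng by (intro D_ll_up) auto
    show ?thesis
    proof (cases "c = t+2")
      case False
      then show ?thesis using x P1 P2 by simp
    next
      case True
      then have e1: "conv N (L (t+2) t) (L (t+2) (t+1)) ((a, c) # w) =
          z * (z * (q - inverse q)) * conv N (L (t+2) t) (L a (t+1)) w
          + z * (q - inverse q) * (z * q) * conv N (L a t) (L (t+2) (t+1)) w"
        and e2: "conv N (L (t+2) (t+1)) (L (t+2) t) ((a, c) # w) =
          z * (z * (q - inverse q)) * conv N (L (t+2) (t+1)) (L a t) w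
          + z * (q - inverse q) * (z * q) * conv N (L a (t+1)) (L (t+2) t) w"
        using P1 P2 3 by simp_all
      consider "a < t" | "a = t" | "a = t + 1" using 3 True by linarith
      then show ?thesis
      proof cases
        case 1
        then show ?thesis unfolding x e1 e2 using ac by (simp add: conv_L0_l conv_L0_r)
      next
        case 2
        have k: "conv N (L (t+2) (t+1)) (L t t) w = conv N (L t t) (L (t+2) (t+1)) w"
          using Kcomm[of w "t+2" "t+1" t] ac rng by simp
        show ?thesis unfolding x e1 e2 using 2 ac k by (simp add: conv_L0_l conv_L0_r algebra_simps)
      next
        case 3
        have k: "conv N (L (t+2) t) (L (t+1) (t+1)) w = conv N (L (t+1) (t+1)) (L (t+2) t) w"
          using Kcomm[of w "t+2" t "t+1"] ac rng by simp
        have r: "conv N (L (t+1) t) (L (t+2) (t+1)) w - conv N (L (t+2) (t+1)) (L (t+1) t) w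
            = (q - inverse q) * conv N (L (t+2) t) (L (t+1) (t+1)) w"
          using R_rel[of w t "t+1" "t+2"] ac Cons.prems by simp
        have r': "conv N (L (t+1) t) (L (t+2) (t+1)) w = conv N (L (t+2) (t+1)) (L (t+1) t) w
            + (q - inverse q) * conv N (L (t+1) (t+1)) (L (t+2) t) w"
          using r k by (simp add: algebra_simps)
        show ?thesis unfolding x e1 e2 unfolding 3 r' k using q0 by (simp add: field_simps)
      qed
    qed
  qed
qed

end


definition nz :: "nat \<Rightarrow> (word \<Rightarrow> 'k::field) \<Rightarrow> word \<Rightarrow> 'k" where
  "nz N f = (\<lambda>w. if valid N w then f w else 0)"

definition mul :: "nat \<Rightarrow> (word \<Rightarrow> 'k::field) \<Rightarrow> (word \<Rightarrow> 'k) \<Rightarrow> word \<Rightarrow> 'k" where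
  "mul N f g = nz N (conv N f g)"

definition smul :: "'k::field \<Rightarrow> (word \<Rightarrow> 'k) \<Rightarrow> word \<Rightarrow> 'k" where
  "smul c f = (\<lambda>w. c * f w)"

definition fadd :: "(word \<Rightarrow> 'k::field) \<Rightarrow> (word \<Rightarrow> 'k) \<Rightarrow> word \<Rightarrow> 'k" where
  "fadd f g = (\<lambda>w. f w + g w)"

lemma nz_nz[simp]: "nz N (nz N f) = nz N f" by (rule ext) (simp add: nz_def)
lemma nz_mul[simp]: "nz N (mul N f g) = mul N f g" by (simp add: mul_def)
lemma mul_nz_l[simp]: "mul N (nz N f) g = mul N f g"
  unfolding mul_def nz_def by (rule ext) (auto intro!: conv_cong)
lemma mul_nz_r[simp]: "mul N f (nz N g) = mul N f g"
  unfolding mul_def nz_def by (rule ext) (auto intro!: conv_cong)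
lemma conv_assoc_fun: "conv N (conv N f g) h = conv N f (conv N g h)"
  by (rule ext) (rule conv_assoc)

lemma mul_assoc: "mul N (mul N f g) h = mul N f (mul N g h)"
proof -
  have "mul N (mul N f g) h = mul N (conv N f g) h" unfolding mul_def[of N f g] by (rule mul_nz_l)
  also have "\<dots> = nz N (conv N f (conv N g h))" unfolding mul_def by (simp only: conv_assoc_fun)
  also have "\<dots> = mul N f (mul N g h)" unfolding mul_def[of N g h] mul_nz_r by (simp add: mul_def)
  finally show ?thesis .
qed
lemma mul_smul_l[simp]: "mul N (smul c f) g = smul c (mul N f g)"
  by (rule ext) (simp add: mul_def nz_def smul_def conv_smult_l)
lemma mul_smul_r[simp]: "mul N f (smul c g) = smul c (mul N f g)"
  by (rule ext) (simp add: mul_def nz_def smul_def conv_smult_r)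
lemma smul_smul[simp]: "smul c (smul d f) = smul (c * d) f"
  by (simp add: smul_def mult.assoc)
lemma mul_fadd_l: "mul N (fadd f g) h = fadd (mul N f h) (mul N g h)"
  by (rule ext) (simp add: mul_def nz_def fadd_def conv_add_l)
lemma mul_fadd_r: "mul N h (fadd f g) = fadd (mul N h f) (mul N h g)"
  by (rule ext) (simp add: mul_def nz_def fadd_def conv_add_r)
lemma nz_smul: "nz N (smul c f) = smul c (nz N f)"
  by (rule ext) (simp add: nz_def smul_def)
lemma nz_fadd: "nz N (fadd f g) = fadd (nz N f) (nz N g)"
  by (rule ext) (simp add: nz_def fadd_def)
lemma smul_mul_nz: "smul c (mul N f g) = nz N (smul c (mul N f g))"
  by (rule ext) (simp add: nz_def smul_def mul_def)
lemma mul_zero_r: "mul N f (\<lambda>w. 0) = (\<lambda>w. 0)"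
  by (rule ext) (simp add: mul_def nz_def conv_zero_r)
lemma mul_zero_l: "mul N (\<lambda>w. 0) f = (\<lambda>w. 0)"
  by (rule ext) (simp add: mul_def nz_def conv_zero_l)

lemma eqH_nz: "eqH N f g \<longleftrightarrow> nz N f = nz N g"
  unfolding eqH_def nz_def by (auto simp: fun_eq_iff)

lemma nz_eqI: "(\<And>w. valid N w \<Longrightarrow> f w = g w) \<Longrightarrow> nz N f = nz N g"
  by (auto simp: nz_def)

lemma nz_conv: "nz N (conv N f g) = mul N f g" by (simp add: mul_def)

lemma mul_chr_chr: "mul N (chr c) (chr d) = nz N (chr (\<lambda>i. c i * d i))"
  by (rule ext) (simp add: mul_def nz_def conv_chr_chr)

lemma mul_chr_comm: "mul N (chr c) (chr d) = mul N (chr d) (chr c)"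
  by (simp add: mul_chr_chr mult.commute)

lemma mul_chr_comm2: "mul N (chr c) (mul N (chr d) P) = mul N (chr d) (mul N (chr c) P)"
  by (metis mul_assoc mul_chr_comm)

lemma mul_eps_l: "mul N eps f = nz N f"
  by (rule ext) (simp add: mul_def nz_def conv_eps_l)
lemma mul_eps_r: "mul N f eps = nz N f"
  by (rule ext) (simp add: mul_def nz_def conv_eps_r)


definition Kic :: "'k::field \<Rightarrow> 'k \<Rightarrow> nat \<Rightarrow> nat \<Rightarrow> 'k" where
  "Kic q z i = (\<lambda>r. inverse (z * (if r = i then q else 1)))"

context SL
begin

lemma Kic_nz: "Kic q z i r \<noteq> 0" using z0 q0 by (simp add: Kic_def)

lemma mul_L_chr:
  assumes "A \<in> {1..N}" "B \<in> {1..N}" "c B \<noteq> 0"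
  shows "mul N (L A B) (chr c) = smul (c A / c B) (mul N (chr c) (L A B))"
proof (rule ext)
  fix w
  show "mul N (L A B) (chr c) w = smul (c A / c B) (mul N (chr c) (L A B)) w"
  proof (cases "valid N w")
    case True
    have "c B * conv N (L A B) (chr c) w = c A * conv N (chr c) (L A B) w"
      by (rule WT) (use True assms in auto)
    then show ?thesis using True assms by (simp add: mul_def nz_def smul_def field_simps)
  qed (simp add: mul_def nz_def smul_def)
qed

lemma mul_L_chr2:
  assumes "A \<in> {1..N}" "B \<in> {1..N}" "c B \<noteq> 0"
  shows "mul N (L A B) (mul N (chr c) P) = smul (c A / c B) (mul N (chr c) (mul N (L A B) P))"
  by (simp add: mul_assoc[symmetric] mul_L_chr[of A B c, OF assms])

lemma mul_Ldiag: "A \<in> {1..N} \<Longrightarrow> nz N (L A A) = nz N (chr (Kc q z A))"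
  by (rule nz_eqI) (simp add: lfun_diag_chr)

lemma mul_Ldiag_l: "A \<in> {1..N} \<Longrightarrow> mul N (L A A) P = mul N (chr (Kc q z A)) P"
  by (metis mul_Ldiag mul_nz_l)
lemma mul_Ldiag_r: "A \<in> {1..N} \<Longrightarrow> mul N P (L A A) = mul N P (chr (Kc q z A))"
  by (metis mul_Ldiag mul_nz_r)

lemma fun_of_vals: "(\<And>w. valid N w \<Longrightarrow> f w = g w) \<Longrightarrow> nz N f = nz N g"
  by (rule nz_eqI)

lemma Rm:
  assumes "1 \<le> n" "n < i" "i < j" "j \<le> N"
  shows "mul N (L i n) (L j i) = fadd (mul N (L j i) (L i n)) (smul (q - inverse q) (mul N (L j n) (L i i)))"
proof (rule ext)
  fix w
  show "mul N (L i n) (L j i) w = fadd (mul N (L j i) (L i n)) (smul (q - inverse q) (mul N (L j n) (L i i))) w"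
    using R_rel[of w n i j] assms by (cases "valid N w") (auto simp: mul_def nz_def fadd_def smul_def algebra_simps)
qed

lemma Cm:
  assumes "1 \<le> n" "n < r" "r < i" "i < j" "j \<le> N"
  shows "mul N (L r n) (L j i) = mul N (L j i) (L r n)"
  using C_rel[of _ n r i j] assms by (auto simp: mul_def nz_def)

lemma Qm:
  assumes "1 \<le> i" "i < j" "j \<le> N" "m \<in> {1..N}"
  shows "mul N (L i m) (L j m) = smul q (mul N (L j m) (L i m))"
  using Q_rel[of _ i j m] assms by (auto simp: mul_def nz_def smul_def)

lemma Q'm:
  assumes "1 \<le> t" "t + 2 \<le> N"
  shows "mul N (L (t+2) t) (L (t+2) (t+1)) = smul q (mul N (L (t+2) (t+1)) (L (t+2) t))"
  using Q'_rel[of _ t] assms by (auto simp: mul_def nz_def smul_def)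

lemma mul_comm_then:
  assumes "mul N X Y = smul c (mul N Y X)"
  shows "mul N X (mul N Y P) = smul c (mul N Y (mul N X P))"
  by (simp add: mul_assoc[symmetric] assms)

end


lemma conv3: "valid N w \<Longrightarrow> conv N f (conv N g h) w = mul N f (mul N g h) w"
proof -
  assume v: "valid N w"
  have "conv N f (conv N g h) w = conv N f (mul N g h) w"
    by (rule conv_cong) (use v in \<open>auto simp: mul_def nz_def\<close>)
  then show ?thesis using v by (simp add: mul_def nz_def)
qed

lemma mul_lin3:
  assumes "\<And>w. P1 w - c2 * P2 w + c3 * P3 w = 0"
  shows "mul N g P1 w - c2 * mul N g P2 w + c3 * mul N g P3 w = 0"
proof -
  have "mul N g P1 w - c2 * mul N g P2 w + c3 * mul N g P3 w = mul N g (\<lambda>v. P1 v - c2 * P2 v + c3 * P3 v) w"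
    by (simp add: mul_def nz_def conv_add_r conv_diff_r conv_smult_r)
  also have "\<dots> = 0" using assms by (simp add: mul_def nz_def conv_zero_r)
  finally show ?thesis .
qed

context SL
begin

abbreviation Ki where "Ki i \<equiv> chr (Kic q z i)"

lemma xK: "i \<in> {1..N} \<Longrightarrow> n \<in> {1..N} \<Longrightarrow> n \<noteq> i \<Longrightarrow> mul N (L i n) (L i i) = smul q (mul N (L i i) (L i n))"
  using WTK[of _ i n] q0 by (auto simp: mul_def nz_def smul_def fun_eq_iff)

lemma eserreA:
  assumes "1 \<le> s" "s + 2 \<le> N"
  defines "x \<equiv> L (s+1) s" and "y \<equiv> L (s+2) (s+1)"
  shows "mul N x (mul N x y) w - (1 + q^2) * mul N x (mul N y x) w + q^2 * mul N y (mul N x x) w = 0"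
proof -
  define f where "f = L (s+2) s"
  define K where "K = L (s+1) (s+1)"
  define \<kappa> where "\<kappa> = q - inverse q"
  have R: "mul N x y = fadd (mul N y x) (smul \<kappa> (mul N f K))"
    unfolding x_def y_def f_def K_def \<kappa>_def using Rm[of s "s+1" "s+2"] assms by simp
  have Q: "mul N x f = smul q (mul N f x)"
    unfolding x_def f_def using Qm[of "s+1" "s+2" s] assms by simp
  have XK: "mul N x K = smul q (mul N K x)"
    unfolding x_def K_def using xK[of "s+1" s] assms by simp
  have h2: "mul N x (mul N f K) = smul (q*q) (mul N (mul N f K) x)"
  proof -
    have "mul N x (mul N f K) = mul N (mul N x f) K" by (simp add: mul_assoc)
    also have "\<dots> = smul q (mul N f (mul N x K))" by (simp add: Q mul_assoc)
    also have "\<dots> = smul (q*q) (mul N (mul N f K) x)" by (simp add: XK mul_assoc)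
    finally show ?thesis .
  qed
  have h1: "mul N x (mul N x y) = fadd (mul N x (mul N y x)) (smul (\<kappa>*(q*q)) (mul N (mul N f K) x))"
    by (simp add: R mul_fadd_r h2)
  have h3: "mul N x (mul N y x) = fadd (mul N y (mul N x x)) (smul \<kappa> (mul N (mul N f K) x))"
    by (simp add: mul_assoc[symmetric] R mul_fadd_l)
  have a: "mul N x (mul N x y) w = mul N x (mul N y x) w + \<kappa> * (q*q) * mul N (mul N f K) x w"
    using h1 by (simp add: fadd_def smul_def fun_eq_iff)
  have b: "mul N x (mul N y x) w = mul N y (mul N x x) w + \<kappa> * mul N (mul N f K) x w"
    using h3 by (simp add: fadd_def smul_def fun_eq_iff)
  show ?thesis using a b by (simp add: algebra_simps power2_eq_square)
qed

end


lemma mul_conv_l: "mul N (conv N f g) P = mul N (mul N f g) P"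
  by (metis mul_nz_l nz_conv)
lemma mul_conv_r: "mul N P (conv N f g) = mul N P (mul N f g)"
  by (metis mul_nz_r nz_conv)

context SL
begin

lemma eserreB:
  assumes "1 \<le> s" "s + 2 \<le> N"
  defines "x \<equiv> L (s+1) s" and "y \<equiv> L (s+2) (s+1)"
  shows "mul N x (mul N y y) w - (1 + q^2) * mul N y (mul N x y) w + q^2 * mul N y (mul N y x) w = 0"
proof -
  define f where "f = L (s+2) s"
  define K where "K = L (s+1) (s+1)"
  define \<kappa> where "\<kappa> = q - inverse q"
  have R: "mul N x y = fadd (mul N y x) (smul \<kappa> (mul N f K))"
    unfolding x_def y_def f_def K_def \<kappa>_def using Rm[of s "s+1" "s+2"] assms by simp
  have Q: "mul N f y = smul q (mul N y f)"
    unfolding y_def f_def using Q'm[of s] assms by simp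
  have YK: "mul N K y = smul q (mul N y K)"
  proof -
    have "mul N y K = mul N y (chr (Kc q z (s+1)))" unfolding K_def using assms by (simp add: mul_Ldiag_r)
    also have "\<dots> = smul (Kc q z (s+1) (s+2) / Kc q z (s+1) (s+1)) (mul N (chr (Kc q z (s+1))) y)"
      unfolding y_def by (rule mul_L_chr) (use assms Kc_nz in auto)
    also have "Kc q z (s+1) (s+2) / Kc q z (s+1) (s+1) = inverse q" using z0 q0 by (simp add: Kc_def field_simps)
    also have "mul N (chr (Kc q z (s+1))) y = mul N K y" unfolding K_def using assms by (simp add: mul_Ldiag_l)
    finally have "mul N y K = smul (inverse q) (mul N K y)" .
    then have "smul q (mul N y K) = smul (q * inverse q) (mul N K y)" by simp
    then show ?thesis using q0 by (simp add: smul_def)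
  qed
  have h2: "mul N (mul N f K) y = smul (q*q) (mul N y (mul N f K))"
  proof -
    have "mul N (mul N f K) y = mul N f (mul N K y)" by (simp add: mul_assoc)
    also have "\<dots> = smul q (mul N (mul N f y) K)" by (simp add: YK mul_assoc)
    also have "\<dots> = smul (q*q) (mul N y (mul N f K))" by (simp add: Q mul_assoc)
    finally show ?thesis .
  qed
  have h1: "mul N x (mul N y y) = fadd (mul N y (mul N x y)) (smul (\<kappa>*(q*q)) (mul N y (mul N f K)))"
  proof -
    have "mul N x (mul N y y) = mul N (mul N x y) y" by (simp add: mul_assoc)
    also have "\<dots> = fadd (mul N (mul N y x) y) (smul \<kappa> (mul N (mul N f K) y))"
      by (simp add: R mul_fadd_l)
    also have "\<dots> = fadd (mul N y (mul N x y)) (smul (\<kappa>*(q*q)) (mul N y (mul N f K)))"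
      unfolding h2 by (simp only: mul_assoc smul_smul)
    finally show ?thesis .
  qed
  have h3: "mul N y (mul N x y) = fadd (mul N y (mul N y x)) (smul \<kappa> (mul N y (mul N f K)))"
    by (simp add: R mul_fadd_r)
  have a: "mul N x (mul N y y) w = mul N y (mul N x y) w + \<kappa> * (q*q) * mul N y (mul N f K) w"
    using h1 by (simp add: fadd_def smul_def fun_eq_iff)
  have b: "mul N y (mul N x y) w = mul N y (mul N y x) w + \<kappa> * mul N y (mul N f K) w"
    using h3 by (simp add: fadd_def smul_def fun_eq_iff)
  show ?thesis using a b by (simp add: algebra_simps power2_eq_square)
qed

definition Ee where "Ee s = conv N (Ki (s+1)) (L (s+1) s)"

lemma comm_LK:
  assumes "A \<in> {1..N}" "B \<in> {1..N}" "i \<in> {1..N}"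
  shows "mul N (L A B) (mul N (Ki i) P) = smul (Kic q z i A / Kic q z i B) (mul N (Ki i) (mul N (L A B) P))"
  by (rule mul_L_chr2) (use assms Kic_nz in auto)

lemma Kic_ratio: "Kic q z i A / Kic q z i B = (if A = i then inverse q else 1) * (if B = i then q else 1)"
  using z0 q0 by (simp add: Kic_def field_simps)

lemma serreE_A:
  assumes "1 \<le> s" "s + 2 \<le> N" "valid N w"
  shows "serre N q (Ee s) (Ee (s+1)) w = 0"
proof -
  define a where "a = Ki (s+1)"
  define b where "b = Ki (s+2)"
  define x where "x = L (s+1) s"
  define y where "y = L (s+2) (s+1)"
  have rng: "s \<in> {1..N}" "s+1 \<in> {1..N}" "s+2 \<in> {1..N}" using assms by auto
  have xa: "mul N x (mul N a P) = smul (inverse q) (mul N a (mul N x P))" for P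
    unfolding x_def a_def using comm_LK[of "s+1" s "s+1" P] rng by (simp add: Kic_ratio)
  have xb: "mul N x (mul N b P) = mul N b (mul N x P)" for P
    unfolding x_def b_def using comm_LK[of "s+1" s "s+2" P] rng by (simp add: Kic_ratio smul_def)
  have ya: "mul N y (mul N a P) = smul q (mul N a (mul N y P))" for P
    unfolding y_def a_def using comm_LK[of "s+2" "s+1" "s+1" P] rng by (simp add: Kic_ratio)
  have yb: "mul N y (mul N b P) = smul (inverse q) (mul N b (mul N y P))" for P
    unfolding y_def b_def using comm_LK[of "s+2" "s+1" "s+2" P] rng by (simp add: Kic_ratio)
  have ba: "mul N b (mul N a P) = mul N a (mul N b P)" for P
    unfolding a_def b_def by (rule mul_chr_comm2)
  have X: "Ee s = conv N a x" and Y: "Ee (s+1) = conv N b y"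
    unfolding Ee_def a_def b_def x_def y_def by (simp_all add: add.assoc)
  have t1: "mul N (Ee s) (mul N (Ee s) (Ee (s+1))) = smul (inverse q) (mul N a (mul N a (mul N b (mul N x (mul N x y)))))"
    unfolding X Y by (simp add: mul_conv_l mul_conv_r mul_assoc xa xb ya yb ba)
  have t2: "mul N (Ee s) (mul N (Ee (s+1)) (Ee s)) = smul (q * inverse q) (mul N a (mul N a (mul N b (mul N x (mul N y x)))))"
    unfolding X Y by (simp add: mul_conv_l mul_conv_r mul_assoc xa xb ya yb ba)
  have t3: "mul N (Ee (s+1)) (mul N (Ee s) (Ee s)) = smul (inverse q * (q * q)) (mul N a (mul N a (mul N b (mul N y (mul N x x)))))"
    unfolding X Y by (simp add: mul_conv_l mul_conv_r mul_assoc xa xb ya yb ba)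
  have "serre N q (Ee s) (Ee (s+1)) w = mul N (Ee s) (mul N (Ee s) (Ee (s+1))) w
      - (q + inverse q) * mul N (Ee s) (mul N (Ee (s+1)) (Ee s)) w + mul N (Ee (s+1)) (mul N (Ee s) (Ee s)) w"
    using assms by (simp add: serre_def conv3)
  also have "\<dots> = inverse q * mul N a (mul N a (mul N b (mul N x (mul N x y)))) w
      - (q + inverse q) * (q * inverse q) * mul N a (mul N a (mul N b (mul N x (mul N y x)))) w
      + inverse q * (q * q) * mul N a (mul N a (mul N b (mul N y (mul N x x)))) w"
    unfolding t1 t2 t3 by (simp add: smul_def)
  also have "\<dots> = 0"
  proof -
    have e: "\<And>w. mul N x (mul N x y) w - (1 + q^2) * mul N x (mul N y x) w + q^2 * mul N y (mul N x x) w = 0"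
      unfolding x_def y_def using eserreA[OF assms(1,2)] by simp
    have "mul N a (mul N a (mul N b (mul N x (mul N x y)))) w - (1 + q^2) * mul N a (mul N a (mul N b (mul N x (mul N y x)))) w
       + q^2 * mul N a (mul N a (mul N b (mul N y (mul N x x)))) w = 0"
      by (rule mul_lin3, rule mul_lin3, rule mul_lin3, rule e)
    then show ?thesis using q0 by (simp add: field_simps power2_eq_square)
  qed
  finally show ?thesis .
qed

lemma serreE_B:
  assumes "1 \<le> s" "s + 2 \<le> N" "valid N w"
  shows "serre N q (Ee (s+1)) (Ee s) w = 0"
proof -
  define a where "a = Ki (s+1)"
  define b where "b = Ki (s+2)"
  define x where "x = L (s+1) s"
  define y where "y = L (s+2) (s+1)"
  have rng: "s \<in> {1..N}" "s+1 \<in> {1..N}" "s+2 \<in> {1..N}" using assms by auto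
  have xa: "mul N x (mul N a P) = smul (inverse q) (mul N a (mul N x P))" for P
    unfolding x_def a_def using comm_LK[of "s+1" s "s+1" P] rng by (simp add: Kic_ratio)
  have xb: "mul N x (mul N b P) = mul N b (mul N x P)" for P
    unfolding x_def b_def using comm_LK[of "s+1" s "s+2" P] rng by (simp add: Kic_ratio smul_def)
  have ya: "mul N y (mul N a P) = smul q (mul N a (mul N y P))" for P
    unfolding y_def a_def using comm_LK[of "s+2" "s+1" "s+1" P] rng by (simp add: Kic_ratio)
  have yb: "mul N y (mul N b P) = smul (inverse q) (mul N b (mul N y P))" for P
    unfolding y_def b_def using comm_LK[of "s+2" "s+1" "s+2" P] rng by (simp add: Kic_ratio)
  have ba: "mul N b (mul N a P) = mul N a (mul N b P)" for P
    unfolding a_def b_def by (rule mul_chr_comm2)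
  have X: "Ee s = conv N a x" and Y: "Ee (s+1) = conv N b y"
    unfolding Ee_def a_def b_def x_def y_def by (simp_all add: add.assoc)
  have t1: "mul N (Ee (s+1)) (mul N (Ee (s+1)) (Ee s)) = smul (q * (q * inverse q)) (mul N a (mul N b (mul N b (mul N y (mul N y x)))))"
    unfolding X Y by (simp add: mul_conv_l mul_conv_r mul_assoc xa xb ya yb ba)
  have t2: "mul N (Ee (s+1)) (mul N (Ee s) (Ee (s+1))) = smul (q * inverse q) (mul N a (mul N b (mul N b (mul N y (mul N x y)))))"
    unfolding X Y by (simp add: mul_conv_l mul_conv_r mul_assoc xa xb ya yb ba)
  have t3: "mul N (Ee s) (mul N (Ee (s+1)) (Ee (s+1))) = smul (inverse q) (mul N a (mul N b (mul N b (mul N x (mul N y y)))))"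
    unfolding X Y by (simp add: mul_conv_l mul_conv_r mul_assoc xa xb ya yb ba)
  have "serre N q (Ee (s+1)) (Ee s) w = mul N (Ee (s+1)) (mul N (Ee (s+1)) (Ee s)) w
      - (q + inverse q) * mul N (Ee (s+1)) (mul N (Ee s) (Ee (s+1))) w + mul N (Ee s) (mul N (Ee (s+1)) (Ee (s+1))) w"
    using assms by (simp add: serre_def conv3)
  also have "\<dots> = q * (q * inverse q) * mul N a (mul N b (mul N b (mul N y (mul N y x)))) w
      - (q + inverse q) * (q * inverse q) * mul N a (mul N b (mul N b (mul N y (mul N x y)))) w
      + inverse q * mul N a (mul N b (mul N b (mul N x (mul N y y)))) w"
    unfolding t1 t2 t3 by (simp add: smul_def)
  also have "\<dots> = 0"
  proof -
    have e: "\<And>w. mul N x (mul N y y) w - (1 + q^2) * mul N y (mul N x y) w + q^2 * mul N y (mul N y x) w = 0"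
      unfolding x_def y_def using eserreB[OF assms(1,2)] by simp
    have "mul N a (mul N b (mul N b (mul N x (mul N y y)))) w - (1 + q^2) * mul N a (mul N b (mul N b (mul N y (mul N x y)))) w
       + q^2 * mul N a (mul N b (mul N b (mul N y (mul N y x)))) w = 0"
      by (rule mul_lin3, rule mul_lin3, rule mul_lin3, rule e)
    then show ?thesis using q0 by (simp add: field_simps power2_eq_square)
  qed
  finally show ?thesis .
qed

end


lemma prod_upt_Kc: "r \<in> {1..N} \<Longrightarrow> (\<Prod>i\<leftarrow>[1..<N+1]. (f i :: 'k::field) * (if r = i then q else 1)) = (\<Prod>i\<in>{1..N}. f i) * q"
proof -
  assume r: "r \<in> {1..N}"
  have "(\<Prod>i\<leftarrow>[1..<N+1]. f i * (if r = i then q else 1)) = (\<Prod>i\<in>{1..N}. f i * (if r = i then q else 1))"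
  proof -
    have S: "set [1..<N+1] = {1..N}" by (auto simp del: upt_Suc)
    show ?thesis by (subst prod.distinct_set_conv_list[symmetric]) (simp_all only: S distinct_upt)
  qed
  also have "\<dots> = (\<Prod>i\<in>{1..N}. f i) * (\<Prod>i\<in>{1..N}. if r = i then q else 1)"
    by (rule prod.distrib)
  also have "(\<Prod>i\<in>{1..N}. if r = i then q else 1) = q" using r by (simp add: prod.delta)
  finally show ?thesis .
qed

lemma chr_two_comm: "chr c (u @ [a, b] @ v) = chr c (u @ [b, a] @ v)"
  by (simp add: chr_append chr_Cons mult_ac)

lemma chr_offdiag: "fst a \<noteq> snd a \<or> fst b \<noteq> snd b \<Longrightarrow> chr c (u @ [a, b] @ v) = 0"
  by (auto simp: chr_append chr_Cons)

lemma inv_count_id: "inv_count N id = 0"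
proof -
  have "{(a, b). a \<in> {1..N} \<and> b \<in> {1..N} \<and> a < b \<and> id a > id b} = {}" by auto
  then show ?thesis unfolding inv_count_def by (metis card.empty)
qed

lemma perm_word_valid: "p permutes {1..N} \<Longrightarrow> valid N (map (\<lambda>a. (a, p a)) [1..<N+1])"
  unfolding valid_def
proof (clarify)
  fix a b assume p: "p permutes {1..N}" and ab: "(a, b) \<in> set (map (\<lambda>a. (a, p a)) [1..<N+1])"
  then have a: "a \<in> {1..N}" and b: "b = p a" by (auto simp del: upt_Suc)
  have "p a \<in> {1..N}" using permutes_in_image[OF p] a by blast
  then show "a \<in> {1..N} \<and> b \<in> {1..N}" using a b by blast
qed

lemma chr_perm_word:
  assumes "p permutes {1..N}" "p \<noteq> id"
  shows "chr c (map (\<lambda>a. (a, p a)) [1..<N+1]) = 0"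
proof -
  obtain a where a: "p a \<noteq> a" using assms(2) by (auto simp: fun_eq_iff)
  then have "a \<in> {1..N}" using assms(1) by (meson permutes_not_in)
  then have "(a, p a) \<in> set (map (\<lambda>a. (a, p a)) [1..<N+1])" by (auto simp del: upt_Suc)
  then show ?thesis using a unfolding chr_def by (auto simp del: upt_Suc)
qed

lemma chr_id_word: "chr c (map (\<lambda>a. (a, a)) [1..<N+1]) = (\<Prod>a\<leftarrow>[1..<N+1]. c a)"
  by (simp add: chr_def o_def)

lemma resp_SL_chr:
  assumes "(\<Prod>a\<leftarrow>[1..<N+1]. c a) = 1"
  shows "resp_SL N q (chr c)"
  unfolding resp_SL_def
proof (intro allI impI conjI ballI)
  fix u v assume uv: "valid N u" "valid N v"
  show "chr c (u @ [(i, m), (i, n)] @ v) = q * chr c (u @ [(i, n), (i, m)] @ v)" if "n < m" for i m n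
    using that by (subst chr_offdiag, force)+ simp
  show "chr c (u @ [(j, m), (i, m)] @ v) = q * chr c (u @ [(i, m), (j, m)] @ v)" if "i < j" for i j m
    using that by (subst chr_offdiag, force)+ simp
  show "chr c (u @ [(j, n), (i, m)] @ v) = chr c (u @ [(i, m), (j, n)] @ v)" for i j m n
    by (rule chr_two_comm)
  show "chr c (u @ [(j, m), (i, n)] @ v) - chr c (u @ [(i, n), (j, m)] @ v) = (q - inverse q) * chr c (u @ [(i, m), (j, n)] @ v)"
    if "i < j" "n < m" for i j m n
    using that by (subst chr_two_comm) (subst chr_offdiag[of "(i,m)"], force, simp)
  let ?S = "{p. p permutes {1..N}}"
  let ?f = "\<lambda>p. inverse ((- q) ^ inv_count N p) * chr c (u @ map (\<lambda>a. (a, p a)) [1..<N+1] @ v)"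
  have "sum ?f ?S = ?f id + sum ?f (?S - {id})"
    by (rule sum.remove) (auto simp: finite_permutations permutes_id)
  also have "sum ?f (?S - {id}) = 0"
  proof (rule sum.neutral, rule ballI)
    fix p assume p: "p \<in> ?S - {id}"
    then have "chr c (map (\<lambda>a. (a, p a)) [1..<N+1]) = 0" by (intro chr_perm_word) auto
    then show "?f p = 0" by (simp add: chr_append)
  qed
  also have "?f id = chr c (u @ v)"
  proof -
    have w1: "chr c (map (\<lambda>a. (a, id a)) [1..<N+1]) = 1"
      using chr_id_word[of c N] assms by simp
    show ?thesis by (simp only: chr_append w1 inv_count_id) simp
  qed
  finally show "sum ?f ?S = chr c (u @ v)" by simp
qed

lemma finite_dual_chr:
  assumes "(\<Prod>a\<leftarrow>[1..<N+1]. c a) = 1"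
  shows "finite_dual N q (chr c)"
  unfolding finite_dual_def
proof (intro conjI)
  show "resp_SL N q (chr c)" by (rule resp_SL_chr[OF assms])
  show "\<exists>gs. \<forall>u v. valid N u \<longrightarrow> valid N v \<longrightarrow> (\<exists>cs. \<forall>w. valid N w \<longrightarrow> chr c (u @ w @ v) = (\<Sum>t<length gs. cs t * (gs ! t) w))"
  proof (rule exI[of _ "[chr c]"], intro allI impI)
    fix u v assume "valid N u" "valid N v"
    show "\<exists>cs. \<forall>w. valid N w \<longrightarrow> chr c (u @ w @ v) = (\<Sum>t<length [chr c]. cs t * ([chr c] ! t) w)"
      by (rule exI[of _ "\<lambda>_. chr c u * chr c v"]) (simp add: chr_append)
  qed
qed

lemma resp_SL_cong:
  assumes fg: "\<And>w. valid N w \<Longrightarrow> f w = g w" and g: "resp_SL N q g"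
  shows "resp_SL N q f"
  unfolding resp_SL_def
proof (intro allI impI conjI ballI)
  fix u v assume uv: "valid N u" "valid N v"
  note G = g[unfolded resp_SL_def, rule_format, OF uv]
  note G1 = G[THEN conjunct1] and G2 = G[THEN conjunct2, THEN conjunct1]
    and G3 = G[THEN conjunct2, THEN conjunct2, THEN conjunct1]
    and G4 = G[THEN conjunct2, THEN conjunct2, THEN conjunct2, THEN conjunct1]
    and G5 = G[THEN conjunct2, THEN conjunct2, THEN conjunct2, THEN conjunct2]
  show "f (u @ [(i, m), (i, n)] @ v) = q * f (u @ [(i, n), (i, m)] @ v)"
    if "i \<in> {1..N}" "m \<in> {1..N}" "n \<in> {1..N}" "n < m" for i m n
  proof -
    have "g (u @ [(i, m), (i, n)] @ v) = q * g (u @ [(i, n), (i, m)] @ v)"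
      using G1 that by blast
    then show ?thesis using fg that uv by simp
  qed
  show "f (u @ [(j, m), (i, m)] @ v) = q * f (u @ [(i, m), (j, m)] @ v)"
    if "i \<in> {1..N}" "j \<in> {1..N}" "m \<in> {1..N}" "i < j" for i j m
  proof -
    have "g (u @ [(j, m), (i, m)] @ v) = q * g (u @ [(i, m), (j, m)] @ v)"
      using G2 that by blast
    then show ?thesis using fg that uv by simp
  qed
  show "f (u @ [(j, n), (i, m)] @ v) = f (u @ [(i, m), (j, n)] @ v)"
    if "i \<in> {1..N}" "j \<in> {1..N}" "m \<in> {1..N}" "n \<in> {1..N}" "i < j" "n < m" for i j m n
  proof -
    have "g (u @ [(j, n), (i, m)] @ v) = g (u @ [(i, m), (j, n)] @ v)"
      using G3 that by blast
    then show ?thesis using fg that uv by simp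
  qed
  show "f (u @ [(j, m), (i, n)] @ v) - f (u @ [(i, n), (j, m)] @ v) = (q - inverse q) * f (u @ [(i, m), (j, n)] @ v)"
    if "i \<in> {1..N}" "j \<in> {1..N}" "m \<in> {1..N}" "n \<in> {1..N}" "i < j" "n < m" for i j m n
  proof -
    have "g (u @ [(j, m), (i, n)] @ v) - g (u @ [(i, n), (j, m)] @ v) = (q - inverse q) * g (u @ [(i, m), (j, n)] @ v)"
      using G4 that by blast
    then show ?thesis using fg that uv by simp
  qed
  let ?S = "{p. p permutes {1..N}}"
  have "(\<Sum>p\<in>?S. inverse ((- q) ^ inv_count N p) * g (u @ map (\<lambda>a. (a, p a)) [1..<N+1] @ v)) = g (u @ v)"
    by (rule G5)
  moreover have "(\<Sum>p\<in>?S. inverse ((- q) ^ inv_count N p) * f (u @ map (\<lambda>a. (a, p a)) [1..<N+1] @ v))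
     = (\<Sum>p\<in>?S. inverse ((- q) ^ inv_count N p) * g (u @ map (\<lambda>a. (a, p a)) [1..<N+1] @ v))"
  proof (rule sum.cong[OF refl])
    fix p assume "p \<in> ?S"
    then have "valid N (map (\<lambda>a. (a, p a)) [1..<N+1])" by (intro perm_word_valid) auto
    then show "inverse ((- q) ^ inv_count N p) * f (u @ map (\<lambda>a. (a, p a)) [1..<N+1] @ v)
      = inverse ((- q) ^ inv_count N p) * g (u @ map (\<lambda>a. (a, p a)) [1..<N+1] @ v)"
      using fg uv by (simp del: upt_Suc)
  qed
  moreover have "f (u @ v) = g (u @ v)" using fg uv by simp
  ultimately show "(\<Sum>p\<in>?S. inverse ((- q) ^ inv_count N p) * f (u @ map (\<lambda>a. (a, p a)) [1..<N+1] @ v)) = f (u @ v)"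
    by simp
qed

lemma finite_dual_cong:
  assumes fg: "\<And>w. valid N w \<Longrightarrow> f w = g w" and g: "finite_dual N q g"
  shows "finite_dual N q f"
  unfolding finite_dual_def
proof
  have "resp_SL N q g" using g unfolding finite_dual_def by blast
  then show "resp_SL N q f" by (rule resp_SL_cong[where f=f and g=g, rotated]) (rule fg)
  from g obtain gs :: "(word \<Rightarrow> 'a) list" where gs: "\<forall>u v. valid N u \<longrightarrow> valid N v \<longrightarrow>
       (\<exists>cs :: nat \<Rightarrow> 'a. \<forall>w. valid N w \<longrightarrow> g (u @ w @ v) = (\<Sum>t<length gs. cs t * (gs ! t) w))"
    unfolding finite_dual_def by blast
  show "\<exists>gs :: (word \<Rightarrow> 'a) list. \<forall>u v. valid N u \<longrightarrow> valid N v \<longrightarrow>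
       (\<exists>cs :: nat \<Rightarrow> 'a. \<forall>w. valid N w \<longrightarrow> f (u @ w @ v) = (\<Sum>t<length gs. cs t * (gs ! t) w))"
    using gs fg by (intro exI[of _ gs]) simp
qed

lemma grouplike_chr: "grouplike N (chr c)"
  by (simp add: grouplike_def chr_append)


definition iota :: "nat \<Rightarrow> nat \<Rightarrow> nat" where "iota N i = Suc N - i"
definition rho :: "nat \<Rightarrow> word \<Rightarrow> word" where
  "rho N w = rev (map (\<lambda>a. (iota N (fst a), iota N (snd a))) w)"

lemma iota_range: "i \<in> {1..N} \<Longrightarrow> iota N i \<in> {1..N}" by (auto simp: iota_def)
lemma iota_iota: "i \<in> {1..N} \<Longrightarrow> iota N (iota N i) = i" by (auto simp: iota_def)
lemma iota_inj: "i \<in> {1..N} \<Longrightarrow> j \<in> {1..N} \<Longrightarrow> iota N i = iota N j \<longleftrightarrow> i = j" by (auto simp: iota_def)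
lemma iota_less: "i \<in> {1..N} \<Longrightarrow> j \<in> {1..N} \<Longrightarrow> iota N i < iota N j \<longleftrightarrow> j < i" by (auto simp: iota_def)
lemma bij_iota: "bij_betw (iota N) {1..N} {1..N}"
  by (rule bij_betw_byWitness[where f'="iota N"]) (auto simp: iota_def)

lemma rho_Nil[simp]: "rho N [] = []" by (simp add: rho_def)
lemma rho_Cons: "rho N (a # w) = rho N w @ [(iota N (fst a), iota N (snd a))]" by (simp add: rho_def)
lemma valid_rho: "valid N w \<Longrightarrow> valid N (rho N w)"
  by (induction w) (auto simp: rho_Cons iota_def)
lemma rho_rho: "valid N w \<Longrightarrow> rho N (rho N w) = w"
proof -
  assume "valid N w"
  then have "map (\<lambda>a. (iota N (fst a), iota N (snd a))) (map (\<lambda>a. (iota N (fst a), iota N (snd a))) w) = w"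
    by (induction w) (auto simp: iota_iota)
  then show ?thesis by (simp add: rho_def rev_map[symmetric])
qed

lemma kss_Suc_snoc: "kss N (Suc n) = (\<lambda>(ks,k). ks @ [k]) ` (kss N n \<times> {1..N})"
proof (rule set_eqI)
  fix xs
  show "xs \<in> kss N (Suc n) \<longleftrightarrow> xs \<in> (\<lambda>(ks,k). ks @ [k]) ` (kss N n \<times> {1..N})"
  proof
    assume "xs \<in> kss N (Suc n)"
    then have "xs \<noteq> []" "length xs = Suc n" "set xs \<subseteq> {1..N}" by (auto simp: kss_def)
    then obtain ys y where "xs = ys @ [y]" by (metis rev_exhaust)
    then show "xs \<in> (\<lambda>(ks,k). ks @ [k]) ` (kss N n \<times> {1..N})"
      using \<open>length xs = Suc n\<close> \<open>set xs \<subseteq> {1..N}\<close> by (auto simp: kss_def image_iff)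
  qed (auto simp: kss_def)
qed

lemma conv_snoc: "conv N f g (w @ [a]) =
   (\<Sum>k\<in>{1..N}. conv N (\<lambda>v. f (v @ [(fst a, k)])) (\<lambda>v. g (v @ [(k, snd a)])) w)"
proof -
  have inj: "inj_on (\<lambda>(ks,k). ks @ [k]) (kss N (length w) \<times> {1..N})"
    by (auto simp: inj_on_def)
  have "conv N f g (w @ [a]) = (\<Sum>ks\<in>kss N (Suc (length w)). f (zip (map fst (w @ [a])) ks) * g (zip ks (map snd (w @ [a]))))"
    by (simp add: conv_kss)
  also have "\<dots> = (\<Sum>(ks,k)\<in>kss N (length w) \<times> {1..N}. f (zip (map fst w) ks @ [(fst a, k)]) * g (zip ks (map snd w) @ [(k, snd a)]))"
    unfolding kss_Suc_snoc by (subst sum.reindex[OF inj]) (auto simp: kss_def intro!: sum.cong)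
  also have "\<dots> = (\<Sum>ks\<in>kss N (length w). \<Sum>k\<in>{1..N}. f (zip (map fst w) ks @ [(fst a, k)]) * g (zip ks (map snd w) @ [(k, snd a)]))"
    by (rule sum.cartesian_product[symmetric])
  also have "\<dots> = (\<Sum>k\<in>{1..N}. \<Sum>ks\<in>kss N (length w). f (zip (map fst w) ks @ [(fst a, k)]) * g (zip ks (map snd w) @ [(k, snd a)]))"
    by (rule sum.swap)
  also have "\<dots> = (\<Sum>k\<in>{1..N}. conv N (\<lambda>v. f (v @ [(fst a, k)])) (\<lambda>v. g (v @ [(k, snd a)])) w)"
    by (simp add: conv_kss)
  finally show ?thesis .
qed

lemma conv_rho: "valid N w \<Longrightarrow> conv N f g (rho N w) = conv N (\<lambda>v. f (rho N v)) (\<lambda>v. g (rho N v)) w"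
proof (induction w arbitrary: f g)
  case Nil
  then show ?case by simp
next
  case (Cons a w)
  have a: "fst a \<in> {1..N}" "snd a \<in> {1..N}" "valid N w" using Cons.prems by auto
  have "conv N f g (rho N (a # w)) = (\<Sum>k\<in>{1..N}. conv N (\<lambda>v. f (v @ [(iota N (fst a), k)])) (\<lambda>v. g (v @ [(k, iota N (snd a))])) (rho N w))"
    by (simp add: rho_Cons conv_snoc)
  also have "\<dots> = (\<Sum>k\<in>{1..N}. conv N (\<lambda>v. f (rho N v @ [(iota N (fst a), k)])) (\<lambda>v. g (rho N v @ [(k, iota N (snd a))])) w)"
    using Cons.IH a by simp
  also have "\<dots> = (\<Sum>k\<in>{1..N}. conv N (\<lambda>v. f (rho N v @ [(iota N (fst a), iota N k)])) (\<lambda>v. g (rho N v @ [(iota N k, iota N (snd a))])) w)"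
    by (rule sum.reindex_bij_betw[OF bij_iota, symmetric])
  also have "\<dots> = conv N (\<lambda>v. f (rho N v)) (\<lambda>v. g (rho N v)) (a # w)"
    by (simp add: conv_Cons dr_def rho_Cons)
  finally show ?case .
qed

lemma sgen_refl:
  assumes "k \<in> {1..N}" "j \<in> {1..N}" "r \<in> {1..N}" "c \<in> {1..N}"
  shows "sgen q z (k, j) (r, c) = sgen q z (iota N r, iota N c) (iota N k, iota N j)"
proof -
  have e1: "(iota N r = iota N k) = (k = r)" using assms by (auto simp: iota_def)
  have e2: "(iota N c = iota N r \<and> iota N j = iota N k) = (j = k \<and> c = r)" using assms by (auto simp: iota_def)
  have e3: "(iota N k > iota N r) = (r > k)" using assms by (auto simp: iota_def)
  have e4: "(iota N c = iota N k \<and> iota N j = iota N r) = (j = r \<and> c = k)" using assms by (auto simp: iota_def)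
  show ?thesis unfolding sgen_def prod.case e1 e2 e3 e4 ..
qed

lemma lfun_snoc:
  assumes "valid N (w @ [x])" "A \<in> {1..N}" "B \<in> {1..N}"
  shows "lfun N q z A B (w @ [x]) = (\<Sum>k\<in>{1..N}. lfun N q z A k w * sgen q z x (k, B))"
  using assms
proof (induction w arbitrary: A)
  case Nil
  have "lfun N q z A B [x] = (\<Sum>k\<in>{1..N}. sgen q z x (A, k) * lfun N q z k B [])"
    by (rule lfun_Cons) (use Nil in auto)
  also have "\<dots> = sgen q z x (A, B)"
    by (subst sum1[where kk=B]) (use Nil in auto)
  also have "\<dots> = (\<Sum>k\<in>{1..N}. lfun N q z A k [] * sgen q z x (k, B))"
    by (subst sum1[where kk=A]) (use Nil in auto)
  finally show ?case by simp
next
  case (Cons a w)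
  have "lfun N q z A B ((a # w) @ [x]) = (\<Sum>k\<in>{1..N}. sgen q z a (A, k) * lfun N q z k B (w @ [x]))"
  proof -
    have e: "(a # w) @ [x] = a # (w @ [x])" by simp
    show ?thesis unfolding e by (rule lfun_Cons) (use Cons.prems in auto)
  qed
  also have "\<dots> = (\<Sum>k\<in>{1..N}. sgen q z a (A, k) * (\<Sum>k'\<in>{1..N}. lfun N q z k k' w * sgen q z x (k', B)))"
    using Cons by (intro sum.cong refl) simp
  also have "\<dots> = (\<Sum>k'\<in>{1..N}. (\<Sum>k\<in>{1..N}. sgen q z a (A, k) * lfun N q z k k' w) * sgen q z x (k', B))"
    by (simp add: sum_distrib_left sum_distrib_right mult.assoc) (rule sum.swap)
  also have "\<dots> = (\<Sum>k'\<in>{1..N}. lfun N q z A k' (a # w) * sgen q z x (k', B))"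
    using Cons.prems by (intro sum.cong refl) (simp add: lfun_Cons)
  finally show ?case .
qed

lemma rfun_sig1: "valid N w \<Longrightarrow> rfun N q z i j w = sig1 N q z w (i, j)"
  by (simp add: rfun_def conv_eps_r del: sig1.simps)

lemma sig1_rho:
  assumes "valid N w" "i \<in> {1..N}" "j \<in> {1..N}"
  shows "sig1 N q z w (i, j) = lfun N q z (iota N i) (iota N j) (rho N w)"
  using assms
proof (induction w arbitrary: j)
  case Nil
  then show ?case by (simp add: eps_def iota_inj)
next
  case (Cons b g)
  have b: "fst b \<in> {1..N}" "snd b \<in> {1..N}" "valid N g" using Cons.prems by auto
  have "sig1 N q z (b # g) (i, j) = (\<Sum>k\<in>{1..N}. sgen q z (k, j) b * sig1 N q z g (i, k))" by simp
  also have "\<dots> = (\<Sum>k\<in>{1..N}. lfun N q z (iota N i) (iota N k) (rho N g) * sgen q z (iota N (fst b), iota N (snd b)) (iota N k, iota N j))"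
    using Cons b by (intro sum.cong refl) (simp add: sgen_refl[of _ N j "fst b" "snd b", simplified] mult.commute)
  also have "\<dots> = (\<Sum>k\<in>{1..N}. lfun N q z (iota N i) k (rho N g) * sgen q z (iota N (fst b), iota N (snd b)) (k, iota N j))"
    by (rule sum.reindex_bij_betw[OF bij_iota])
  also have "\<dots> = lfun N q z (iota N i) (iota N j) (rho N g @ [(iota N (fst b), iota N (snd b))])"
    by (rule lfun_snoc[symmetric]) (use Cons.prems b valid_rho iota_range in auto)
  finally show ?case by (simp add: rho_Cons)
qed

lemma rfun_rho: "valid N w \<Longrightarrow> i \<in> {1..N} \<Longrightarrow> j \<in> {1..N} \<Longrightarrow>
   rfun N q z i j w = lfun N q z (iota N i) (iota N j) (rho N w)"
  by (simp add: rfun_sig1 sig1_rho del: sig1.simps)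

lemma chr_rho: "valid N w \<Longrightarrow> chr c (rho N w) = chr (\<lambda>i. c (iota N i)) w"
proof (induction w)
  case Nil then show ?case by simp
next
  case (Cons a w)
  then show ?case by (auto simp: rho_Cons chr_append chr_Cons iota_inj)
qed


primrec Lp :: "nat \<Rightarrow> 'k::field \<Rightarrow> 'k \<Rightarrow> word \<Rightarrow> word \<Rightarrow> 'k" where
  "Lp N q z [] = eps"
| "Lp N q z (b # g) = conv N (Lp N q z g) (lfun N q z (fst b) (snd b))"

lemma Lp_Nil_word: "Lp N q z g [] = eps g"
  by (induction g) (auto simp: eps_def)

lemma Lp_Cons_word:
  assumes "fst a \<in> {1..N}" "valid N g"
  shows "Lp N q z g (a # w) = (\<Sum>ks\<in>kss N (length g). sig1 N q z (zip (map fst g) ks) a * Lp N q z (zip ks (map snd g)) w)"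
  using assms
proof (induction g arbitrary: a w)
  case Nil
  show ?case by (simp add: kss_0 eps_chr chr_Cons)
next
  case (Cons b g)
  have b: "fst b \<in> {1..N}" "snd b \<in> {1..N}" "valid N g" using Cons.prems by auto
  let ?G1 = "map fst g" and ?G2 = "map snd g"
  let ?T = "\<lambda>k ks k'. sig1 N q z (zip ?G1 ks) (fst a, k) * sgen q z (k, snd a) (fst b, k') * conv N (Lp N q z (zip ks ?G2)) (lfun N q z k' (snd b)) w"
  have d1: "dr (fst a, k) (Lp N q z g) = (\<lambda>v. \<Sum>ks\<in>kss N (length g). sig1 N q z (zip ?G1 ks) (fst a, k) * Lp N q z (zip ks ?G2) v)" for k
    using Cons.IH[of "(fst a, k)"] Cons.prems b by (auto simp: dr_def)
  have d2: "dr (k, snd a) (lfun N q z (fst b) (snd b)) = (\<lambda>v. \<Sum>k'\<in>{1..N}. sgen q z (k, snd a) (fst b, k') * lfun N q z k' (snd b) v)"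
    if "k \<in> {1..N}" for k
    using that by (auto simp: dr_def lfun_Cons)
  have "Lp N q z (b # g) (a # w) = (\<Sum>k\<in>{1..N}. conv N (dr (fst a, k) (Lp N q z g)) (dr (k, snd a) (lfun N q z (fst b) (snd b))) w)"
    by (simp add: conv_Cons)
  also have "\<dots> = (\<Sum>k\<in>{1..N}. \<Sum>ks\<in>kss N (length g). \<Sum>k'\<in>{1..N}. ?T k ks k')"
    by (intro sum.cong refl) (simp add: d1 d2 conv_sum_l conv_sum_r conv_smult_l conv_smult_r sum_distrib_left mult.assoc)
  also have "\<dots> = (\<Sum>k'\<in>{1..N}. \<Sum>ks\<in>kss N (length g). \<Sum>k\<in>{1..N}. ?T k ks k')"
    by (subst sum.swap) (subst (2) sum.swap, subst sum.swap, rule refl)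
  also have "\<dots> = (\<Sum>(k',ks)\<in>{1..N} \<times> kss N (length g). sig1 N q z ((fst b, k') # zip ?G1 ks) a * Lp N q z ((k', snd b) # zip ks ?G2) w)"
    by (subst sum.cartesian_product[symmetric]) (intro sum.cong refl, simp add: sum_distrib_left mult_ac)
  also have "\<dots> = (\<Sum>ks\<in>kss N (length (b # g)). sig1 N q z (zip (map fst (b # g)) ks) a * Lp N q z (zip ks (map snd (b # g))) w)"
  proof -
    have inj: "inj_on (\<lambda>(k,ks). k # ks) ({1..N} \<times> kss N (length g))" by (auto simp: inj_on_def)
    show ?thesis by (simp only: length_Cons kss_Suc sum.reindex[OF inj]) (simp add: case_prod_beta)
  qed
  finally show ?case .
qed

lemma sigf_Lp: "valid N w \<Longrightarrow> valid N g \<Longrightarrow> sigf N q z w g = Lp N q z g w"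
proof (induction w arbitrary: g)
  case Nil
  then show ?case by (simp add: Lp_Nil_word)
next
  case (Cons a w)
  have "sigf N q z (a # w) g = (\<Sum>ks\<in>kss N (length g). sig1 N q z (zip (map fst g) ks) a * sigf N q z w (zip ks (map snd g)))"
    by (simp add: conv_kss del: sig1.simps)
  also have "\<dots> = (\<Sum>ks\<in>kss N (length g). sig1 N q z (zip (map fst g) ks) a * Lp N q z (zip ks (map snd g)) w)"
    using Cons valid_zip2 by (intro sum.cong refl) simp
  also have "\<dots> = Lp N q z g (a # w)"
    using Cons.prems by (intro Lp_Cons_word[symmetric]) auto
  finally show ?case .
qed

lemma Lp_append: "valid N w \<Longrightarrow> Lp N q z (g @ h) w = conv N (Lp N q z h) (Lp N q z g) w"
proof (induction g arbitrary: w)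
  case Nil
  then show ?case by (simp add: conv_eps_r)
next
  case (Cons b g)
  have "Lp N q z ((b # g) @ h) w = conv N (conv N (Lp N q z h) (Lp N q z g)) (lfun N q z (fst b) (snd b)) w"
    using Cons by (simp, intro conv_cong) auto
  also have "\<dots> = conv N (Lp N q z h) (Lp N q z (b # g)) w" by (simp add: conv_assoc)
  finally show ?case .
qed

lemma sigf_append_l: "valid N w \<Longrightarrow> valid N g1 \<Longrightarrow> valid N g2 \<Longrightarrow>
   sigf N q z (g1 @ g2) w = conv N (sigf N q z g1) (sigf N q z g2) w"
proof (induction g1 arbitrary: w)
  case Nil
  then show ?case by (simp add: conv_eps_l)
next
  case (Cons a g1)
  have "sigf N q z ((a # g1) @ g2) w = conv N (\<lambda>h. sig1 N q z h a) (conv N (sigf N q z g1) (sigf N q z g2)) w"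
    using Cons by (simp del: sig1.simps, intro conv_cong) auto
  also have "\<dots> = conv N (sigf N q z (a # g1)) (sigf N q z g2) w" by (simp add: conv_assoc del: sig1.simps)
  finally show ?case .
qed

lemma conv_suml_l: "conv N (\<lambda>w. \<Sum>(c, g)\<leftarrow>xs. c * F g w) H v = (\<Sum>(c, g)\<leftarrow>xs. c * conv N (F g) H v)"
  by (induction xs) (auto simp: conv_zero_l conv_add_l conv_smult_l)
lemma conv_suml_r: "conv N H (\<lambda>w. \<Sum>(c, g)\<leftarrow>xs. c * F g w) v = (\<Sum>(c, g)\<leftarrow>xs. c * conv N H (F g) v)"
  by (induction xs) (auto simp: conv_zero_r conv_add_r conv_smult_r)

lemma eqH_conv: "eqH N f f' \<Longrightarrow> eqH N g g' \<Longrightarrow> eqH N (conv N f g) (conv N f' g')"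
  unfolding eqH_def by (auto intro: conv_cong)

lemma eqH_trans: "eqH N f g \<Longrightarrow> eqH N g h \<Longrightarrow> eqH N f h" by (simp add: eqH_def)
lemma eqH_sym: "eqH N f g \<Longrightarrow> eqH N g f" by (simp add: eqH_def)
lemma eqH_refl: "eqH N f f" by (simp add: eqH_def)

lemma zero_alg_gen: "(\<lambda>w. 0) \<in> alg_gen N S"
proof -
  have "(\<lambda>w. 0 * eps w) \<in> alg_gen N S" by (intro alg_gen.smult alg_gen.unit)
  then show ?thesis by simp
qed

lemma generated_byI:
  fixes \<Phi> :: "word \<Rightarrow> word \<Rightarrow> 'k::field"
  assumes A: "A = {(\<lambda>w. \<Sum>(c, g)\<leftarrow>xs. c * \<Phi> g w) | xs. \<forall>(c, g)\<in>set xs. valid N g}"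
    and h1: "\<And>g. valid N g \<Longrightarrow> \<exists>G\<in>alg_gen N S. eqH N (\<Phi> g) G"
    and h2: "\<And>s. s \<in> S \<Longrightarrow> \<exists>c g. valid N g \<and> eqH N s (\<lambda>w. c * \<Phi> g w)"
    and h3: "\<And>g1 g2. valid N g1 \<Longrightarrow> valid N g2 \<Longrightarrow> \<exists>g. valid N g \<and> eqH N (conv N (\<Phi> g1) (\<Phi> g2)) (\<Phi> g)"
    and h4: "\<exists>g. valid N g \<and> eqH N eps (\<Phi> g)"
  shows "generated_by N A S"
  unfolding generated_by_def
proof (intro conjI ballI)
  fix h assume "h \<in> A"
  then obtain xs where h: "h = (\<lambda>w. \<Sum>(c, g)\<leftarrow>xs. c * \<Phi> g w)" and xs: "\<forall>(c, g)\<in>set xs. valid N g"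
    using A by blast
  have "\<exists>G\<in>alg_gen N S. eqH N (\<lambda>w. \<Sum>(c, g)\<leftarrow>xs. c * \<Phi> g w) G" using xs
  proof (induction xs)
    case Nil
    show ?case by (rule bexI[of _ "\<lambda>w. 0"]) (auto simp: eqH_def zero_alg_gen)
  next
    case (Cons x xs)
    obtain c g where x: "x = (c, g)" by fastforce
    obtain G1 where G1: "G1 \<in> alg_gen N S" "eqH N (\<Phi> g) G1" using h1[of g] Cons.prems x by auto
    obtain G2 where G2: "G2 \<in> alg_gen N S" "eqH N (\<lambda>w. \<Sum>(c, g)\<leftarrow>xs. c * \<Phi> g w) G2" using Cons by auto
    have "(\<lambda>w. (\<lambda>w. c * G1 w) w + G2 w) \<in> alg_gen N S" using G1 G2 by (intro alg_gen.add alg_gen.smult)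
    moreover have "eqH N (\<lambda>w. \<Sum>(c, g)\<leftarrow>x # xs. c * \<Phi> g w) (\<lambda>w. (\<lambda>w. c * G1 w) w + G2 w)"
      using G1(2) G2(2) x by (simp add: eqH_def)
    ultimately show ?case by blast
  qed
  then show "\<exists>G\<in>alg_gen N S. eqH N h G" using h by simp
next
  fix G assume "G \<in> alg_gen N S"
  then show "\<exists>h\<in>A. eqH N G h"
  proof (induction rule: alg_gen.induct)
    case (gen f)
    obtain c g where g: "valid N g" "eqH N f (\<lambda>w. c * \<Phi> g w)" using h2[OF gen] by auto
    have "(\<lambda>w. \<Sum>(c, g)\<leftarrow>[(c, g)]. c * \<Phi> g w) \<in> A" unfolding A using g by (intro CollectI exI[of _ "[(c, g)]"]) auto
    moreover have "eqH N f (\<lambda>w. \<Sum>(c, g)\<leftarrow>[(c, g)]. c * \<Phi> g w)" using g by (simp add: eqH_def)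
    ultimately show ?case by blast
  next
    case unit
    obtain g where g: "valid N g" "eqH N eps (\<Phi> g)" using h4 by auto
    have "(\<lambda>w. \<Sum>(c, g)\<leftarrow>[(1, g)]. c * \<Phi> g w) \<in> A" unfolding A using g by (intro CollectI exI[of _ "[(1, g)]"]) auto
    moreover have "eqH N eps (\<lambda>w. \<Sum>(c, g)\<leftarrow>[(1, g)]. c * \<Phi> g w)" using g by (simp add: eqH_def)
    ultimately show ?case by blast
  next
    case (add f g)
    obtain h1' where "h1' \<in> A" "eqH N f h1'" using add by auto
    then obtain xs1 where xs1: "h1' = (\<lambda>w. \<Sum>(c, g)\<leftarrow>xs1. c * \<Phi> g w)" "\<forall>(c, g)\<in>set xs1. valid N g" "eqH N f h1'" using A by auto
    obtain h2' where "h2' \<in> A" "eqH N g h2'" using add by auto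
    then obtain xs2 where xs2: "h2' = (\<lambda>w. \<Sum>(c, g)\<leftarrow>xs2. c * \<Phi> g w)" "\<forall>(c, g)\<in>set xs2. valid N g" "eqH N g h2'" using A by auto
    have "(\<lambda>w. \<Sum>(c, g)\<leftarrow>xs1 @ xs2. c * \<Phi> g w) \<in> A" unfolding A using xs1 xs2 by (intro CollectI exI[of _ "xs1 @ xs2"]) auto
    moreover have "eqH N (\<lambda>w. f w + g w) (\<lambda>w. \<Sum>(c, g)\<leftarrow>xs1 @ xs2. c * \<Phi> g w)"
      using xs1 xs2 by (simp add: eqH_def)
    ultimately show ?case by blast
  next
    case (smult f c)
    obtain h1' where "h1' \<in> A" "eqH N f h1'" using smult by auto
    then obtain xs1 where xs1: "h1' = (\<lambda>w. \<Sum>(c, g)\<leftarrow>xs1. c * \<Phi> g w)" "\<forall>(c, g)\<in>set xs1. valid N g" "eqH N f h1'" using A by auto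
    let ?xs = "map (\<lambda>(d, g). (c * d, g)) xs1"
    have "(\<lambda>w. \<Sum>(c, g)\<leftarrow>?xs. c * \<Phi> g w) \<in> A" unfolding A using xs1 by (intro CollectI exI[of _ "?xs"]) auto
    moreover have "(\<Sum>(c, g)\<leftarrow>?xs. c * \<Phi> g w) = c * (\<Sum>(c, g)\<leftarrow>xs1. c * \<Phi> g w)" for w
      by (induction xs1) (auto simp: algebra_simps)
    then have "eqH N (\<lambda>w. c * f w) (\<lambda>w. \<Sum>(c, g)\<leftarrow>?xs. c * \<Phi> g w)"
      using xs1 by (simp add: eqH_def)
    ultimately show ?case by blast
  next
    case (mult f g)
    obtain h1' where "h1' \<in> A" "eqH N f h1'" using mult by auto
    then obtain xs1 where xs1: "h1' = (\<lambda>w. \<Sum>(c, g)\<leftarrow>xs1. c * \<Phi> g w)" "\<forall>(c, g)\<in>set xs1. valid N g" "eqH N f h1'" using A by auto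
    obtain h2' where "h2' \<in> A" "eqH N g h2'" using mult by auto
    then obtain xs2 where xs2: "h2' = (\<lambda>w. \<Sum>(c, g)\<leftarrow>xs2. c * \<Phi> g w)" "\<forall>(c, g)\<in>set xs2. valid N g" "eqH N g h2'" using A by auto
    define G3 where "G3 g1 g2 = (SOME g. valid N g \<and> eqH N (conv N (\<Phi> g1) (\<Phi> g2)) (\<Phi> g))" for g1 g2
    have G3: "valid N (G3 g1 g2) \<and> eqH N (conv N (\<Phi> g1) (\<Phi> g2)) (\<Phi> (G3 g1 g2))" if "valid N g1" "valid N g2" for g1 g2
      unfolding G3_def using someI_ex[OF h3[OF that]] .
    let ?xs = "concat (map (\<lambda>(c, g1). map (\<lambda>(d, g2). (c * d, G3 g1 g2)) xs2) xs1)"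
    have "\<forall>(c, g)\<in>set ?xs. valid N g" using xs1(2) xs2(2) G3 by fastforce
    then have "(\<lambda>w. \<Sum>(c, g)\<leftarrow>?xs. c * \<Phi> g w) \<in> A" unfolding A by (intro CollectI exI[of _ "?xs"]) auto
    moreover have "eqH N (conv N f g) (\<lambda>w. \<Sum>(c, g)\<leftarrow>?xs. c * \<Phi> g w)"
    proof -
      have "eqH N (conv N f g) (conv N h1' h2')" using xs1(3) xs2(3) by (rule eqH_conv)
      moreover have "conv N h1' h2' w = (\<Sum>(c, g)\<leftarrow>?xs. c * \<Phi> g w)" if w: "valid N w" for w
      proof -
        have "conv N h1' h2' w = (\<Sum>(c, g1)\<leftarrow>xs1. c * (\<Sum>(d, g2)\<leftarrow>xs2. d * conv N (\<Phi> g1) (\<Phi> g2) w))"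
          unfolding xs1(1) xs2(1) by (simp add: conv_suml_l conv_suml_r)
        also have "\<dots> = (\<Sum>(c, g1)\<leftarrow>xs1. c * (\<Sum>(d, g2)\<leftarrow>xs2. d * \<Phi> (G3 g1 g2) w))"
        proof -
          have inner: "(\<Sum>(d, g2)\<leftarrow>xs2. d * conv N (\<Phi> g1) (\<Phi> g2) w) = (\<Sum>(d, g2)\<leftarrow>xs2. d * \<Phi> (G3 g1 g2) w)"
            if "valid N g1" for g1
          proof (intro arg_cong[where f=sum_list] map_cong refl)
            fix x assume "x \<in> set xs2"
            then obtain d g2 where x: "x = (d, g2)" "valid N g2" using xs2(2) by fastforce
            then show "(case x of (d, g2) \<Rightarrow> d * conv N (\<Phi> g1) (\<Phi> g2) w) = (case x of (d, g2) \<Rightarrow> d * \<Phi> (G3 g1 g2) w)"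
              using G3[OF that x(2)] w by (simp add: eqH_def)
          qed
          show ?thesis
          proof (intro arg_cong[where f=sum_list] map_cong refl)
            fix x assume "x \<in> set xs1"
            then obtain c g1 where x: "x = (c, g1)" "valid N g1" using xs1(2) by fastforce
            then show "(case x of (c, g1) \<Rightarrow> c * (\<Sum>(d, g2)\<leftarrow>xs2. d * conv N (\<Phi> g1) (\<Phi> g2) w))
               = (case x of (c, g1) \<Rightarrow> c * (\<Sum>(d, g2)\<leftarrow>xs2. d * \<Phi> (G3 g1 g2) w))"
              using inner[OF x(2)] by simp
          qed
        qed
        also have "\<dots> = (\<Sum>(c, g)\<leftarrow>?xs. c * \<Phi> g w)"
        proof -
          have aux: "(\<Sum>(c, g)\<leftarrow>map (\<lambda>(d, g2). (c0 * d, H g2)) ys. c * \<Phi> g w) = c0 * (\<Sum>(d, g2)\<leftarrow>ys. d * \<Phi> (H g2) w)"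
            for c0 and H :: "word \<Rightarrow> word" and ys :: "('k \<times> word) list"
            by (induction ys) (auto simp: algebra_simps)
          have aux2: "sum_list (map ((\<lambda>(c, g). c * \<Phi> g w) \<circ> (\<lambda>(d, g2). (c0 * d, H g2))) ys) = c0 * (\<Sum>(d, g2)\<leftarrow>ys. d * \<Phi> (H g2) w)"
            for c0 and H :: "word \<Rightarrow> word" and ys :: "('k \<times> word) list"
            using aux[of c0 H ys] by simp
          show ?thesis by (induction xs1) (auto simp: aux2)
        qed
        finally show ?thesis .
      qed
      ultimately show ?thesis by (auto simp: eqH_def)
    qed
    ultimately show ?case by blast
  qed
qed


lemma conv3l: "valid N w \<Longrightarrow> conv N (conv N f g) h w = mul N (mul N f g) h w"
proof -
  assume v: "valid N w"
  have "conv N (conv N f g) h w = conv N (mul N f g) h w"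
    by (rule conv_cong) (use v in \<open>auto simp: mul_def nz_def\<close>)
  then show ?thesis using v by (simp add: mul_def nz_def)
qed

context SL
begin

lemma Kc_Kic: "Kc q z i r * Kic q z i r = 1"
  using z0 q0 by (simp add: Kc_def Kic_def field_simps)

lemma mul_Kd_Ki: "mul N (chr (Kc q z i)) (Ki i) = nz N eps"
  by (simp add: mul_chr_chr Kc_Kic eps_chr)
lemma mul_Ki_Kd: "mul N (Ki i) (chr (Kc q z i)) = nz N eps"
  by (simp add: mul_chr_chr Kc_Kic mult.commute eps_chr)

lemma mul_Kd_Ki_P: "mul N (chr (Kc q z i)) (mul N (Ki i) P) = nz N P"
  by (simp add: mul_assoc[symmetric] mul_Kd_Ki mul_eps_l)

lemma eqH_nzI: "nz N f = nz N g \<Longrightarrow> eqH N f g" by (simp add: eqH_nz)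

lemma L_gap1: "s \<in> {1..N-1} \<Longrightarrow> eqH N (L (s+1) s) (conv N (L (s+1) (s+1)) (Ee s))"
proof -
  assume s: "s \<in> {1..N-1}"
  have "nz N (conv N (L (s+1) (s+1)) (Ee s)) = mul N (L (s+1) (s+1)) (mul N (Ki (s+1)) (L (s+1) s))"
    by (simp add: nz_conv Ee_def mul_conv_r)
  also have "\<dots> = nz N (L (s+1) s)"
  proof -
    have r: "s+1 \<in> {1..N}" using s by auto
    show ?thesis by (simp only: mul_Ldiag_l[OF r] mul_Kd_Ki_P)
  qed
  finally show ?thesis by (intro eqH_nzI) simp
qed

lemma L_gap:
  assumes "1 \<le> n" "n < i" "i < j" "j \<le> N"
  shows "eqH N (L j n) (\<lambda>w. inverse (q - inverse q) * conv N (conv N (L i n) (L j i)) (Ki i) w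
           + (- inverse (q - inverse q)) * conv N (conv N (L j i) (L i n)) (Ki i) w)"
proof (rule eqH_nzI, rule nz_eqI)
  fix w assume w: "valid N w"
  have i: "i \<in> {1..N}" using assms by auto
  have "conv N (conv N (L i n) (L j i)) (Ki i) w - conv N (conv N (L j i) (L i n)) (Ki i) w
     = mul N (mul N (L i n) (L j i)) (Ki i) w - mul N (mul N (L j i) (L i n)) (Ki i) w"
    using w by (simp add: conv3l)
  also have "\<dots> = mul N (fadd (mul N (L i n) (L j i)) (smul (-1) (mul N (L j i) (L i n)))) (Ki i) w"
    by (simp only: mul_fadd_l mul_smul_l) (simp add: fadd_def smul_def)
  also have "fadd (mul N (L i n) (L j i)) (smul (-1) (mul N (L j i) (L i n))) = smul (q - inverse q) (mul N (L j n) (L i i))"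
    using Rm[OF assms] by (simp add: fadd_def smul_def fun_eq_iff)
  also have "mul N (smul (q - inverse q) (mul N (L j n) (L i i))) (Ki i) w = (q - inverse q) * L j n w"
  proof -
    have e: "mul N (L i i) (Ki i) = nz N eps" by (simp only: mul_Ldiag_l[OF i] mul_Kd_Ki)
    show ?thesis using w by (simp only: mul_smul_l mul_assoc e mul_nz_r mul_eps_r) (simp add: smul_def nz_def)
  qed
  finally have F: "conv N (conv N (L i n) (L j i)) (Ki i) w - conv N (conv N (L j i) (L i n)) (Ki i) w
      = (q - inverse q) * L j n w" (is "?X - ?Y = ?k * ?L") .
  have "inverse ?k * ?X + (- inverse ?k) * ?Y = inverse ?k * (?X - ?Y)" by (simp add: algebra_simps)
  also have "\<dots> = ?L" using F qq0 by simp
  finally show "?L = inverse ?k * ?X + (- inverse ?k) * ?Y" by simp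
qed

end


definition dg :: "nat \<Rightarrow> nat \<Rightarrow> word" where
  "dg N i = map (\<lambda>j. (j, j)) (filter (\<lambda>j. j \<noteq> i) [1..<N+1])"

lemma valid_dg: "valid N (dg N i)" by (auto simp: dg_def valid_def)

lemma prod_filter_upt:
  assumes "i \<in> {1..N}"
  shows "(\<Prod>j\<leftarrow>[1..<N+1]. (f j :: 'k::field)) = f i * (\<Prod>j\<leftarrow>filter (\<lambda>j. j \<noteq> i) [1..<N+1]. f j)"
proof -
  have S: "set [1..<N+1] = {1..N}" by (auto simp del: upt_Suc)
  have S2: "set (filter (\<lambda>j. j \<noteq> i) [1..<N+1]) = {1..N} - {i}" by (auto simp del: upt_Suc)
  have "(\<Prod>j\<leftarrow>[1..<N+1]. f j) = (\<Prod>j\<in>{1..N}. f j)"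
    by (subst prod.distinct_set_conv_list[symmetric]) (simp_all only: S distinct_upt)
  also have "\<dots> = f i * (\<Prod>j\<in>{1..N} - {i}. f j)" using assms by (intro prod.remove) auto
  also have "(\<Prod>j\<in>{1..N} - {i}. f j) = (\<Prod>j\<leftarrow>filter (\<lambda>j. j \<noteq> i) [1..<N+1]. f j)"
    by (subst prod.distinct_set_conv_list[symmetric]) (simp_all only: S2 distinct_filter distinct_upt)
  finally show ?thesis .
qed

context SL
begin

lemma prod_Kc_all: "r \<in> {1..N} \<Longrightarrow> (\<Prod>j\<leftarrow>[1..<N+1]. Kc q z j r) = 1"
proof -
  assume r: "r \<in> {1..N}"
  have "(\<Prod>j\<leftarrow>[1..<N+1]. Kc q z j r) = (\<Prod>j\<leftarrow>[1..<N+1]. z * (if r = j then q else 1))"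
    by (simp add: Kc_def eq_commute)
  also have "\<dots> = (\<Prod>j\<in>{1..N}. z) * q" using r by (rule prod_upt_Kc)
  also have "\<dots> = 1" using zN q0 by simp
  finally show ?thesis .
qed

lemma prod_Kc_dg: "i \<in> {1..N} \<Longrightarrow> r \<in> {1..N} \<Longrightarrow> (\<Prod>b\<leftarrow>dg N i. Kc q z (fst b) r) = Kic q z i r"
proof -
  assume i: "i \<in> {1..N}" and r: "r \<in> {1..N}"
  have "1 = Kc q z i r * (\<Prod>j\<leftarrow>filter (\<lambda>j. j \<noteq> i) [1..<N+1]. Kc q z j r)"
    using prod_Kc_all[OF r] prod_filter_upt[OF i, of "\<lambda>j. Kc q z j r"] by simp
  then have "(\<Prod>j\<leftarrow>filter (\<lambda>j. j \<noteq> i) [1..<N+1]. Kc q z j r) = Kic q z i r"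
    using Kc_Kic[of i r] Kc_nz[of i r] by (metis mult.commute mult_left_cancel)
  then show ?thesis by (simp add: dg_def o_def)
qed

lemma Lp_diag:
  assumes "\<forall>b\<in>set g. fst b = snd b \<and> fst b \<in> {1..N}"
  shows "eqH N (Lp N q z g) (chr (\<lambda>r. \<Prod>b\<leftarrow>g. Kc q z (fst b) r))"
  using assms
proof (induction g)
  case Nil
  then show ?case by (simp add: eqH_def eps_chr)
next
  case (Cons b g)
  have b: "fst b \<in> {1..N}" "snd b = fst b" using Cons.prems by auto
  have e1: "eqH N (Lp N q z (b # g)) (conv N (chr (\<lambda>r. \<Prod>b\<leftarrow>g. Kc q z (fst b) r)) (chr (Kc q z (fst b))))"
  proof -
    have "eqH N (lfun N q z (fst b) (snd b)) (chr (Kc q z (fst b)))"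
      using b by (auto simp: eqH_def lfun_diag_chr)
    moreover have "eqH N (Lp N q z g) (chr (\<lambda>r. \<Prod>b\<leftarrow>g. Kc q z (fst b) r))"
      by (rule Cons.IH) (use Cons.prems in auto)
    ultimately show ?thesis by (simp only: Lp.simps) (rule eqH_conv)
  qed
  have f: "(\<lambda>i. (\<Prod>b\<leftarrow>g. Kc q z (fst b) i) * Kc q z (fst b) i) = (\<lambda>r. \<Prod>b\<leftarrow>b # g. Kc q z (fst b) r)"
    by (simp add: mult.commute)
  have e2: "eqH N (conv N (chr (\<lambda>r. \<Prod>b\<leftarrow>g. Kc q z (fst b) r)) (chr (Kc q z (fst b)))) (chr (\<lambda>r. \<Prod>b\<leftarrow>b # g. Kc q z (fst b) r))"
    unfolding eqH_def by (auto simp only: conv_chr_chr f)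
  show ?case using e1 e2 by (rule eqH_trans)
qed

lemma Ki_sigf: "i \<in> {1..N} \<Longrightarrow> eqH N (Ki i) (\<lambda>w. sigf N q z w (dg N i))"
proof -
  assume i: "i \<in> {1..N}"
  have a1: "eqH N (\<lambda>w. sigf N q z w (dg N i)) (Lp N q z (dg N i))"
    unfolding eqH_def using sigf_Lp[where N=N and g="dg N i" and q=q and z=z] valid_dg[of N i] by auto
  have a2: "eqH N (Lp N q z (dg N i)) (chr (\<lambda>r. \<Prod>b\<leftarrow>dg N i. Kc q z (fst b) r))"
    by (rule Lp_diag) (auto simp: dg_def)
  from a1 a2 have "eqH N (\<lambda>w. sigf N q z w (dg N i)) (chr (\<lambda>r. \<Prod>b\<leftarrow>dg N i. Kc q z (fst b) r))"
    by (rule eqH_trans)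
  moreover have "eqH N (chr (\<lambda>r. \<Prod>b\<leftarrow>dg N i. Kc q z (fst b) r)) (Ki i)"
    unfolding eqH_def using i by (auto intro!: chr_cong[where N=N] simp: prod_Kc_dg)
  ultimately show ?thesis by (meson eqH_sym eqH_trans)
qed

end


context SL
begin

lemma Lmem:
  assumes SK: "\<And>i. i \<in> {1..N} \<Longrightarrow> L i i \<in> S"
    and SKi: "\<And>i. i \<in> {1..N} \<Longrightarrow> Ki i \<in> S"
    and SE: "\<And>s. s \<in> {1..N-1} \<Longrightarrow> Ee s \<in> S"
  shows "A \<in> {1..N} \<Longrightarrow> B \<in> {1..N} \<Longrightarrow> \<exists>G\<in>alg_gen N S. eqH N (L A B) G"
proof (induction "A - B" arbitrary: A B rule: less_induct)
  case less
  consider "A < B" | "A = B" | "A = B + 1" | "B + 1 < A" by linarith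
  then show ?case
  proof cases
    case 1
    then show ?thesis using less.prems
      by (intro bexI[of _ "\<lambda>w. 0"]) (auto simp: eqH_def lfun_upper_zero zero_alg_gen)
  next
    case 2
    then show ?thesis using SK less.prems by (intro bexI[of _ "L A A"]) (auto simp: eqH_def intro: alg_gen.gen)
  next
    case 3
    then have s: "B \<in> {1..N-1}" using less.prems by auto
    have "conv N (L A A) (Ee B) \<in> alg_gen N S"
      using SK SE s less.prems by (intro alg_gen.mult alg_gen.gen) auto
    moreover have "eqH N (L A B) (conv N (L A A) (Ee B))" using L_gap1[OF s] 3 by simp
    ultimately show ?thesis by blast
  next
    case 4
    define i where "i = A - 1"
    have i: "B < i" "i < A" "i \<in> {1..N}" using 4 less.prems by (auto simp: i_def)
    have "\<exists>G\<in>alg_gen N S. eqH N (L i B) G" by (rule less.hyps) (use i less.prems in auto)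
    then obtain G1 where G1: "G1 \<in> alg_gen N S" "eqH N (L i B) G1" by blast
    have "\<exists>G\<in>alg_gen N S. eqH N (L A i) G" by (rule less.hyps) (use i less.prems in auto)
    then obtain G2 where G2: "G2 \<in> alg_gen N S" "eqH N (L A i) G2" by blast
    let ?c = "inverse (q - inverse q)"
    let ?G = "\<lambda>w. (\<lambda>w. ?c * conv N (conv N G1 G2) (Ki i) w) w + (\<lambda>w. (- ?c) * conv N (conv N G2 G1) (Ki i) w) w"
    have Kg: "Ki i \<in> alg_gen N S" by (rule alg_gen.gen, rule SKi, rule i(3))
    have "?G \<in> alg_gen N S"
      by (intro alg_gen.add alg_gen.smult alg_gen.mult G1(1) G2(1) Kg)
    moreover have "eqH N (L A B) ?G"
    proof -
      have e: "eqH N (L A B) (\<lambda>w. ?c * conv N (conv N (L i B) (L A i)) (Ki i) w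
           + (- ?c) * conv N (conv N (L A i) (L i B)) (Ki i) w)"
        using L_gap[of B i A] i less.prems by auto
      have c1: "eqH N (conv N (conv N (L i B) (L A i)) (Ki i)) (conv N (conv N G1 G2) (Ki i))"
        using G1 G2 by (intro eqH_conv eqH_refl)
      have c2: "eqH N (conv N (conv N (L A i) (L i B)) (Ki i)) (conv N (conv N G2 G1) (Ki i))"
        using G1 G2 by (intro eqH_conv eqH_refl)
      show ?thesis using e c1 c2 by (simp add: eqH_def)
    qed
    ultimately show ?thesis by blast
  qed
qed

lemma Lp_mem:
  assumes SK: "\<And>i. i \<in> {1..N} \<Longrightarrow> L i i \<in> S"
    and SKi: "\<And>i. i \<in> {1..N} \<Longrightarrow> Ki i \<in> S"
    and SE: "\<And>s. s \<in> {1..N-1} \<Longrightarrow> Ee s \<in> S"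
  shows "valid N g \<Longrightarrow> \<exists>G\<in>alg_gen N S. eqH N (Lp N q z g) G"
proof (induction g)
  case Nil
  then show ?case by (intro bexI[of _ eps]) (auto simp: eqH_def intro: alg_gen.unit)
next
  case (Cons b g)
  obtain G1 where G1: "G1 \<in> alg_gen N S" "eqH N (Lp N q z g) G1" using Cons by auto
  obtain G2 where G2: "G2 \<in> alg_gen N S" "eqH N (L (fst b) (snd b)) G2"
    using Lmem[OF SK SKi SE, of "fst b" "snd b"] Cons.prems by auto
  show ?case using G1 G2 by (intro bexI[of _ "conv N G1 G2"]) (auto intro: alg_gen.mult eqH_conv)
qed

theorem gen_Hl:
  "generated_by N (H_l N q z) (({L i i |i. i \<in> {1..N}} \<union> {Ki i |i. i \<in> {1..N}}) \<union> {Ee s |s. s \<in> {1..N-1}})"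
  (is "generated_by N _ ?S")
proof (rule generated_byI[where \<Phi> = "\<lambda>g w. sigf N q z w g"])
  show "H_l N q z = {(\<lambda>w. \<Sum>(c, g)\<leftarrow>xs. c * (\<lambda>g w. sigf N q z w g) g w) | xs. \<forall>(c, g)\<in>set xs. valid N g}"
    by (simp add: H_l_def)
  have SK: "\<And>i. i \<in> {1..N} \<Longrightarrow> L i i \<in> ?S" and SKi: "\<And>i. i \<in> {1..N} \<Longrightarrow> Ki i \<in> ?S"
    and SE: "\<And>s. s \<in> {1..N-1} \<Longrightarrow> Ee s \<in> ?S" by blast+
  show "\<exists>G\<in>alg_gen N ?S. eqH N ((\<lambda>g w. sigf N q z w g) g) G" if gv: "valid N g" for g
  proof -
    obtain G where G: "G \<in> alg_gen N ?S" "eqH N (Lp N q z g) G" using Lp_mem[OF SK SKi SE gv] by auto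
    have "eqH N (\<lambda>w. sigf N q z w g) (Lp N q z g)" using gv by (auto simp: eqH_def sigf_Lp)
    then show ?thesis using G by (auto intro: eqH_trans)
  qed
  show "\<exists>c g. valid N g \<and> eqH N s (\<lambda>w. c * (\<lambda>g w. sigf N q z w g) g w)" if sS: "s \<in> ?S" for s
  proof (rule exI[of _ 1])
    consider (K) i where "i \<in> {1..N}" "s = L i i" | (Ki) i where "i \<in> {1..N}" "s = Ki i"
      | (E) t where "t \<in> {1..N-1}" "s = Ee t" using sS by blast
    then show "\<exists>g. valid N g \<and> eqH N s (\<lambda>w. 1 * (\<lambda>g w. sigf N q z w g) g w)"
    proof cases
      case K
      then show ?thesis by (intro exI[of _ "[(i, i)]"]) (auto simp: eqH_def lfun_def)
    next
      case Ki
      then show ?thesis using Ki_sigf[of i] valid_dg by auto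
    next
      case E
      let ?g = "(t+1, t) # dg N (t+1)"
      have t: "t + 1 \<in> {1..N}" "t \<in> {1..N}" using E by auto
      have "eqH N (\<lambda>w. sigf N q z w ?g) (Lp N q z ?g)"
        using valid_dg[of N "t+1"] t unfolding eqH_def by (intro allI impI sigf_Lp) auto
      moreover have "eqH N (Lp N q z ?g) (Ee t)"
      proof -
        have "eqH N (Lp N q z (dg N (t+1))) (Ki (t+1))"
          using Ki_sigf[of "t+1"] t valid_dg[of N "t+1"]
          by (auto simp: eqH_def sigf_Lp)
        then show ?thesis unfolding Ee_def by (simp only: Lp.simps fst_conv snd_conv) (intro eqH_conv eqH_refl)
      qed
      ultimately show ?thesis using E t valid_dg[of N "t+1"] by (intro exI[of _ ?g]) (auto intro: eqH_trans eqH_sym)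
    qed
  qed
  show "\<exists>g. valid N g \<and> eqH N (conv N ((\<lambda>g w. sigf N q z w g) g1) ((\<lambda>g w. sigf N q z w g) g2)) ((\<lambda>g w. sigf N q z w g) g)"
    if "valid N g1" "valid N g2" for g1 g2
  proof (intro exI[of _ "g2 @ g1"] conjI)
    show "valid N (g2 @ g1)" using that by simp
    have "eqH N (conv N (\<lambda>w. sigf N q z w g1) (\<lambda>w. sigf N q z w g2)) (conv N (Lp N q z g1) (Lp N q z g2))"
      using that by (intro eqH_conv) (auto simp: eqH_def sigf_Lp)
    moreover have "eqH N (conv N (Lp N q z g1) (Lp N q z g2)) (\<lambda>w. sigf N q z w (g2 @ g1))"
      using that by (auto simp: eqH_def sigf_Lp Lp_append)
    ultimately show "eqH N (conv N ((\<lambda>g w. sigf N q z w g) g1) ((\<lambda>g w. sigf N q z w g) g2)) ((\<lambda>g w. sigf N q z w g) (g2 @ g1))"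
      by (auto intro: eqH_trans)
  qed
  show "\<exists>g. valid N g \<and> eqH N eps ((\<lambda>g w. sigf N q z w g) g)"
    by (intro exI[of _ "[]"]) (auto simp: eqH_def sigf_Lp)
qed

end


context SL
begin

lemma nz_Ee: "nz N (Ee s) = mul N (Ki (s+1)) (L (s+1) s)"
  by (simp add: Ee_def nz_conv)

lemma KEK_E:
  assumes i: "i \<in> {1..N}" and t: "t \<in> {1..N-1}"
  shows "eqH N (conv N (conv N (L i i) (Ee t)) (Ki i)) (\<lambda>w. q powi (kron i t - kron i (t+1)) * Ee t w)"
proof (rule eqH_nzI)
  let ?x = "L (t+1) t"
  have t1: "t+1 \<in> {1..N}" "t \<in> {1..N}" using t by auto
  have r: "mul N ?x (Ki i) = smul (Kic q z i (t+1) / Kic q z i t) (mul N (Ki i) ?x)"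
    by (rule mul_L_chr) (use t1 Kic_nz in auto)
  have "nz N (conv N (conv N (L i i) (Ee t)) (Ki i)) = mul N (L i i) (mul N (Ki (t+1)) (mul N ?x (Ki i)))"
    by (simp add: nz_conv mul_conv_l mul_assoc Ee_def)
  also have "\<dots> = mul N (L i i) (mul N (Ki (t+1)) (smul (Kic q z i (t+1) / Kic q z i t) (mul N (Ki i) ?x)))"
    by (simp only: r)
  also have "\<dots> = smul (Kic q z i (t+1) / Kic q z i t) (mul N (chr (Kc q z i)) (mul N (Ki i) (mul N (Ki (t+1)) ?x)))"
    by (simp only: mul_smul_r mul_Ldiag_l[OF i] mul_chr_comm2[where c="Kic q z (t+1)" and d="Kic q z i"])
  also have "\<dots> = smul (Kic q z i (t+1) / Kic q z i t) (nz N (Ee t))"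
    by (simp add: mul_Kd_Ki_P nz_Ee)
  also have "\<dots> = nz N (\<lambda>w. q powi (kron i t - kron i (t+1)) * Ee t w)"
  proof -
    have "Kic q z i (t+1) / Kic q z i t = q powi (kron i t - kron i (t+1))"
      unfolding Kic_ratio kron_def by (cases "i = t"; cases "i = t + 1") (auto simp: power_int_minus)
    then show ?thesis by (simp add: nz_def smul_def fun_eq_iff)
  qed
  finally show "nz N (conv N (conv N (L i i) (Ee t)) (Ki i)) = nz N (\<lambda>w. q powi (kron i t - kron i (t+1)) * Ee t w)" .
qed

lemma Ecomm_E:
  assumes s: "s \<in> {1..N-1}" and t: "t \<in> {1..N-1}" and st: "s > t + 1 \<or> t > s + 1"
  shows "eqH N (conv N (Ee t) (Ee s)) (conv N (Ee s) (Ee t))"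
proof (rule eqH_nzI)
  let ?x = "L (s+1) s" and ?y = "L (t+1) t" and ?a = "Ki (s+1)" and ?b = "Ki (t+1)"
  have rng: "s \<in> {1..N}" "s+1 \<in> {1..N}" "t \<in> {1..N}" "t+1 \<in> {1..N}" using s t by auto
  have ne: "t \<noteq> s" "t \<noteq> s + 1" "s \<noteq> t + 1" "t + 1 \<noteq> s + 1" using st by auto
  have ya: "mul N ?y (mul N ?a P) = mul N ?a (mul N ?y P)" for P
    using comm_LK[of "t+1" t "s+1" P] rng ne by (simp add: Kic_ratio smul_def)
  have xb: "mul N ?x (mul N ?b P) = mul N ?b (mul N ?x P)" for P
    using comm_LK[of "s+1" s "t+1" P] rng ne by (simp add: Kic_ratio smul_def)
  have xy: "mul N ?x ?y = mul N ?y ?x"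
  proof (cases "s + 1 < t")
    case True
    then show ?thesis using Cm[of s "s+1" t "t+1"] rng by simp
  next
    case False
    then have "t + 1 < s" using st by simp
    then show ?thesis using Cm[of t "t+1" s "s+1"] rng by simp
  qed
  have "nz N (conv N (Ee t) (Ee s)) = mul N ?b (mul N ?a (mul N ?y ?x))"
    by (simp add: nz_conv mul_conv_l mul_conv_r mul_assoc Ee_def ya[simplified])
  also have "\<dots> = mul N ?a (mul N ?b (mul N ?x ?y))"
    by (simp only: mul_chr_comm2[where c="Kic q z (t+1)"] xy)
  also have "\<dots> = nz N (conv N (Ee s) (Ee t))"
    by (simp add: nz_conv mul_conv_l mul_conv_r mul_assoc Ee_def xb[simplified])
  finally show "nz N (conv N (Ee t) (Ee s)) = nz N (conv N (Ee s) (Ee t))" .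
qed

end


definition tr :: "nat \<Rightarrow> (word \<Rightarrow> 'k) \<Rightarrow> word \<Rightarrow> 'k" where
  "tr N f = (\<lambda>v. f (rho N v))"

lemma tr_conv: "eqH N (tr N (conv N f g)) (conv N (tr N f) (tr N g))"
  by (simp add: eqH_def tr_def conv_rho)
lemma eqH_tr: "eqH N f g \<Longrightarrow> eqH N (tr N f) (tr N g)"
  by (simp add: eqH_def tr_def valid_rho)
lemma tr_tr: "eqH N (tr N (tr N f)) f"
  by (simp add: eqH_def tr_def rho_rho)
lemma eqH_untr: "eqH N (tr N f) (tr N g) \<Longrightarrow> eqH N f g"
  by (meson eqH_sym eqH_tr eqH_trans tr_tr)
lemma tr_smul: "tr N (\<lambda>w. c * f w) = (\<lambda>w. c * tr N f w)"
  by (simp add: tr_def)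
lemma tr_chr: "eqH N (tr N (chr c)) (chr (\<lambda>i. c (iota N i)))"
  by (simp add: eqH_def tr_def chr_rho)

lemma eqH_smul: "eqH N f g \<Longrightarrow> eqH N (\<lambda>w. c * f w) (\<lambda>w. c * g w)"
  by (simp add: eqH_def)

lemma serre_cong: "eqH N X X' \<Longrightarrow> eqH N Y Y' \<Longrightarrow> eqH N (serre N q X Y) (serre N q X' Y')"
proof -
  assume X: "eqH N X X'" and Y: "eqH N Y Y'"
  have a: "eqH N (conv N X (conv N X Y)) (conv N X' (conv N X' Y'))" using X Y by (intro eqH_conv)
  have b: "eqH N (conv N X (conv N Y X)) (conv N X' (conv N Y' X'))" using X Y by (intro eqH_conv)
  have c: "eqH N (conv N Y (conv N X X)) (conv N Y' (conv N X' X'))" using X Y by (intro eqH_conv)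
  show ?thesis using a b c by (simp add: eqH_def serre_def)
qed

lemma tr_serre: "eqH N (tr N (serre N q X Y)) (serre N q (tr N X) (tr N Y))"
proof -
  have a: "eqH N (tr N (conv N X (conv N X Y))) (conv N (tr N X) (conv N (tr N X) (tr N Y)))"
    by (rule eqH_trans[OF tr_conv], intro eqH_conv eqH_refl tr_conv)
  have b: "eqH N (tr N (conv N X (conv N Y X))) (conv N (tr N X) (conv N (tr N Y) (tr N X)))"
    by (rule eqH_trans[OF tr_conv], intro eqH_conv eqH_refl tr_conv)
  have c: "eqH N (tr N (conv N Y (conv N X X))) (conv N (tr N Y) (conv N (tr N X) (tr N X)))"
    by (rule eqH_trans[OF tr_conv], intro eqH_conv eqH_refl tr_conv)
  show ?thesis using a b c by (simp add: eqH_def serre_def tr_def)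
qed

lemma conv_smult_l_fun: "conv N (\<lambda>v. c * f v) h = (\<lambda>w. c * conv N f h w)"
  by (rule ext) (rule conv_smult_l)
lemma conv_smult_r_fun: "conv N h (\<lambda>v. c * f v) = (\<lambda>w. c * conv N h f w)"
  by (rule ext) (rule conv_smult_r)

lemma serre_smul: "serre N q (\<lambda>w. c * X w) (\<lambda>w. c * Y w) = (\<lambda>w. c^3 * serre N q X Y w)"
  by (simp add: serre_def conv_smult_l_fun conv_smult_r_fun fun_eq_iff algebra_simps power3_eq_cube)

context SL
begin

definition Ff where "Ff s = (\<lambda>w. inverse ((q - inverse q) ^ 2) * conv N (Ki s) (rfun N q z s (s+1)) w)"

lemma tr_L: "A \<in> {1..N} \<Longrightarrow> B \<in> {1..N} \<Longrightarrow> eqH N (tr N (L A B)) (rfun N q z (iota N A) (iota N B))"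
  unfolding eqH_def tr_def
proof (intro allI impI)
  fix w assume A: "A \<in> {1..N}" and B: "B \<in> {1..N}" and w: "valid N w"
  have "rfun N q z (iota N A) (iota N B) w = L (iota N (iota N A)) (iota N (iota N B)) (rho N w)"
    by (rule rfun_rho) (use w iota_range[OF A] iota_range[OF B] in auto)
  then show "L A B (rho N w) = rfun N q z (iota N A) (iota N B) w" using A B by (simp add: iota_iota)
qed

lemma tr_rfun: "A \<in> {1..N} \<Longrightarrow> B \<in> {1..N} \<Longrightarrow> eqH N (tr N (rfun N q z A B)) (L (iota N A) (iota N B))"
  by (simp add: eqH_def tr_def rfun_rho valid_rho rho_rho)

lemma tr_Ki: "i \<in> {1..N} \<Longrightarrow> eqH N (tr N (Ki i)) (Ki (iota N i))"
proof -
  assume i: "i \<in> {1..N}"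
  have "eqH N (chr (\<lambda>r. Kic q z i (iota N r))) (Ki (iota N i))"
    unfolding eqH_def using i
    by (auto intro!: chr_cong[where N=N] simp: Kic_def iota_def)
  then show ?thesis using tr_chr by (rule eqH_trans[rotated])
qed

lemma tr_K: "i \<in> {1..N} \<Longrightarrow> eqH N (tr N (L i i)) (L (iota N i) (iota N i))"
proof -
  assume i: "i \<in> {1..N}"
  have a: "eqH N (tr N (L i i)) (tr N (chr (Kc q z i)))" by (rule eqH_tr) (use i in \<open>simp add: eqH_def lfun_diag_chr\<close>)
  have b: "eqH N (tr N (chr (Kc q z i))) (chr (\<lambda>r. Kc q z i (iota N r)))" by (rule tr_chr)
  have c: "eqH N (chr (\<lambda>r. Kc q z i (iota N r))) (L (iota N i) (iota N i))"
    unfolding eqH_def using i iota_range[OF i]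
    by (auto simp: lfun_diag_chr intro!: chr_cong[where N=N] simp: Kc_def iota_def)
  show ?thesis using eqH_trans[OF eqH_trans[OF a b] c] .
qed

end


context SL
begin

abbreviation cF where "cF \<equiv> inverse ((q - inverse q) ^ 2)"

lemma iota_t: "t \<in> {1..N-1} \<Longrightarrow> iota N t = (N - t) + 1 \<and> iota N (t+1) = N - t \<and> N - t \<in> {1..N-1}"
  by (auto simp: iota_def)

lemma tr_F: "t \<in> {1..N-1} \<Longrightarrow> eqH N (tr N (Ff t)) (\<lambda>w. cF * Ee (N - t) w)"
proof -
  assume t: "t \<in> {1..N-1}"
  have r: "t \<in> {1..N}" "t+1 \<in> {1..N}" using t by auto
  have "eqH N (tr N (conv N (Ki t) (rfun N q z t (t+1)))) (conv N (tr N (Ki t)) (tr N (rfun N q z t (t+1))))"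
    by (rule tr_conv)
  moreover have "eqH N (conv N (tr N (Ki t)) (tr N (rfun N q z t (t+1)))) (conv N (Ki (iota N t)) (L (iota N t) (iota N (t+1))))"
    using r by (intro eqH_conv tr_Ki tr_rfun) auto
  ultimately have "eqH N (tr N (conv N (Ki t) (rfun N q z t (t+1)))) (Ee (N - t))"
    using iota_t[OF t] unfolding Ee_def by (auto intro: eqH_trans)
  then show ?thesis unfolding Ff_def tr_smul by (rule eqH_smul)
qed

lemma KFK:
  assumes i: "i \<in> {1..N}" and t: "t \<in> {1..N-1}"
  shows "eqH N (conv N (conv N (L i i) (Ff t)) (Ki i)) (\<lambda>w. q powi (kron i (t+1) - kron i t) * Ff t w)"
proof (rule eqH_untr)
  let ?j = "iota N i" and ?u = "N - t"
  have j: "?j \<in> {1..N}" using iota_range[OF i] .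
  have u: "?u \<in> {1..N-1}" using iota_t[OF t] by simp
  have k: "kron ?j ?u = kron i (t+1)" "kron ?j (?u+1) = kron i t"
    using i t by (auto simp: kron_def iota_def)
  have "eqH N (tr N (conv N (conv N (L i i) (Ff t)) (Ki i))) (conv N (conv N (L ?j ?j) (\<lambda>w. cF * Ee ?u w)) (Ki ?j))"
    by (rule eqH_trans[OF tr_conv], intro eqH_conv eqH_trans[OF tr_conv] tr_K tr_F tr_Ki i t)
  also have "conv N (conv N (L ?j ?j) (\<lambda>w. cF * Ee ?u w)) (Ki ?j) = (\<lambda>w. cF * conv N (conv N (L ?j ?j) (Ee ?u)) (Ki ?j) w)"
    by (simp add: conv_smult_l_fun conv_smult_r_fun)
  finally have a: "eqH N (tr N (conv N (conv N (L i i) (Ff t)) (Ki i))) (\<lambda>w. cF * (q powi (kron i (t+1) - kron i t) * Ee ?u w))"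
    using KEK_E[OF j u] k by (auto simp: eqH_def)
  have b: "eqH N (tr N (\<lambda>w. q powi (kron i (t+1) - kron i t) * Ff t w)) (\<lambda>w. q powi (kron i (t+1) - kron i t) * (cF * Ee ?u w))"
    unfolding tr_smul by (rule eqH_smul) (rule tr_F[OF t])
  show "eqH N (tr N (conv N (conv N (L i i) (Ff t)) (Ki i))) (tr N (\<lambda>w. q powi (kron i (t+1) - kron i t) * Ff t w))"
    using a b by (auto simp: eqH_def mult_ac)
qed

lemma Fcomm:
  assumes s: "s \<in> {1..N-1}" and t: "t \<in> {1..N-1}" and st: "s > t + 1 \<or> t > s + 1"
  shows "eqH N (conv N (Ff t) (Ff s)) (conv N (Ff s) (Ff t))"
proof (rule eqH_untr)
  have u: "N - s \<in> {1..N-1}" "N - t \<in> {1..N-1}" using iota_t[OF s] iota_t[OF t] by auto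
  have st': "N - s > N - t + 1 \<or> N - t > N - s + 1" using st s t by auto
  have a: "eqH N (tr N (conv N (Ff t) (Ff s))) (conv N (\<lambda>w. cF * Ee (N - t) w) (\<lambda>w. cF * Ee (N - s) w))"
    by (rule eqH_trans[OF tr_conv], intro eqH_conv tr_F s t)
  have b: "eqH N (tr N (conv N (Ff s) (Ff t))) (conv N (\<lambda>w. cF * Ee (N - s) w) (\<lambda>w. cF * Ee (N - t) w))"
    by (rule eqH_trans[OF tr_conv], intro eqH_conv tr_F s t)
  have c: "eqH N (conv N (Ee (N - t)) (Ee (N - s))) (conv N (Ee (N - s)) (Ee (N - t)))"
    by (rule Ecomm_E[OF u(1) u(2) st'])
  show "eqH N (tr N (conv N (Ff t) (Ff s))) (tr N (conv N (Ff s) (Ff t)))"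
    using a b c by (simp add: eqH_def conv_smult_l_fun conv_smult_r_fun)
qed

lemma serreE:
  assumes s: "s \<in> {1..N-1}" and t: "t \<in> {1..N-1}" and st: "s = t + 1 \<or> t = s + 1"
  shows "eqH N (serre N q (Ee s) (Ee t)) (\<lambda>w. 0)"
  unfolding eqH_def
proof (intro allI impI)
  fix w assume w: "valid N w"
  show "serre N q (Ee s) (Ee t) w = 0"
  proof (cases "t = s + 1")
    case True
    then show ?thesis using serreE_A[of s w] s t w by auto
  next
    case False
    then have "s = t + 1" using st by simp
    then show ?thesis using serreE_B[of t w] s t w by auto
  qed
qed

lemma serreF:
  assumes s: "s \<in> {1..N-1}" and t: "t \<in> {1..N-1}" and st: "s = t + 1 \<or> t = s + 1"
  shows "eqH N (serre N q (Ff s) (Ff t)) (\<lambda>w. 0)"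
proof (rule eqH_untr)
  have u: "N - s \<in> {1..N-1}" "N - t \<in> {1..N-1}" using iota_t[OF s] iota_t[OF t] by auto
  have st': "N - s = N - t + 1 \<or> N - t = N - s + 1" using st s t by auto
  have "eqH N (tr N (serre N q (Ff s) (Ff t))) (serre N q (\<lambda>w. cF * Ee (N - s) w) (\<lambda>w. cF * Ee (N - t) w))"
    by (rule eqH_trans[OF tr_serre], intro serre_cong tr_F s t)
  then have "eqH N (tr N (serre N q (Ff s) (Ff t))) (\<lambda>w. cF ^ 3 * serre N q (Ee (N - s)) (Ee (N - t)) w)"
    by (simp add: serre_smul)
  moreover have "eqH N (serre N q (Ee (N - s)) (Ee (N - t))) (\<lambda>w. 0)" by (rule serreE[OF u st'])
  ultimately show "eqH N (tr N (serre N q (Ff s) (Ff t))) (tr N (\<lambda>w. 0))"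
    by (auto simp: eqH_def tr_def)
qed

end


context SL
begin

abbreviation Rf where "Rf \<equiv> rfun N q z"

lemma rfun_lower_zero: "valid N w \<Longrightarrow> B < A \<Longrightarrow> A \<in> {1..N} \<Longrightarrow> B \<in> {1..N} \<Longrightarrow> Rf A B w = 0"
proof -
  assume w: "valid N w" and AB: "B < A" "A \<in> {1..N}" "B \<in> {1..N}"
  have "Rf A B w = L (iota N A) (iota N B) (rho N w)" using w AB by (simp add: rfun_rho)
  also have "\<dots> = 0" using AB by (intro lfun_upper_zero valid_rho w) (auto simp: iota_def)
  finally show ?thesis .
qed

lemma rfun_diag: "A \<in> {1..N} \<Longrightarrow> eqH N (Rf A A) (L A A)"
proof -
  assume A: "A \<in> {1..N}"
  let ?B = "iota N A"
  have B: "?B \<in> {1..N}" using iota_range[OF A] .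
  have "eqH N (Rf (iota N ?B) (iota N ?B)) (tr N (L ?B ?B))" by (rule eqH_sym, rule tr_L[OF B B])
  moreover have "eqH N (tr N (L ?B ?B)) (L (iota N ?B) (iota N ?B))" by (rule tr_K[OF B])
  ultimately show ?thesis using iota_iota[OF A] by (metis eqH_trans)
qed

lemma R_rel_r:
  assumes "A \<in> {1..N}" "B \<in> {1..N}" "A < m" "m < B"
  shows "eqH N (\<lambda>w. conv N (Rf m B) (Rf A m) w - conv N (Rf A m) (Rf m B) w) (\<lambda>w. (q - inverse q) * conv N (Rf A B) (Rf m m) w)"
  unfolding eqH_def
proof (intro allI impI)
  fix w assume w: "valid N w"
  have m: "m \<in> {1..N}" using assms by auto
  have tL: "\<And>X Y. X \<in> {1..N} \<Longrightarrow> Y \<in> {1..N} \<Longrightarrow> eqH N (tr N (L (iota N X) (iota N Y))) (Rf X Y)"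
    using tr_L iota_range iota_iota by metis
  have R: "conv N (L (iota N m) (iota N B)) (L (iota N A) (iota N m)) (rho N w) - conv N (L (iota N A) (iota N m)) (L (iota N m) (iota N B)) (rho N w)
       = (q - inverse q) * conv N (L (iota N A) (iota N B)) (L (iota N m) (iota N m)) (rho N w)"
    by (rule R_rel) (use assms w valid_rho in \<open>auto simp: iota_def\<close>)
  have c: "\<And>X Y U V. X \<in> {1..N} \<Longrightarrow> Y \<in> {1..N} \<Longrightarrow> U \<in> {1..N} \<Longrightarrow> V \<in> {1..N} \<Longrightarrow>
      conv N (L (iota N X) (iota N Y)) (L (iota N U) (iota N V)) (rho N w) = conv N (Rf X Y) (Rf U V) w"
  proof -
    fix X Y U V assume r: "X \<in> {1..N}" "Y \<in> {1..N}" "U \<in> {1..N}" "V \<in> {1..N}"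
    have "conv N (L (iota N X) (iota N Y)) (L (iota N U) (iota N V)) (rho N w) = conv N (tr N (L (iota N X) (iota N Y))) (tr N (L (iota N U) (iota N V))) w"
      using w by (simp add: conv_rho tr_def)
    also have "\<dots> = conv N (Rf X Y) (Rf U V) w"
      using tL[OF r(1,2)] tL[OF r(3,4)] w by (intro conv_cong) (auto simp: eqH_def)
    finally show "conv N (L (iota N X) (iota N Y)) (L (iota N U) (iota N V)) (rho N w) = conv N (Rf X Y) (Rf U V) w" .
  qed
  show "conv N (Rf m B) (Rf A m) w - conv N (Rf A m) (Rf m B) w = (q - inverse q) * conv N (Rf A B) (Rf m m) w"
    using R c[of m B A m] c[of A m m B] c[of A B m m] assms m by simp
qed

lemma Rmem:
  assumes SK: "\<And>i. i \<in> {1..N} \<Longrightarrow> L i i \<in> S"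
    and SKi: "\<And>i. i \<in> {1..N} \<Longrightarrow> Ki i \<in> S"
    and SF: "\<And>s. s \<in> {1..N-1} \<Longrightarrow> Ff s \<in> S"
  shows "A \<in> {1..N} \<Longrightarrow> B \<in> {1..N} \<Longrightarrow> \<exists>G\<in>alg_gen N S. eqH N (Rf A B) G"
proof (induction "B - A" arbitrary: A B rule: less_induct)
  case less
  consider "B < A" | "A = B" | "B = A + 1" | "A + 1 < B" by linarith
  then show ?case
  proof cases
    case 1
    then show ?thesis using less.prems
      by (intro bexI[of _ "\<lambda>w. 0"]) (auto simp: eqH_def rfun_lower_zero zero_alg_gen)
  next
    case 2
    then show ?thesis using SK less.prems rfun_diag by (intro bexI[of _ "L A A"]) (auto intro: alg_gen.gen)
  next
    case 3
    then have s: "A \<in> {1..N-1}" using less.prems by auto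
    let ?G = "\<lambda>w. ((q - inverse q) ^ 2) * conv N (L A A) (Ff A) w"
    have "?G \<in> alg_gen N S"
      using SK SF s less.prems by (intro alg_gen.smult alg_gen.mult alg_gen.gen) auto
    moreover have "eqH N (Rf A B) ?G"
    proof (rule eqH_nzI, rule nz_eqI)
      fix w assume w: "valid N w"
      have A: "A \<in> {1..N}" using less.prems by simp
      have "conv N (L A A) (Ff A) w = cF * mul N (L A A) (mul N (Ki A) (Rf A (A+1))) w"
        using w by (simp add: Ff_def conv_smult_r_fun conv3 del: One_nat_def)
      also have "\<dots> = cF * Rf A (A+1) w"
        using w by (simp add: mul_Ldiag_l[OF A] mul_Kd_Ki_P nz_def)
      finally show "Rf A B w = ?G w" using 3 qq0 by (simp add: field_simps)
    qed
    ultimately show ?thesis by blast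
  next
    case 4
    define m where "m = B - 1"
    have m: "A < m" "m < B" "m \<in> {1..N}" using 4 less.prems by (auto simp: m_def)
    have "\<exists>G\<in>alg_gen N S. eqH N (Rf A m) G" by (rule less.hyps) (use m less.prems in auto)
    then obtain G1 where G1: "G1 \<in> alg_gen N S" "eqH N (Rf A m) G1" by blast
    have "\<exists>G\<in>alg_gen N S. eqH N (Rf m B) G" by (rule less.hyps) (use m less.prems in auto)
    then obtain G2 where G2: "G2 \<in> alg_gen N S" "eqH N (Rf m B) G2" by blast
    let ?c = "inverse (q - inverse q)"
    let ?G = "\<lambda>w. (\<lambda>w. ?c * conv N (conv N G2 G1) (Ki m) w) w + (\<lambda>w. (- ?c) * conv N (conv N G1 G2) (Ki m) w) w"
    have Kg: "Ki m \<in> alg_gen N S" by (rule alg_gen.gen, rule SKi, rule m(3))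
    have "?G \<in> alg_gen N S"
      by (intro alg_gen.add alg_gen.smult alg_gen.mult G1(1) G2(1) Kg)
    moreover have "eqH N (Rf A B) ?G"
    proof (rule eqH_nzI, rule nz_eqI)
      fix w assume w: "valid N w"
      have e1: "conv N (conv N G2 G1) (Ki m) w = conv N (conv N (Rf m B) (Rf A m)) (Ki m) w"
        using G1 G2 w by (intro conv_cong) (auto intro: conv_cong simp: eqH_def)
      have e2: "conv N (conv N G1 G2) (Ki m) w = conv N (conv N (Rf A m) (Rf m B)) (Ki m) w"
        using G1 G2 w by (intro conv_cong) (auto intro: conv_cong simp: eqH_def)
      have "conv N (conv N (Rf m B) (Rf A m)) (Ki m) w - conv N (conv N (Rf A m) (Rf m B)) (Ki m) w
          = conv N (\<lambda>v. conv N (Rf m B) (Rf A m) v - conv N (Rf A m) (Rf m B) v) (Ki m) w"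
        by (simp add: conv_diff_l)
      also have "\<dots> = conv N (\<lambda>v. (q - inverse q) * conv N (Rf A B) (Rf m m) v) (Ki m) w"
        using R_rel_r[of A B m] less.prems m w by (intro conv_cong) (auto simp: eqH_def)
      also have "\<dots> = (q - inverse q) * mul N (Rf A B) (mul N (Rf m m) (Ki m)) w"
        using w by (simp add: conv_smult_l conv3l mul_assoc)
      also have "mul N (Rf m m) (Ki m) = mul N (L m m) (Ki m)"
        using rfun_diag[OF m(3)] by (metis eqH_nz mul_nz_l)
      also have "\<dots> = nz N eps" by (simp only: mul_Ldiag_l[OF m(3)] mul_Kd_Ki)
      finally have F: "conv N (conv N (Rf m B) (Rf A m)) (Ki m) w - conv N (conv N (Rf A m) (Rf m B)) (Ki m) w
          = (q - inverse q) * Rf A B w" (is "?X - ?Y = ?k * ?L")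
        using w by (simp only: mul_nz_r mul_eps_r) (simp add: nz_def)
      have "?G w = inverse ?k * ?X + (- inverse ?k) * ?Y" using e1 e2 by simp
      also have "\<dots> = inverse ?k * (?X - ?Y)" by (simp add: algebra_simps)
      also have "\<dots> = ?L" using F qq0 by simp
      finally show "Rf A B w = ?G w" by simp
    qed
    ultimately show ?thesis by blast
  qed
qed

end


context SL
begin

lemma sig1_eq_rfun: "eqH N (\<lambda>h. sig1 N q z h a) (Rf (fst a) (snd a))"
  by (simp add: eqH_def rfun_sig1 del: sig1.simps)

lemma Rp_diag:
  assumes "\<forall>b\<in>set g. fst b = snd b \<and> fst b \<in> {1..N}"
  shows "eqH N (sigf N q z g) (chr (\<lambda>r. \<Prod>b\<leftarrow>g. Kc q z (fst b) r))"
  using assms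
proof (induction g)
  case Nil
  then show ?case by (simp add: eqH_def eps_chr)
next
  case (Cons b g)
  have b: "fst b \<in> {1..N}" "snd b = fst b" using Cons.prems by auto
  have e1: "eqH N (sigf N q z (b # g)) (conv N (chr (Kc q z (fst b))) (chr (\<lambda>r. \<Prod>b\<leftarrow>g. Kc q z (fst b) r)))"
  proof -
    have "eqH N (\<lambda>h. sig1 N q z h b) (chr (Kc q z (fst b)))"
      using sig1_eq_rfun[of b] rfun_diag[OF b(1)] b
      by (auto simp: eqH_def lfun_diag_chr simp del: sig1.simps)
    moreover have "eqH N (sigf N q z g) (chr (\<lambda>r. \<Prod>b\<leftarrow>g. Kc q z (fst b) r))"
      by (rule Cons.IH) (use Cons.prems in auto)
    ultimately show ?thesis by (simp only: sigf.simps) (rule eqH_conv)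
  qed
  have e2: "eqH N (conv N (chr (Kc q z (fst b))) (chr (\<lambda>r. \<Prod>b\<leftarrow>g. Kc q z (fst b) r))) (chr (\<lambda>r. \<Prod>b\<leftarrow>b # g. Kc q z (fst b) r))"
    unfolding eqH_def by (auto simp only: conv_chr_chr prod_list.Cons list.map)
  show ?case using e1 e2 by (rule eqH_trans)
qed

lemma Ki_sigf_r: "i \<in> {1..N} \<Longrightarrow> eqH N (Ki i) (sigf N q z (dg N i))"
proof -
  assume i: "i \<in> {1..N}"
  have a: "eqH N (sigf N q z (dg N i)) (chr (\<lambda>r. \<Prod>b\<leftarrow>dg N i. Kc q z (fst b) r))"
    by (rule Rp_diag) (auto simp: dg_def)
  moreover have "eqH N (chr (\<lambda>r. \<Prod>b\<leftarrow>dg N i. Kc q z (fst b) r)) (Ki i)"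
    unfolding eqH_def using i by (auto intro!: chr_cong[where N=N] simp: prod_Kc_dg)
  ultimately show ?thesis by (meson eqH_sym eqH_trans)
qed

theorem gen_Hr:
  "generated_by N (H_r N q z) (({L i i |i. i \<in> {1..N}} \<union> {Ki i |i. i \<in> {1..N}}) \<union> {Ff s |s. s \<in> {1..N-1}})"
  (is "generated_by N _ ?S")
proof (rule generated_byI[where \<Phi> = "sigf N q z"])
  show "H_r N q z = {(\<lambda>w. \<Sum>(c, g)\<leftarrow>xs. c * sigf N q z g w) | xs. \<forall>(c, g)\<in>set xs. valid N g}"
    by (simp add: H_r_def)
  have SK: "\<And>i. i \<in> {1..N} \<Longrightarrow> L i i \<in> ?S" and SKi: "\<And>i. i \<in> {1..N} \<Longrightarrow> Ki i \<in> ?S"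
    and SF: "\<And>s. s \<in> {1..N-1} \<Longrightarrow> Ff s \<in> ?S" by blast+
  show "\<exists>G\<in>alg_gen N ?S. eqH N (sigf N q z g) G" if gv: "valid N g" for g
    using gv
  proof (induction g)
    case Nil
    then show ?case by (intro bexI[of _ eps]) (auto simp: eqH_def intro: alg_gen.unit)
  next
    case (Cons a g)
    obtain G1 where G1: "G1 \<in> alg_gen N ?S" "eqH N (sigf N q z g) G1" using Cons by auto
    obtain G2 where G2: "G2 \<in> alg_gen N ?S" "eqH N (Rf (fst a) (snd a)) G2"
      using Rmem[OF SK SKi SF, of "fst a" "snd a"] Cons.prems by auto
    have "eqH N (\<lambda>h. sig1 N q z h a) G2" using sig1_eq_rfun G2(2) by (rule eqH_trans)
    then have "eqH N (sigf N q z (a # g)) (conv N G2 G1)"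
      using G1(2) by (simp only: sigf.simps) (rule eqH_conv)
    then show ?case using G1 G2 by (intro bexI[of _ "conv N G2 G1"]) (auto intro: alg_gen.mult)
  qed
  show "\<exists>c g. valid N g \<and> eqH N s (\<lambda>w. c * sigf N q z g w)" if sS: "s \<in> ?S" for s
  proof -
    consider (K) i where "i \<in> {1..N}" "s = L i i" | (Ki) i where "i \<in> {1..N}" "s = Ki i"
      | (F) t where "t \<in> {1..N-1}" "s = Ff t" using sS by blast
    then show ?thesis
    proof cases
      case K
      have "eqH N (L i i) (Rf i i)" using rfun_diag[OF K(1)] by (rule eqH_sym)
      then have e: "eqH N (L i i) (\<lambda>w. 1 * sigf N q z [(i, i)] w)" by (simp add: rfun_def)
      have v: "valid N [(i, i)]" using K by simp
      show ?thesis unfolding K(2) by (rule exI[of _ 1], rule exI[of _ "[(i, i)]"], rule conjI[OF v e])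
    next
      case Ki
      have e: "eqH N (Ki i) (\<lambda>w. 1 * sigf N q z (dg N i) w)" using Ki_sigf_r[OF Ki(1)] by simp
      show ?thesis unfolding Ki(2) by (rule exI[of _ 1], rule exI[of _ "dg N i"], rule conjI[OF valid_dg e])
    next
      case F
      let ?g = "dg N t @ [(t, t+1)]"
      have t: "t + 1 \<in> {1..N}" "t \<in> {1..N}" using F by auto
      have vg: "valid N ?g" using valid_dg[of N t] t by simp
      have s1: "eqH N (sigf N q z ?g) (conv N (sigf N q z (dg N t)) (sigf N q z [(t, t+1)]))"
        unfolding eqH_def
      proof (intro allI impI)
        fix w assume w: "valid N w"
        show "sigf N q z ?g w = conv N (sigf N q z (dg N t)) (sigf N q z [(t, t+1)]) w"
          by (rule sigf_append_l) (use w valid_dg t in auto)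
      qed
      have s2: "eqH N (sigf N q z [(t, t+1)]) (Rf t (t+1))"
        unfolding rfun_def by (rule eqH_refl)
      have s3: "eqH N (sigf N q z (dg N t)) (Ki t)" using Ki_sigf_r[OF t(2)] by (rule eqH_sym)
      have s4: "eqH N (sigf N q z ?g) (conv N (Ki t) (Rf t (t+1)))"
        using s1 eqH_conv[OF s3 s2] by (rule eqH_trans)
      have e: "eqH N (Ff t) (\<lambda>w. cF * sigf N q z ?g w)"
        unfolding Ff_def by (rule eqH_smul[OF eqH_sym[OF s4]])
      show ?thesis unfolding F(2) by (rule exI[of _ cF], rule exI[of _ ?g], rule conjI[OF vg e])
    qed
  qed
  show "\<exists>g. valid N g \<and> eqH N (conv N (sigf N q z g1) (sigf N q z g2)) (sigf N q z g)"
    if "valid N g1" "valid N g2" for g1 g2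
    using that by (intro exI[of _ "g1 @ g2"]) (auto simp: eqH_def sigf_append_l)
  show "\<exists>g. valid N g \<and> eqH N eps (sigf N q z g)"
    by (intro exI[of _ "[]"]) (auto simp: eqH_def)
qed

end


lemma prod_list_inv: "(\<Prod>a\<leftarrow>xs. inverse (f a :: 'k::field)) = inverse (\<Prod>a\<leftarrow>xs. f a)"
  by (induction xs) (simp_all add: inverse_mult_distrib)

context SL
begin

lemma prod_Kc_i: "i \<in> {1..N} \<Longrightarrow> (\<Prod>a\<leftarrow>[1..<N+1]. Kc q z i a) = 1"
proof -
  assume i: "i \<in> {1..N}"
  have "(\<Prod>a\<leftarrow>[1..<N+1]. Kc q z i a) = (\<Prod>a\<leftarrow>[1..<N+1]. z * (if i = a then q else 1))"
    by (simp add: Kc_def eq_commute)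
  also have "\<dots> = (\<Prod>a\<in>{1..N}. z) * q" using i by (rule prod_upt_Kc)
  also have "\<dots> = 1" using zN q0 by simp
  finally show ?thesis .
qed

lemma prod_Kic_i: "i \<in> {1..N} \<Longrightarrow> (\<Prod>a\<leftarrow>[1..<N+1]. Kic q z i a) = 1"
proof -
  assume i: "i \<in> {1..N}"
  have "(\<Prod>a\<leftarrow>[1..<N+1]. Kic q z i a) = (\<Prod>a\<leftarrow>[1..<N+1]. inverse (Kc q z i a))"
    by (simp add: Kc_def Kic_def)
  also have "\<dots> = inverse (\<Prod>a\<leftarrow>[1..<N+1]. Kc q z i a)"
    by (rule prod_list_inv)
  also have "\<dots> = 1" using prod_Kc_i[OF i] by simp
  finally show ?thesis .
qed

lemma part1: "i \<in> {1..N} \<Longrightarrow> eqH N (L i i) (Rf i i) \<and> finite_dual N q (L i i) \<and> grouplike N (L i i)"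
proof (intro conjI)
  assume i: "i \<in> {1..N}"
  show "eqH N (L i i) (Rf i i)" using rfun_diag[OF i] by (rule eqH_sym)
  have fd: "finite_dual N q (chr (Kc q z i))" by (rule finite_dual_chr) (rule prod_Kc_i[OF i])
  show "finite_dual N q (L i i)"
    by (rule finite_dual_cong[OF _ fd]) (use i in \<open>simp add: lfun_diag_chr\<close>)
  show "grouplike N (L i i)"
    using i by (simp add: grouplike_def lfun_diag_chr chr_append)
qed

lemma foldr_K: "\<forall>i\<in>set is. i \<in> {1..N} \<Longrightarrow>
   nz N (foldr (\<lambda>i acc. conv N (L i i) acc) is eps) = nz N (chr (\<lambda>r. \<Prod>i\<leftarrow>is. Kc q z i r))"
proof (induction "is")
  case Nil
  then show ?case by (simp add: eps_chr)
next
  case (Cons i "is")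
  have i: "i \<in> {1..N}" using Cons.prems by simp
  have "nz N (foldr (\<lambda>i acc. conv N (L i i) acc) (i # is) eps) = mul N (L i i) (foldr (\<lambda>i acc. conv N (L i i) acc) is eps)"
    by (simp add: nz_conv)
  also have "\<dots> = mul N (chr (Kc q z i)) (nz N (foldr (\<lambda>i acc. conv N (L i i) acc) is eps))"
    by (simp only: mul_Ldiag_l[OF i] mul_nz_r)
  also have "\<dots> = mul N (chr (Kc q z i)) (chr (\<lambda>r. \<Prod>i\<leftarrow>is. Kc q z i r))"
  proof -
    have ih: "nz N (foldr (\<lambda>i acc. conv N (L i i) acc) is eps) = nz N (chr (\<lambda>r. \<Prod>i\<leftarrow>is. Kc q z i r))"
      by (rule Cons.IH) (use Cons.prems in auto)
    show ?thesis by (simp only: ih mul_nz_r)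
  qed
  also have "\<dots> = nz N (chr (\<lambda>r. \<Prod>i\<leftarrow>i # is. Kc q z i r))"
    by (simp add: mul_chr_chr)
  finally show ?case .
qed

lemma Kprod: "eqH N (foldr (\<lambda>i acc. conv N (L i i) acc) [1..<N+1] eps) eps"
proof (rule eqH_nzI)
  have "nz N (foldr (\<lambda>i acc. conv N (L i i) acc) [1..<N+1] eps) = nz N (chr (\<lambda>r. \<Prod>i\<leftarrow>[1..<N+1]. Kc q z i r))"
    by (rule foldr_K) (auto simp del: upt_Suc)
  also have "\<dots> = nz N eps"
    unfolding eps_chr by (rule nz_eqI, rule chr_cong[where N=N]) (erule prod_Kc_all, assumption)
  finally show "nz N (foldr (\<lambda>i acc. conv N (L i i) acc) [1..<N+1] eps) = nz N eps" .
qed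

lemma Kcomm_main: "i \<in> {1..N} \<Longrightarrow> j \<in> {1..N} \<Longrightarrow> eqH N (conv N (L i i) (L j j)) (conv N (L j j) (L i i))"
  by (rule eqH_nzI) (simp add: nz_conv mul_Ldiag_l mul_Ldiag_r mul_chr_comm)

lemma main:
  "(\<forall>i\<in>{1..N}. eqH N (lfun N q z i i) (rfun N q z i i) \<and>
                      finite_dual N q ((\<lambda>i. lfun N q z i i) i) \<and> grouplike N ((\<lambda>i. lfun N q z i i) i))
    \<and> (\<exists>Kinv :: nat \<Rightarrow> word \<Rightarrow> 'k.
        (\<forall>i\<in>{1..N}. finite_dual N q (Kinv i)
            \<and> eqH N (conv N ((\<lambda>i. lfun N q z i i) i) (Kinv i)) eps \<and> eqH N (conv N (Kinv i) ((\<lambda>i. lfun N q z i i) i)) eps)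
      \<and> (let E = (\<lambda>s. conv N (Kinv (s+1)) (lfun N q z (s+1) s));
             F = (\<lambda>s w. inverse ((q - inverse q) ^ 2) * conv N (Kinv s) (rfun N q z s (s+1)) w);
             KK = {(\<lambda>i. lfun N q z i i) i | i. i \<in> {1..N}} \<union> {Kinv i | i. i \<in> {1..N}}
         in generated_by N (H_l N q z) (KK \<union> {E s | s. s \<in> {1..N-1}})
          \<and> generated_by N (H_r N q z) (KK \<union> {F s | s. s \<in> {1..N-1}})
          \<and> (\<forall>i\<in>{1..N}. \<forall>j\<in>{1..N}. eqH N (conv N ((\<lambda>i. lfun N q z i i) i) ((\<lambda>i. lfun N q z i i) j)) (conv N ((\<lambda>i. lfun N q z i i) j) ((\<lambda>i. lfun N q z i i) i)))
          \<and> eqH N (foldr (\<lambda>i acc. conv N ((\<lambda>i. lfun N q z i i) i) acc) [1..<N+1] eps) eps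
          \<and> (\<forall>i\<in>{1..N}. \<forall>t\<in>{1..N-1}.
               eqH N (conv N (conv N ((\<lambda>i. lfun N q z i i) i) (E t)) (Kinv i))
                     (\<lambda>w. q powi (kron i t - kron i (t+1)) * E t w)
             \<and> eqH N (conv N (conv N ((\<lambda>i. lfun N q z i i) i) (F t)) (Kinv i))
                     (\<lambda>w. q powi (kron i (t+1) - kron i t) * F t w))
          \<and> (\<forall>s\<in>{1..N-1}. \<forall>t\<in>{1..N-1}. (s > t + 1 \<or> t > s + 1) \<longrightarrow>
               eqH N (conv N (E t) (E s)) (conv N (E s) (E t))
             \<and> eqH N (conv N (F t) (F s)) (conv N (F s) (F t)))
          \<and> (\<forall>s\<in>{1..N-1}. \<forall>t\<in>{1..N-1}. (s = t + 1 \<or> t = s + 1) \<longrightarrow>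
               eqH N (serre N q (E s) (E t)) (\<lambda>w. 0)
             \<and> eqH N (serre N q (F s) (F t)) (\<lambda>w. 0))))"
proof (intro conjI)
  show "\<forall>i\<in>{1..N}. eqH N (lfun N q z i i) (rfun N q z i i) \<and>
                      finite_dual N q ((\<lambda>i. lfun N q z i i) i) \<and> grouplike N ((\<lambda>i. lfun N q z i i) i)"
    using part1 by simp
  have E: "(\<lambda>s. conv N (Ki (s+1)) (lfun N q z (s+1) s)) = Ee" by (simp add: Ee_def fun_eq_iff)
  have F: "(\<lambda>s w. inverse ((q - inverse q) ^ 2) * conv N (Ki s) (rfun N q z s (s+1)) w) = Ff"
    by (simp add: Ff_def fun_eq_iff)
  show "\<exists>Kinv :: nat \<Rightarrow> word \<Rightarrow> 'k.
        (\<forall>i\<in>{1..N}. finite_dual N q (Kinv i)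
            \<and> eqH N (conv N ((\<lambda>i. lfun N q z i i) i) (Kinv i)) eps \<and> eqH N (conv N (Kinv i) ((\<lambda>i. lfun N q z i i) i)) eps)
      \<and> (let E = (\<lambda>s. conv N (Kinv (s+1)) (lfun N q z (s+1) s));
             F = (\<lambda>s w. inverse ((q - inverse q) ^ 2) * conv N (Kinv s) (rfun N q z s (s+1)) w);
             KK = {(\<lambda>i. lfun N q z i i) i | i. i \<in> {1..N}} \<union> {Kinv i | i. i \<in> {1..N}}
         in generated_by N (H_l N q z) (KK \<union> {E s | s. s \<in> {1..N-1}})
          \<and> generated_by N (H_r N q z) (KK \<union> {F s | s. s \<in> {1..N-1}})
          \<and> (\<forall>i\<in>{1..N}. \<forall>j\<in>{1..N}. eqH N (conv N ((\<lambda>i. lfun N q z i i) i) ((\<lambda>i. lfun N q z i i) j)) (conv N ((\<lambda>i. lfun N q z i i) j) ((\<lambda>i. lfun N q z i i) i)))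
          \<and> eqH N (foldr (\<lambda>i acc. conv N ((\<lambda>i. lfun N q z i i) i) acc) [1..<N+1] eps) eps
          \<and> (\<forall>i\<in>{1..N}. \<forall>t\<in>{1..N-1}.
               eqH N (conv N (conv N ((\<lambda>i. lfun N q z i i) i) (E t)) (Kinv i))
                     (\<lambda>w. q powi (kron i t - kron i (t+1)) * E t w)
             \<and> eqH N (conv N (conv N ((\<lambda>i. lfun N q z i i) i) (F t)) (Kinv i))
                     (\<lambda>w. q powi (kron i (t+1) - kron i t) * F t w))
          \<and> (\<forall>s\<in>{1..N-1}. \<forall>t\<in>{1..N-1}. (s > t + 1 \<or> t > s + 1) \<longrightarrow>
               eqH N (conv N (E t) (E s)) (conv N (E s) (E t))
             \<and> eqH N (conv N (F t) (F s)) (conv N (F s) (F t)))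
          \<and> (\<forall>s\<in>{1..N-1}. \<forall>t\<in>{1..N-1}. (s = t + 1 \<or> t = s + 1) \<longrightarrow>
               eqH N (serre N q (E s) (E t)) (\<lambda>w. 0)
             \<and> eqH N (serre N q (F s) (F t)) (\<lambda>w. 0)))"
  proof (rule exI[of _ Ki], intro conjI)
    show "\<forall>i\<in>{1..N}. finite_dual N q (Ki i)
            \<and> eqH N (conv N ((\<lambda>i. lfun N q z i i) i) (Ki i)) eps \<and> eqH N (conv N (Ki i) ((\<lambda>i. lfun N q z i i) i)) eps"
    proof (intro ballI conjI)
      fix i :: nat assume i: "i \<in> {1..N}"
      show "finite_dual N q (Ki i)" using finite_dual_chr prod_Kic_i[OF i] by blast
      show "eqH N (conv N ((\<lambda>i. lfun N q z i i) i) (Ki i)) eps"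
        by (rule eqH_nzI) (simp add: nz_conv mul_Ldiag_l[OF i] mul_Kd_Ki)
      show "eqH N (conv N (Ki i) ((\<lambda>i. lfun N q z i i) i)) eps"
        by (rule eqH_nzI) (simp add: nz_conv mul_Ldiag_r[OF i] mul_Ki_Kd)
    qed
    show "let E = (\<lambda>s. conv N (Ki (s+1)) (lfun N q z (s+1) s));
             F = (\<lambda>s w. inverse ((q - inverse q) ^ 2) * conv N (Ki s) (rfun N q z s (s+1)) w);
             KK = {(\<lambda>i. lfun N q z i i) i | i. i \<in> {1..N}} \<union> {Ki i | i. i \<in> {1..N}}
         in generated_by N (H_l N q z) (KK \<union> {E s | s. s \<in> {1..N-1}})
          \<and> generated_by N (H_r N q z) (KK \<union> {F s | s. s \<in> {1..N-1}})
          \<and> (\<forall>i\<in>{1..N}. \<forall>j\<in>{1..N}. eqH N (conv N ((\<lambda>i. lfun N q z i i) i) ((\<lambda>i. lfun N q z i i) j)) (conv N ((\<lambda>i. lfun N q z i i) j) ((\<lambda>i. lfun N q z i i) i)))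
          \<and> eqH N (foldr (\<lambda>i acc. conv N ((\<lambda>i. lfun N q z i i) i) acc) [1..<N+1] eps) eps
          \<and> (\<forall>i\<in>{1..N}. \<forall>t\<in>{1..N-1}.
               eqH N (conv N (conv N ((\<lambda>i. lfun N q z i i) i) (E t)) (Ki i))
                     (\<lambda>w. q powi (kron i t - kron i (t+1)) * E t w)
             \<and> eqH N (conv N (conv N ((\<lambda>i. lfun N q z i i) i) (F t)) (Ki i))
                     (\<lambda>w. q powi (kron i (t+1) - kron i t) * F t w))
          \<and> (\<forall>s\<in>{1..N-1}. \<forall>t\<in>{1..N-1}. (s > t + 1 \<or> t > s + 1) \<longrightarrow>
               eqH N (conv N (E t) (E s)) (conv N (E s) (E t))
             \<and> eqH N (conv N (F t) (F s)) (conv N (F s) (F t)))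
          \<and> (\<forall>s\<in>{1..N-1}. \<forall>t\<in>{1..N-1}. (s = t + 1 \<or> t = s + 1) \<longrightarrow>
               eqH N (serre N q (E s) (E t)) (\<lambda>w. 0)
             \<and> eqH N (serre N q (F s) (F t)) (\<lambda>w. 0))"
      unfolding Let_def E F
    proof (intro conjI)
      show "generated_by N (H_l N q z) (({(\<lambda>i. lfun N q z i i) i | i. i \<in> {1..N}} \<union> {Ki i | i. i \<in> {1..N}}) \<union> {Ee s | s. s \<in> {1..N-1}})"
        using gen_Hl by simp
      show "generated_by N (H_r N q z) (({(\<lambda>i. lfun N q z i i) i | i. i \<in> {1..N}} \<union> {Ki i | i. i \<in> {1..N}}) \<union> {Ff s | s. s \<in> {1..N-1}})"
        using gen_Hr by simp
      show "\<forall>i\<in>{1..N}. \<forall>j\<in>{1..N}. eqH N (conv N ((\<lambda>i. lfun N q z i i) i) ((\<lambda>i. lfun N q z i i) j)) (conv N ((\<lambda>i. lfun N q z i i) j) ((\<lambda>i. lfun N q z i i) i))"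
        using Kcomm_main by simp
      show "eqH N (foldr (\<lambda>i acc. conv N ((\<lambda>i. lfun N q z i i) i) acc) [1..<N+1] eps) eps"
        using Kprod by simp
      show "\<forall>i\<in>{1..N}. \<forall>t\<in>{1..N-1}.
               eqH N (conv N (conv N ((\<lambda>i. lfun N q z i i) i) (Ee t)) (Ki i))
                     (\<lambda>w. q powi (kron i t - kron i (t+1)) * Ee t w)
             \<and> eqH N (conv N (conv N ((\<lambda>i. lfun N q z i i) i) (Ff t)) (Ki i))
                     (\<lambda>w. q powi (kron i (t+1) - kron i t) * Ff t w)"
        using KEK_E KFK by simp
      show "\<forall>s\<in>{1..N-1}. \<forall>t\<in>{1..N-1}. (s > t + 1 \<or> t > s + 1) \<longrightarrow>
               eqH N (conv N (Ee t) (Ee s)) (conv N (Ee s) (Ee t))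
             \<and> eqH N (conv N (Ff t) (Ff s)) (conv N (Ff s) (Ff t))"
        using Ecomm_E Fcomm by simp
      show "\<forall>s\<in>{1..N-1}. \<forall>t\<in>{1..N-1}. (s = t + 1 \<or> t = s + 1) \<longrightarrow>
               eqH N (serre N q (Ee s) (Ee t)) (\<lambda>w. 0)
             \<and> eqH N (serre N q (Ff s) (Ff t)) (\<lambda>w. 0)"
        using serreE serreF by simp
    qed
  qed
qed

end

theorem proposition4p3:
  fixes q z :: "'k::field" and N :: nat
  assumes hq: "q \<noteq> 0" and hq2: "q ^ 2 \<noteq> 1" and hN: "N \<ge> 2" and hz: "z ^ N = inverse q"
  defines "K \<equiv> (\<lambda>i. lfun N q z i i)"
  shows "(\<forall>i\<in>{1..N}. eqH N (lfun N q z i i) (rfun N q z i i) \<and>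
                      finite_dual N q (K i) \<and> grouplike N (K i))
    \<and> (\<exists>Kinv :: nat \<Rightarrow> word \<Rightarrow> 'k.
        (\<forall>i\<in>{1..N}. finite_dual N q (Kinv i)
            \<and> eqH N (conv N (K i) (Kinv i)) eps \<and> eqH N (conv N (Kinv i) (K i)) eps)
      \<and> (let E = (\<lambda>s. conv N (Kinv (s+1)) (lfun N q z (s+1) s));
             F = (\<lambda>s w. inverse ((q - inverse q) ^ 2) * conv N (Kinv s) (rfun N q z s (s+1)) w);
             KK = {K i | i. i \<in> {1..N}} \<union> {Kinv i | i. i \<in> {1..N}}
         in generated_by N (H_l N q z) (KK \<union> {E s | s. s \<in> {1..N-1}})
          \<and> generated_by N (H_r N q z) (KK \<union> {F s | s. s \<in> {1..N-1}})
          \<and> (\<forall>i\<in>{1..N}. \<forall>j\<in>{1..N}. eqH N (conv N (K i) (K j)) (conv N (K j) (K i)))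
          \<and> eqH N (foldr (\<lambda>i acc. conv N (K i) acc) [1..<N+1] eps) eps
          \<and> (\<forall>i\<in>{1..N}. \<forall>t\<in>{1..N-1}.
               eqH N (conv N (conv N (K i) (E t)) (Kinv i))
                     (\<lambda>w. q powi (kron i t - kron i (t+1)) * E t w)
             \<and> eqH N (conv N (conv N (K i) (F t)) (Kinv i))
                     (\<lambda>w. q powi (kron i (t+1) - kron i t) * F t w))
          \<and> (\<forall>s\<in>{1..N-1}. \<forall>t\<in>{1..N-1}. (s > t + 1 \<or> t > s + 1) \<longrightarrow>
               eqH N (conv N (E t) (E s)) (conv N (E s) (E t))
             \<and> eqH N (conv N (F t) (F s)) (conv N (F s) (F t)))
          \<and> (\<forall>s\<in>{1..N-1}. \<forall>t\<in>{1..N-1}. (s = t + 1 \<or> t = s + 1) \<longrightarrow>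
               eqH N (serre N q (E s) (E t)) (\<lambda>w. 0)
             \<and> eqH N (serre N q (F s) (F t)) (\<lambda>w. 0))))"
proof -
  interpret SL N q z by unfold_locales (fact hq hq2 hN hz)+
  show ?thesis unfolding K_def by (rule main)
qed


end
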